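(* Let $\mathcal N$ and $\mathcal M$ be quantum channels satisfying $s$-detailed balance with respect to $\rho_\beta$, with $\mathcal N$ having $\rho_\beta$ as unique fixed state and spectrum in $[0,1]$. Run the single-trajectory algorithm with initial state $\rho_\beta$ and $T_{burn}=0$, and let $v=\mathbb E_{\rho_\beta}(\mathcal M)$. Then $$\mathbb E_{\rho_\beta}\Big[\Big(\sum_{t=1}^Ke_t-Kv\Big)^2\Big]\le K\Big(\mathbb V_{\rho_\beta}(\mathcal M)+\frac{2}{\mathrm{gap}(\mathcal N)}\,\mathrm{SC}\Big).$$
   Context: $H$ is an $n$-qubit Hermitian operator, $\beta>0$, $\rho_\beta=e^{-\beta H}/\operatorname{tr}(e^{-\beta H})$. $\mathcal T^\dagger$ is the Hilbert–Schmidt adjoint (for a channel with Kraus $K_u$, $\mathcal T^\dagger(X)=\sum_uK_u^\dagger XK_u$). $\langle A,B\rangle_s=\operatorname{tr}(A^\dagger\rho_\beta^{1-s}B\rho_\beta^s)$; a map satisfies $s$-detailed balance if $\langle A,\mathcal T^\dagger(B)\rangle_s=\langle\mathcal T^\dagger(A),B\rangle_s$ for all $A,B$. $\mathrm{gap}(\mathcal N)=1-\max_{X\ne0,\langle X,I\rangle_s=0}\langle X,\mathcal N^\dagger(X)\rangle_s/\langle X,X\rangle_s$. $\mathcal M$ has Kraus operators $\{O_u\}_u$ indexed by finitely many real outcomes $u$; $\mathbb E_{\rho_\beta}(\mathcal M)=\sum_uu\operatorname{tr}(O_u\rho_\beta O_u^\dagger)$, $\mathbb V_{\rho_\beta}(\mathcal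 M)=\sum_u|u-\mathbb E_{\rho_\beta}(\mathcal M)|^2\operatorname{tr}(O_u\rho_\beta O_u^\dagger)$, $\widehat{\mathcal M}(X)=\sum_u(u-\mathbb E_{\rho_\beta}(\mathcal M))O_uXO_u^\dagger$, $\mathcal E=\mathcal M\circ\mathcal N\circ\mathcal M$, $\widehat{\mathcal E}=\mathcal M\circ\mathcal N\circ\widehat{\mathcal M}$. $\{Y_i\}_i$ is a $\langle\cdot,\cdot\rangle_s$-orthonormal basis of matrices with $\mathcal E^\dagger(Y_i)=\lambda_iY_i$, $1=\lambda_1>\lambda_2\ge\dots\ge0$, $Y_1=I$; $\alpha_{ij}=\langle Y_j,\widehat{\mathcal E}^\dagger(Y_i)\rangle_s$; $\mathrm{SC}=\sum_j|\alpha_{1j}\alpha_{j1}|$. Single-trajectory algorithm: from the initial state apply $\mathcal N$ $T_{burn}$ times, then for $t=1,\dots,K$ apply $\mathcal M$ (record outcome $e_t$), then $\mathcal N$, then $\mathcal M$ (outcome discarded). $\mathbb E_{\rho_\beta}$ is expectation over this process started from $\rho_\beta$. *)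

theory Defs
  imports "Jordan_Normal_Form.Matrix"
begin

definition trace :: "complex mat \<Rightarrow> complex" where
  "trace A = (\<Sum>i<dim_row A. A $$ (i,i))"

definition finsum_mat :: "nat \<Rightarrow> nat \<Rightarrow> ('b \<Rightarrow> complex mat) \<Rightarrow> 'b set \<Rightarrow> complex mat" where
  "finsum_mat r c f S = mat r c (\<lambda>ij. \<Sum>u\<in>S. f u $$ ij)"

definition listsum_mat :: "nat \<Rightarrow> complex mat list \<Rightarrow> complex mat" where
  "listsum_mat d As = mat d d (\<lambda>ij. \<Sum>A\<leftarrow>As. A $$ ij)"

definition dag :: "complex mat \<Rightarrow> complex mat" where
  "dag A = mat (dim_col A) (dim_row A) (\<lambda>(i,j). cnj (A $$ (j,i)))"

definition hermitian_mat :: "nat \<Rightarrow> complex mat \<Rightarrow> bool" where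
  "hermitian_mat d A \<longleftrightarrow> A \<in> carrier_mat d d \<and> dag A = A"

definition vinner :: "complex vec \<Rightarrow> complex vec \<Rightarrow> complex" where
  "vinner v w = (\<Sum>i<dim_vec v. cnj (v $ i) * w $ i)"

definition density_mat :: "nat \<Rightarrow> complex mat \<Rightarrow> bool" where
  "density_mat d A \<longleftrightarrow> hermitian_mat d A
     \<and> (\<forall>v \<in> carrier_vec d. vinner v (A *\<^sub>v v) \<in> \<real> \<and> 0 \<le> Re (vinner v (A *\<^sub>v v)))
     \<and> trace A = 1"

text \<open>Functional calculus for a Hermitian (hence diagonalizable) matrix A:
  f(A) is the unique d x d matrix acting as f(lambda) on every eigenvector of A with eigenvalue lambda.\<close>
definition mat_fun :: "nat \<Rightarrow> (complex \<Rightarrow> complex) \<Rightarrow> complex mat \<Rightarrow> complex mat" where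
  "mat_fun d f A = (THE B. B \<in> carrier_mat d d \<and>
      (\<forall>v \<in> carrier_vec d. \<forall>l. A *\<^sub>v v = l \<cdot>\<^sub>v v \<longrightarrow> B *\<^sub>v v = f l \<cdot>\<^sub>v v))"

definition gibbs :: "nat \<Rightarrow> real \<Rightarrow> complex mat \<Rightarrow> complex mat" where
  "gibbs d \<beta> H = (let E = mat_fun d (\<lambda>z. exp (- of_real \<beta> * z)) H in (1 / trace E) \<cdot>\<^sub>m E)"

definition mpow :: "nat \<Rightarrow> complex mat \<Rightarrow> real \<Rightarrow> complex mat" where
  "mpow d \<rho> s = mat_fun d (\<lambda>z. of_real (Re z powr s)) \<rho>"

definition sinner :: "nat \<Rightarrow> complex mat \<Rightarrow> real \<Rightarrow> complex mat \<Rightarrow> complex mat \<Rightarrow> complex" where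
  "sinner d \<rho> s A B = trace (dag A * mpow d \<rho> (1 - s) * B * mpow d \<rho> s)"

definition kraus_map :: "nat \<Rightarrow> complex mat list \<Rightarrow> complex mat \<Rightarrow> complex mat" where
  "kraus_map d Ks X = listsum_mat d (map (\<lambda>K. K * X * dag K) Ks)"

definition kraus_adj :: "nat \<Rightarrow> complex mat list \<Rightarrow> complex mat \<Rightarrow> complex mat" where
  "kraus_adj d Ks X = listsum_mat d (map (\<lambda>K. dag K * X * K) Ks)"

definition is_channel :: "nat \<Rightarrow> complex mat list \<Rightarrow> bool" where
  "is_channel d Ks \<longleftrightarrow> Ks \<noteq> [] \<and> set Ks \<subseteq> carrier_mat d d \<and>
     listsum_mat d (map (\<lambda>K. dag K * K) Ks) = 1\<^sub>m d"

definition meas_map :: "nat \<Rightarrow> real set \<Rightarrow> (real \<Rightarrow> complex mat) \<Rightarrow> complex mat \<Rightarrow> complex mat" where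
  "meas_map d U Ok X = finsum_mat d d (\<lambda>u. Ok u * X * dag (Ok u)) U"

definition meas_adj :: "nat \<Rightarrow> real set \<Rightarrow> (real \<Rightarrow> complex mat) \<Rightarrow> complex mat \<Rightarrow> complex mat" where
  "meas_adj d U Ok X = finsum_mat d d (\<lambda>u. dag (Ok u) * X * Ok u) U"

definition is_meas_channel :: "nat \<Rightarrow> real set \<Rightarrow> (real \<Rightarrow> complex mat) \<Rightarrow> bool" where
  "is_meas_channel d U Ok \<longleftrightarrow> finite U \<and> U \<noteq> {} \<and> (\<forall>u\<in>U. Ok u \<in> carrier_mat d d) \<and>
     finsum_mat d d (\<lambda>u. dag (Ok u) * Ok u) U = 1\<^sub>m d"

text \<open>s-detailed balance of a map T given through its adjoint Tadj.\<close>
definition detailed_balance :: "nat \<Rightarrow> complex mat \<Rightarrow> real \<Rightarrow> (complex mat \<Rightarrow> complex mat) \<Rightarrow> bool" where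
  "detailed_balance d \<rho> s Tadj \<longleftrightarrow>
     (\<forall>A \<in> carrier_mat d d. \<forall>B \<in> carrier_mat d d. sinner d \<rho> s A (Tadj B) = sinner d \<rho> s (Tadj A) B)"

definition meas_exp :: "real set \<Rightarrow> (real \<Rightarrow> complex mat) \<Rightarrow> complex mat \<Rightarrow> real" where
  "meas_exp U Ok \<rho> = (\<Sum>u\<in>U. u * Re (trace (Ok u * \<rho> * dag (Ok u))))"

definition meas_var :: "real set \<Rightarrow> (real \<Rightarrow> complex mat) \<Rightarrow> complex mat \<Rightarrow> real" where
  "meas_var U Ok \<rho> = (\<Sum>u\<in>U. \<bar>u - meas_exp U Ok \<rho>\<bar>^2 * Re (trace (Ok u * \<rho> * dag (Ok u))))"

definition meas_hat_adj :: "nat \<Rightarrow> real set \<Rightarrow> (real \<Rightarrow> complex mat) \<Rightarrow> complex mat \<Rightarrow> complex mat \<Rightarrow> complex mat" where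
  "meas_hat_adj d U Ok \<rho> X =
     finsum_mat d d (\<lambda>u. of_real (u - meas_exp U Ok \<rho>) \<cdot>\<^sub>m (dag (Ok u) * X * Ok u)) U"

definition spec_gap :: "nat \<Rightarrow> complex mat \<Rightarrow> real \<Rightarrow> (complex mat \<Rightarrow> complex mat) \<Rightarrow> real" where
  "spec_gap d \<rho> s Nadj = 1 - Sup {Re (sinner d \<rho> s X (Nadj X) / sinner d \<rho> s X X) | X.
       X \<in> carrier_mat d d \<and> X \<noteq> 0\<^sub>m d d \<and> sinner d \<rho> s X (1\<^sub>m d) = 0}"

text \<open>Single trajectory with T_burn = 0: unnormalised state after recording outcomes us = [e_1,...,e_t];
  each round: M with recorded outcome u, then N, then M with discarded outcome.\<close>
fun traj_state :: "nat \<Rightarrow> complex mat list \<Rightarrow> real set \<Rightarrow> (real \<Rightarrow> complex mat) \<Rightarrow> complex mat \<Rightarrow> real list \<Rightarrow> complex mat" where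
  "traj_state d Ns U Ok \<sigma> [] = \<sigma>"
| "traj_state d Ns U Ok \<sigma> (u # us) =
     traj_state d Ns U Ok (meas_map d U Ok (kraus_map d Ns (Ok u * \<sigma> * dag (Ok u)))) us"

definition traj_expect :: "nat \<Rightarrow> complex mat list \<Rightarrow> real set \<Rightarrow> (real \<Rightarrow> complex mat) \<Rightarrow> complex mat \<Rightarrow> nat \<Rightarrow> (real list \<Rightarrow> real) \<Rightarrow> real" where
  "traj_expect d Ns U Ok \<rho> K f =
     (\<Sum>es \<in> {es. set es \<subseteq> U \<and> length es = K}. f es * Re (trace (traj_state d Ns U Ok \<rho> es)))"

end

theory Submission
  imports Defs "Jordan_Normal_Form.Spectral_Radius" "Jordan_Normal_Form.Schur_Decomposition"
begin


lemma dim_dag[simp]: "dim_row (dag A) = dim_col A" "dim_col (dag A) = dim_row A"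
  unfolding dag_def by auto

lemma index_dag[simp]: "i < dim_col A \<Longrightarrow> j < dim_row A \<Longrightarrow> dag A $$ (i,j) = cnj (A $$ (j,i))"
  unfolding dag_def by auto

lemma dag_carrier[simp]: "A \<in> carrier_mat n m \<Longrightarrow> dag A \<in> carrier_mat m n"
  unfolding dag_def carrier_mat_def by auto

lemma dag_dag[simp]: "dag (dag A) = A"
  by (rule eq_matI) auto

lemma index_mult': assumes "i < dim_row A" "j < dim_col B" "dim_col A = dim_row B"
  shows "(A * B) $$ (i,j) = (\<Sum>k<dim_col A. A $$ (i,k) * B $$ (k,j))"
  using assms by (auto simp: scalar_prod_def atLeast0LessThan intro!: sum.cong)

lemma row_col_sum: assumes "i < dim_row A" "j < dim_col B" "dim_col A = dim_row B"
  shows "row A i \<bullet> col B j = (\<Sum>k<dim_col A. A $$ (i,k) * B $$ (k,j))"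
  using assms by (auto simp: scalar_prod_def atLeast0LessThan intro!: sum.cong)

lemma dag_mult: assumes "A \<in> carrier_mat n m" "B \<in> carrier_mat m k"
  shows "dag (A * B) = dag B * dag A"
proof (rule eq_matI)
  fix i j assume "i < dim_row (dag B * dag A)" "j < dim_col (dag B * dag A)"
  with assms have ij: "i < k" "j < n" by auto
  show "dag (A * B) $$ (i, j) = (dag B * dag A) $$ (i, j)"
  proof -
    from assms have d: "dim_row A = n" "dim_col A = m" "dim_row B = m" "dim_col B = k" by auto
    have "dag (A * B) $$ (i, j) = cnj ((A * B) $$ (j, i))" using d ij by simp
    also have "\<dots> = cnj (\<Sum>l<m. A $$ (j,l) * B $$ (l,i))" using d ij by (subst index_mult') auto
    also have "\<dots> = (\<Sum>l<m. dag B $$ (i,l) * dag A $$ (l,j))" using d ij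
      by (auto simp: cnj_sum mult.commute intro!: sum.cong)
    also have "\<dots> = (dag B * dag A) $$ (i, j)" using d ij by (subst index_mult') auto
    finally show ?thesis .
  qed
qed (use assms in auto)

lemma dag_one[simp]: "dag (1\<^sub>m n) = 1\<^sub>m n"
  by (rule eq_matI) auto

lemma dag_zero[simp]: "dag (0\<^sub>m n m) = 0\<^sub>m m n"
  by (rule eq_matI) auto

lemma dag_add: assumes "A \<in> carrier_mat n m" "B \<in> carrier_mat n m"
  shows "dag (A + B) = dag A + dag B"
  using assms by (intro eq_matI) auto

lemma dag_minus: assumes "A \<in> carrier_mat n m" "B \<in> carrier_mat n m"
  shows "dag (A - B) = dag A - dag B"
  using assms by (intro eq_matI) auto

lemma dag_smult: "dag (c \<cdot>\<^sub>m A) = cnj c \<cdot>\<^sub>m dag A"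
  by (intro eq_matI) auto

lemma trace_add: assumes "A \<in> carrier_mat n n" "B \<in> carrier_mat n n"
  shows "trace (A + B) = trace A + trace B"
  using assms by (auto simp: trace_def sum.distrib)

lemma trace_minus: assumes "A \<in> carrier_mat n n" "B \<in> carrier_mat n n"
  shows "trace (A - B) = trace A - trace B"
  using assms by (auto simp: trace_def sum_subtractf)

lemma trace_smult: "A \<in> carrier_mat n n \<Longrightarrow> trace (c \<cdot>\<^sub>m A) = c * trace A"
  by (auto simp: trace_def sum_distrib_left intro!: sum.cong)

lemma trace_zero[simp]: "trace (0\<^sub>m n n) = 0"
  by (auto simp: trace_def)

lemma trace_one[simp]: "trace (1\<^sub>m n) = of_nat n"
  by (auto simp: trace_def)

lemma trace_comm: assumes "A \<in> carrier_mat n m" "B \<in> carrier_mat m n"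
  shows "trace (A * B) = trace (B * A)"
proof -
  have "trace (A * B) = (\<Sum>i<n. \<Sum>k<m. A $$ (i,k) * B $$ (k,i))"
  proof -
    from assms have d: "dim_row A = n" "dim_col A = m" "dim_row B = m" "dim_col B = n" by auto
    show ?thesis unfolding trace_def using d by (intro sum.cong) (auto simp: row_col_sum)
  qed
  also have "\<dots> = (\<Sum>k<m. \<Sum>i<n. B $$ (k,i) * A $$ (i,k))"
    by (subst sum.swap) (simp add: mult.commute)
  also have "\<dots> = trace (B * A)"
  proof -
    from assms have d: "dim_row A = n" "dim_col A = m" "dim_row B = m" "dim_col B = n" by auto
    show ?thesis unfolding trace_def using d by (intro sum.cong) (auto simp: row_col_sum)
  qed
  finally show ?thesis .
qed

lemma trace_dag: "trace (dag A) = cnj (trace A)" if "A \<in> carrier_mat n n" for A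
  using that by (auto simp: trace_def)

definition dmat :: "nat \<Rightarrow> (nat \<Rightarrow> complex) \<Rightarrow> complex mat" where
  "dmat n f = mat n n (\<lambda>(i,j). if i = j then f i else 0)"

lemma dmat_carrier[simp]: "dmat n f \<in> carrier_mat n n"
  and dim_dmat[simp]: "dim_row (dmat n f) = n" "dim_col (dmat n f) = n"
  by (auto simp: dmat_def)

lemma index_dmat[simp]: "i < n \<Longrightarrow> j < n \<Longrightarrow> dmat n f $$ (i,j) = (if i = j then f i else 0)"
  by (auto simp: dmat_def)

lemma UDU_index: assumes U: "U \<in> carrier_mat n n" and i: "i < n" and j: "j < n"
  shows "(U * dmat n f * dag U) $$ (i,j) = (\<Sum>k<n. U $$ (i,k) * f k * cnj (U $$ (j,k)))"
proof -
  have "(U * dmat n f * dag U) $$ (i,j) = (\<Sum>l<n. (U * dmat n f) $$ (i,l) * dag U $$ (l,j))"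
    using U i j by (subst index_mult') auto
  also have "\<dots> = (\<Sum>l<n. (\<Sum>k<n. U $$ (i,k) * dmat n f $$ (k,l)) * cnj (U $$ (j,l)))"
    using U i j by (intro sum.cong refl, subst index_mult') auto
  also have "\<dots> = (\<Sum>l<n. U $$ (i,l) * f l * cnj (U $$ (j,l)))"
  proof (intro sum.cong refl)
    fix l assume l: "l \<in> {..<n}"
    have "(\<Sum>k<n. U $$ (i,k) * dmat n f $$ (k,l)) = (\<Sum>k<n. if k = l then U $$ (i,l) * f l else 0)"
      using l by (intro sum.cong refl) auto
    also have "\<dots> = U $$ (i,l) * f l" using l by (simp add: sum.delta)
    finally show "(\<Sum>k<n. U $$ (i,k) * dmat n f $$ (k,l)) * cnj (U $$ (j,l)) = U $$ (i,l) * f l * cnj (U $$ (j,l))"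
      by simp
  qed
  finally show ?thesis .
qed

definition unitary :: "nat \<Rightarrow> complex mat \<Rightarrow> bool" where
  "unitary n U \<longleftrightarrow> U \<in> carrier_mat n n \<and> dag U * U = 1\<^sub>m n \<and> U * dag U = 1\<^sub>m n"

lemma unitaryI: assumes "U \<in> carrier_mat n n" "dag U * U = 1\<^sub>m n" shows "unitary n U"
  using assms mat_mult_left_right_inverse[of "dag U" n U] unfolding unitary_def by auto

lemma unitary_mult: assumes "unitary n U" "unitary n V" shows "unitary n (U * V)"
proof -
  have c: "U \<in> carrier_mat n n" "V \<in> carrier_mat n n" "dag U \<in> carrier_mat n n" "dag V \<in> carrier_mat n n"
    using assms unfolding unitary_def by auto
  have "dag (U * V) * (U * V) = dag V * dag U * (U * V)"
    using c by (simp add: dag_mult[OF c(1,2)])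
  also have "\<dots> = dag V * (dag U * (U * V))" using c by (simp add: assoc_mult_mat[of _ n n _ n _ n])
  also have "\<dots> = dag V * ((dag U * U) * V)" using c by (simp add: assoc_mult_mat[of _ n n _ n _ n])
  also have "\<dots> = 1\<^sub>m n" using assms c unfolding unitary_def by auto
  finally show ?thesis using c by (intro unitaryI) auto
qed


lemma cscalar_sum: assumes "w \<in> carrier_vec n" "w' \<in> carrier_vec n"
  shows "w \<bullet>c w' = (\<Sum>k<n. w $ k * cnj (w' $ k))"
  using assms by (auto simp: scalar_prod_def atLeast0LessThan intro!: sum.cong)

lemma unit_complete:
  assumes v: "v \<in> carrier_vec n" and v0: "v \<noteq> 0\<^sub>v n"
  shows "\<exists>W c. unitary n W \<and> c \<noteq> 0 \<and> (\<forall>i<n. W $$ (i,0) = c * v $ i)"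
proof -
  interpret cof_vec_space n "TYPE(complex)" .
  define b where "b = basis_completion v"
  from basis_completion[OF v v0, folded b_def]
  have dist_b: "distinct b" and indep: "\<not> lin_dep (set b)" and bc: "set b \<subseteq> carrier_vec n"
    and hdb: "hd b = v" and len_b: "length b = n" by auto
  have n: "n > 0" using v v0 by (cases n) auto
  from hdb len_b n obtain vs where bv: "b = v # vs" by (cases b, auto)
  define ws where "ws = gram_schmidt n b"
  from gram_schmidt_result[OF bc dist_b indep refl, folded ws_def]
  have ws: "set ws \<subseteq> carrier_vec n" "corthogonal ws" "length ws = n"
    by (auto simp: len_b)
  from gram_schmidt_hd[OF v, of vs, folded bv] have hdws: "hd ws = v" unfolding ws_def .
  have ws0: "ws ! 0 = v" using hdws n ws(3) by (cases ws) auto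
  have wsc: "j < n \<Longrightarrow> ws ! j \<in> carrier_vec n" for j using ws by auto
  define nr where "nr j = sqrt (Re (ws ! j \<bullet>c ws ! j))" for j
  have sq: "ws ! j \<bullet>c ws ! j = complex_of_real ((nr j)^2) \<and> nr j > 0" if j: "j < n" for j
  proof -
    have e: "ws ! j \<bullet>c ws ! j = (\<Sum>k<n. complex_of_real ((cmod (ws ! j $ k))^2))"
      using wsc[OF j] by (subst cscalar_sum[of _ n]) (auto intro!: sum.cong simp: complex_norm_square[symmetric])
    have ne: "ws ! j \<bullet>c ws ! j \<noteq> 0" using corthogonalD[OF ws(2), of j j] j ws(3) by auto
    have ge: "(\<Sum>k<n. (cmod (ws ! j $ k))^2) \<ge> 0" by (intro sum_nonneg) auto
    have re: "Re (ws ! j \<bullet>c ws ! j) = (\<Sum>k<n. (cmod (ws ! j $ k))^2)" unfolding e by (simp add: Re_sum)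
    have e2: "ws ! j \<bullet>c ws ! j = complex_of_real (\<Sum>k<n. (cmod (ws ! j $ k))^2)" unfolding e by (simp only: of_real_sum)
    moreover have "(nr j)^2 = (\<Sum>k<n. (cmod (ws ! j $ k))^2)" unfolding nr_def re using ge by simp
    moreover have "(\<Sum>k<n. (cmod (ws ! j $ k))^2) \<noteq> 0" using ne e2 by (metis of_real_0)
    ultimately show ?thesis unfolding nr_def re using ge by auto
  qed
  define W where "W = mat n n (\<lambda>(i,j). ws ! j $ i / complex_of_real (nr j))"
  have Wc: "W \<in> carrier_mat n n" unfolding W_def by auto
  have "dag W * W = 1\<^sub>m n"
  proof (rule eq_matI)
    fix i j assume "i < dim_row (1\<^sub>m n)" "j < dim_col (1\<^sub>m n)"
    hence i: "i < n" and j: "j < n" by auto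
    have "(dag W * W) $$ (i,j) = (\<Sum>k<n. dag W $$ (i,k) * W $$ (k,j))"
      using i j Wc by (subst index_mult') auto
    also have "\<dots> = (\<Sum>k<n. ws ! j $ k * cnj (ws ! i $ k)) / (complex_of_real (nr i) * complex_of_real (nr j))"
      unfolding sum_divide_distrib using i j by (intro sum.cong refl) (auto simp: W_def)
    also have "(\<Sum>k<n. ws ! j $ k * cnj (ws ! i $ k)) = ws ! j \<bullet>c ws ! i"
      using wsc[OF i] wsc[OF j] by (subst cscalar_sum[of _ n]) auto
    also have "\<dots> / (complex_of_real (nr i) * complex_of_real (nr j)) = 1\<^sub>m n $$ (i,j)"
    proof (cases "i = j")
      case True
      with sq[OF i] show ?thesis using i by (simp add: power2_eq_square)
    next
      case False
      with corthogonalD[OF ws(2), of j i] i j ws(3) show ?thesis by auto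
    qed
    finally show "(dag W * W) $$ (i,j) = 1\<^sub>m n $$ (i,j)" .
  qed (use Wc in auto)
  hence "unitary n W" using Wc by (intro unitaryI) auto
  moreover have "\<forall>i<n. W $$ (i,0) = (1 / complex_of_real (nr 0)) * v $ i"
    using n ws0 unfolding W_def by auto
  moreover have "1 / complex_of_real (nr 0) \<noteq> 0" using sq[OF n] by auto
  ultimately show ?thesis by blast
qed

lemma mult_sq_carrier[simp]: "A \<in> carrier_mat n n \<Longrightarrow> B \<in> carrier_mat n n \<Longrightarrow> A * B \<in> carrier_mat n n"
  by auto

lemma mat0_eq: "A \<in> carrier_mat 0 0 \<Longrightarrow> B \<in> carrier_mat 0 0 \<Longrightarrow> A = B"
  by (rule eq_matI) auto

lemma hermitian_decomp:
  "A \<in> carrier_mat n n \<Longrightarrow> dag A = A \<Longrightarrow>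
   \<exists>U h. unitary n U \<and> A = U * dmat n (\<lambda>i. complex_of_real (h i)) * dag U"
proof (induction n arbitrary: A)
  case 0
  have "unitary 0 (1\<^sub>m 0)" by (intro unitaryI) auto
  moreover have "A = 1\<^sub>m 0 * dmat 0 (\<lambda>i. complex_of_real (f i)) * dag (1\<^sub>m 0)" for f
    using 0 by (intro mat0_eq) auto
  ultimately show ?case by blast
next
  case (Suc m A)
  define n where "n = Suc m"
  have A: "A \<in> carrier_mat n n" and hA: "dag A = A" using Suc.prems n_def by auto
  from spectrum_non_empty[OF A] obtain e where "eigenvalue A e" unfolding spectrum_def n_def by auto
  then obtain v where "eigenvector A v e" unfolding eigenvalue_def by auto
  hence v: "v \<in> carrier_vec n" "v \<noteq> 0\<^sub>v n" and Av: "A *\<^sub>v v = e \<cdot>\<^sub>v v"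
    using A unfolding eigenvector_def by auto
  from unit_complete[OF v] obtain W c where W: "unitary n W" and c: "c \<noteq> 0"
    and Wv: "\<forall>i<n. W $$ (i,0) = c * v $ i" by auto
  have Wc: "W \<in> carrier_mat n n" "dag W \<in> carrier_mat n n" and WW: "dag W * W = 1\<^sub>m n" "W * dag W = 1\<^sub>m n"
    using W unfolding unitary_def by auto
  have n0: "0 < n" unfolding n_def by simp
  have AW0: "(A * W) $$ (k,0) = e * W $$ (k,0)" if k: "k < n" for k
  proof -
    have "(A * W) $$ (k,0) = (\<Sum>l<n. A $$ (k,l) * W $$ (l,0))"
      using A Wc k n0 by (subst index_mult') auto
    also have "\<dots> = c * (\<Sum>l<n. A $$ (k,l) * v $ l)"
      using Wv by (auto simp: sum_distrib_left intro!: sum.cong)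
    also have "(\<Sum>l<n. A $$ (k,l) * v $ l) = (A *\<^sub>v v) $ k"
      using A v k by (auto simp: scalar_prod_def atLeast0LessThan intro!: sum.cong)
    also have "\<dots> = e * v $ k" using Av v k by auto
    finally show ?thesis using Wv k by simp
  qed
  define B where "B = dag W * A * W"
  have Bc: "B \<in> carrier_mat n n" unfolding B_def using A Wc by auto
  have B': "B = dag W * (A * W)" unfolding B_def using A Wc by (simp add: assoc_mult_mat[of _ n n _ n _ n])
  have hB: "dag B = B" unfolding B' using A Wc hA
    by (simp add: dag_mult[of _ n n _ n] assoc_mult_mat[of _ n n _ n _ n])
  have Bcol: "B $$ (i,0) = (if i = 0 then e else 0)" if i: "i < n" for i
  proof -
    have "B $$ (i,0) = (\<Sum>k<n. dag W $$ (i,k) * (A * W) $$ (k,0))"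
      unfolding B' using A Wc i n0 by (subst index_mult') auto
    also have "\<dots> = e * (\<Sum>k<n. dag W $$ (i,k) * W $$ (k,0))"
      using AW0 by (auto simp: sum_distrib_left intro!: sum.cong)
    also have "(\<Sum>k<n. dag W $$ (i,k) * W $$ (k,0)) = (dag W * W) $$ (i,0)"
      using Wc i n0 by (subst index_mult') auto
    also have "\<dots> = (if i = 0 then 1 else 0)" using WW i n0 by auto
    finally show ?thesis by simp
  qed
  have Brow: "B $$ (0,j) = cnj (B $$ (j,0))" if j: "j < n" for j
  proof -
    have "B $$ (0,j) = dag B $$ (0,j)" using hB by simp
    also have "\<dots> = cnj (B $$ (j,0))" using Bc j n0 by auto
    finally show ?thesis .
  qed
  have ereal: "e = complex_of_real (Re e)"
  proof -
    have "e = cnj e" using Brow[OF n0] Bcol[OF n0] by simp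
    thus ?thesis by (metis Reals_cnj_iff of_real_Re)
  qed
  define B3 where "B3 = mat m m (\<lambda>(i,j). B $$ (Suc i, Suc j))"
  have B3c: "B3 \<in> carrier_mat m m" unfolding B3_def by auto
  have hB3: "dag B3 = B3"
  proof (rule eq_matI)
    fix i j assume "i < dim_row B3" "j < dim_col B3"
    hence i: "i < m" and j: "j < m" unfolding B3_def by auto
    have "dag B3 $$ (i,j) = cnj (B $$ (Suc j, Suc i))" using i j unfolding B3_def by auto
    also have "\<dots> = dag B $$ (Suc i, Suc j)" using i j Bc n_def by auto
    also have "\<dots> = B3 $$ (i,j)" using hB i j unfolding B3_def by auto
    finally show "dag B3 $$ (i,j) = B3 $$ (i,j)" .
  qed (auto simp: B3_def)
  from Suc.IH[OF B3c hB3] obtain U3 h3 where U3: "unitary m U3"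
    and B3e: "B3 = U3 * dmat m (\<lambda>i. complex_of_real (h3 i)) * dag U3" by auto
  have U3c: "U3 \<in> carrier_mat m m" and U3u: "dag U3 * U3 = 1\<^sub>m m" using U3 unfolding unitary_def by auto
  define U' where "U' = mat n n (\<lambda>(i,j). if i = 0 \<and> j = 0 then 1 else if i = 0 \<or> j = 0 then 0 else U3 $$ (i-1,j-1))"
  define h' where "h' i = (if i = 0 then Re e else h3 (i - 1))" for i
  have U'c: "U' \<in> carrier_mat n n" unfolding U'_def by auto
  have "dag U' * U' = 1\<^sub>m n"
  proof (rule eq_matI)
    fix i j assume "i < dim_row (1\<^sub>m n)" "j < dim_col (1\<^sub>m n)"
    hence i: "i < n" and j: "j < n" by auto
    have "(dag U' * U') $$ (i,j) = (\<Sum>k<Suc m. dag U' $$ (i,k) * U' $$ (k,j))"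
      using U'c i j n_def by (subst index_mult') auto
    also have "\<dots> = dag U' $$ (i,0) * U' $$ (0,j) + (\<Sum>k<m. dag U' $$ (i,Suc k) * U' $$ (Suc k,j))"
      by (subst sum.lessThan_Suc_shift) simp
    also have "\<dots> = 1\<^sub>m n $$ (i,j)"
    proof (cases "i = 0 \<or> j = 0")
      case True
      thus ?thesis using i j n_def by (auto simp: U'_def)
    next
      case False
      then obtain i' j' where ij: "i = Suc i'" "j = Suc j'" by (cases i; cases j) auto
      have "(\<Sum>k<m. dag U' $$ (i,Suc k) * U' $$ (Suc k,j)) = (\<Sum>k<m. dag U3 $$ (i',k) * U3 $$ (k,j'))"
        using i j ij n_def U3c by (intro sum.cong refl) (auto simp: U'_def)
      also have "\<dots> = (dag U3 * U3) $$ (i',j')" using U3c i j ij n_def by (subst index_mult') auto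
      also have "\<dots> = (if i' = j' then 1 else 0)" using U3u i j ij n_def by auto
      finally show ?thesis using i j ij n_def by (auto simp: U'_def)
    qed
    finally show "(dag U' * U') $$ (i,j) = 1\<^sub>m n $$ (i,j)" .
  qed (use U'c in auto)
  hence U'u: "unitary n U'" using U'c by (intro unitaryI) auto
  define D where "D = dmat n (\<lambda>i. complex_of_real (h' i))"
  have BU: "B = U' * D * dag U'"
  proof (rule eq_matI)
    fix i j assume "i < dim_row (U' * D * dag U')" "j < dim_col (U' * D * dag U')"
    hence i: "i < n" and j: "j < n" using U'c by (auto simp: D_def)
    have "(U' * D * dag U') $$ (i,j) = (\<Sum>k<Suc m. U' $$ (i,k) * complex_of_real (h' k) * cnj (U' $$ (j,k)))"
      unfolding D_def using UDU_index[OF U'c i j] n_def by simp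
    also have "\<dots> = U' $$ (i,0) * complex_of_real (h' 0) * cnj (U' $$ (j,0)) +
       (\<Sum>k<m. U' $$ (i,Suc k) * complex_of_real (h' (Suc k)) * cnj (U' $$ (j,Suc k)))"
      by (subst sum.lessThan_Suc_shift) simp
    also have "\<dots> = B $$ (i,j)"
    proof (cases "i = 0 \<or> j = 0")
      case True
      have z: "B $$ (0, j) = (if j = 0 then e else 0)" using Brow[OF j] Bcol[OF j] by auto
      show ?thesis using True i j n_def Bcol[OF i] z ereal by (auto simp: U'_def h'_def)
    next
      case False
      then obtain i' j' where ij: "i = Suc i'" "j = Suc j'" by (cases i; cases j) auto
      have "(\<Sum>k<m. U' $$ (i,Suc k) * complex_of_real (h' (Suc k)) * cnj (U' $$ (j,Suc k)))
         = (\<Sum>k<m. U3 $$ (i',k) * complex_of_real (h3 k) * cnj (U3 $$ (j',k)))"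
        using i j ij n_def by (intro sum.cong refl) (auto simp: U'_def h'_def)
      also have "\<dots> = B3 $$ (i',j')" unfolding B3e using i j ij n_def by (subst UDU_index[OF U3c]) auto
      also have "\<dots> = B $$ (i,j)" using i j ij n_def by (auto simp: B3_def)
      finally show ?thesis using i j ij n_def by (auto simp: U'_def)
    qed
    finally show "B $$ (i,j) = (U' * D * dag U') $$ (i,j)" by simp
  qed (use Bc U'c in \<open>auto simp: D_def\<close>)
  have U'dc: "dag U' \<in> carrier_mat n n" "D \<in> carrier_mat n n" using U'c by (auto simp: D_def)
  have "A = (W * dag W) * A * (W * dag W)" using WW A by simp
  also have "\<dots> = W * B * dag W" unfolding B_def using Wc A
    by (simp add: assoc_mult_mat[of _ n n _ n _ n])
  also have "\<dots> = (W * U') * D * dag (W * U')" unfolding BU using Wc U'c U'dc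
    by (simp add: assoc_mult_mat[of _ n n _ n _ n] dag_mult[of _ n n _ n])
  finally have "A = (W * U') * D * dag (W * U')" .
  moreover have "unitary n (W * U')" using unitary_mult[OF W U'u] .
  ultimately show ?case unfolding D_def n_def by blast
qed


abbreviation UDU :: "nat \<Rightarrow> complex mat \<Rightarrow> (nat \<Rightarrow> complex) \<Rightarrow> complex mat" where
  "UDU n U f \<equiv> U * dmat n f * dag U"

lemma unitaryD: assumes "unitary n U"
  shows "U \<in> carrier_mat n n" "dag U \<in> carrier_mat n n" "dag U * U = 1\<^sub>m n" "U * dag U = 1\<^sub>m n"
  using assms unfolding unitary_def by auto

lemma unitary_cancel: assumes U: "unitary n U" and X: "X \<in> carrier_mat n m"
  shows "dag U * (U * X) = X" "U * (dag U * X) = X"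
proof -
  note c = unitaryD[OF U]
  have "dag U * (U * X) = (dag U * U) * X" by (rule assoc_mult_mat[symmetric, OF c(2) c(1) X])
  thus "dag U * (U * X) = X" using c X by simp
  have "U * (dag U * X) = (U * dag U) * X" by (rule assoc_mult_mat[symmetric, OF c(1) c(2) X])
  thus "U * (dag U * X) = X" using c X by simp
qed

lemma UDU_carrier[simp]: "U \<in> carrier_mat n n \<Longrightarrow> UDU n U f \<in> carrier_mat n n"
  by simp

lemma dmat_mult: "dmat n f * dmat n g = dmat n (\<lambda>i. f i * g i)"
proof (rule eq_matI)
  fix i j assume "i < dim_row (dmat n (\<lambda>i. f i * g i))" "j < dim_col (dmat n (\<lambda>i. f i * g i))"
  hence i: "i < n" and j: "j < n" by auto
  have "(dmat n f * dmat n g) $$ (i,j) = (\<Sum>k<n. dmat n f $$ (i,k) * dmat n g $$ (k,j))"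
    using i j by (subst index_mult') auto
  also have "\<dots> = (\<Sum>k<n. if k = i then (if i = j then f i * g i else 0) else 0)"
    using i j by (intro sum.cong refl) auto
  also have "\<dots> = dmat n (\<lambda>i. f i * g i) $$ (i,j)" using i j by (simp add: sum.delta)
  finally show "(dmat n f * dmat n g) $$ (i,j) = dmat n (\<lambda>i. f i * g i) $$ (i,j)" .
qed auto

lemma UDU_mult: assumes U: "unitary n U"
  shows "UDU n U f * UDU n U g = UDU n U (\<lambda>i. f i * g i)"
proof -
  note c = unitaryD[OF U]
  have "UDU n U f * UDU n U g = U * (dmat n f * (dag U * (U * (dmat n g * dag U))))"
    using c by (simp add: assoc_mult_mat[of _ n n _ n _ n])
  also have "dag U * (U * (dmat n g * dag U)) = dmat n g * dag U"
    using c by (intro unitary_cancel(1)[OF U]) auto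
  also have "U * (dmat n f * (dmat n g * dag U)) = U * (dmat n f * dmat n g) * dag U"
    using c by (simp add: assoc_mult_mat[of _ n n _ n _ n])
  finally show ?thesis by (simp add: dmat_mult)
qed

lemma dmat_smult: "c \<cdot>\<^sub>m dmat n f = dmat n (\<lambda>i. c * f i)"
  by (rule eq_matI) auto

lemma UDU_smult: assumes U: "unitary n U"
  shows "c \<cdot>\<^sub>m UDU n U f = UDU n U (\<lambda>i. c * f i)"
proof -
  note cU = unitaryD[OF U]
  have "c \<cdot>\<^sub>m UDU n U f = U * (c \<cdot>\<^sub>m dmat n f) * dag U"
    using cU by (simp add: mult_smult_distrib[of _ n n _ n] mult_smult_assoc_mat[of _ n n _ n])
  thus ?thesis by (simp add: dmat_smult)
qed

lemma dmat_dag: "dag (dmat n f) = dmat n (\<lambda>i. cnj (f i))"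
  by (rule eq_matI) auto

lemma UDU_dag: assumes U: "unitary n U"
  shows "dag (UDU n U f) = UDU n U (\<lambda>i. cnj (f i))"
proof -
  note c = unitaryD[OF U]
  show ?thesis using c
    by (simp add: dag_mult[of _ n n _ n] dmat_dag assoc_mult_mat[of _ n n _ n _ n])
qed

lemma trace_dmat: "trace (dmat n f) = (\<Sum>i<n. f i)"
  by (auto simp: trace_def)

lemma trace_UDU: assumes U: "unitary n U"
  shows "trace (UDU n U f) = (\<Sum>i<n. f i)"
proof -
  note c = unitaryD[OF U]
  have "trace (UDU n U f) = trace (dag U * (U * dmat n f))"
    using c by (subst trace_comm[of _ n n]) auto
  also have "dag U * (U * dmat n f) = dmat n f"
    using c by (simp add: assoc_mult_mat[of _ n n _ n _ n, symmetric])
  finally show ?thesis by (simp add: trace_dmat)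
qed

lemma dmat_one: "dmat n (\<lambda>_. 1) = 1\<^sub>m n"
  by (rule eq_matI) auto

lemma UDU_one: assumes U: "unitary n U" shows "UDU n U (\<lambda>_. 1) = 1\<^sub>m n"
  using unitaryD[OF U] by (simp add: dmat_one)

lemma dmat_mult_vec: "w \<in> carrier_vec n \<Longrightarrow> dmat n g *\<^sub>v w = vec n (\<lambda>i. g i * w $ i)"
proof (rule eq_vecI)
  fix i assume w: "w \<in> carrier_vec n" and "i < dim_vec (vec n (\<lambda>i. g i * w $ i))"
  hence i: "i < n" by auto
  have "(dmat n g *\<^sub>v w) $ i = (\<Sum>k<n. dmat n g $$ (i,k) * w $ k)"
    using i w by (auto simp: scalar_prod_def atLeast0LessThan intro!: sum.cong)
  also have "\<dots> = (\<Sum>k<n. if k = i then g i * w $ i else 0)" using i by (intro sum.cong) auto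
  finally show "(dmat n g *\<^sub>v w) $ i = vec n (\<lambda>i. g i * w $ i) $ i" using i by (simp add: sum.delta)
qed auto

lemma UDU_mult_vec: assumes U: "unitary n U" and v: "v \<in> carrier_vec n"
  shows "UDU n U g *\<^sub>v v = U *\<^sub>v (dmat n g *\<^sub>v (dag U *\<^sub>v v))"
proof -
  note c = unitaryD[OF U]
  have "UDU n U g *\<^sub>v v = (U * dmat n g) *\<^sub>v (dag U *\<^sub>v v)"
    by (rule assoc_mult_mat_vec[OF mult_sq_carrier[OF c(1) dmat_carrier] c(2) v])
  also have "\<dots> = U *\<^sub>v (dmat n g *\<^sub>v (dag U *\<^sub>v v))"
    by (rule assoc_mult_mat_vec[OF c(1) dmat_carrier mult_mat_vec_carrier[OF c(2) v]])
  finally show ?thesis .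
qed

lemma mat_fun_UDU: assumes U: "unitary n U"
  shows "mat_fun n f (UDU n U g) = UDU n U (\<lambda>i. f (g i))"
proof -
  note c = unitaryD[OF U]
  define A where "A = UDU n U g"
  define B0 where "B0 = UDU n U (\<lambda>i. f (g i))"
  have Ac: "A \<in> carrier_mat n n" and B0c: "B0 \<in> carrier_mat n n" using c unfolding A_def B0_def by auto
  have exist: "B0 *\<^sub>v v = f l \<cdot>\<^sub>v v" if v: "v \<in> carrier_vec n" and Av: "A *\<^sub>v v = l \<cdot>\<^sub>v v" for v l
  proof -
    define w where "w = dag U *\<^sub>v v"
    have w: "w \<in> carrier_vec n" unfolding w_def using c(2) v by (rule mult_mat_vec_carrier)
    have "dag U *\<^sub>v (A *\<^sub>v v) = (dag U * A) *\<^sub>v v" by (rule assoc_mult_mat_vec[symmetric, OF c(2) Ac v])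
    also have "dag U * A = dmat n g * dag U" unfolding A_def using c
      by (simp add: assoc_mult_mat[of _ n n _ n _ n, symmetric])
    also have "(dmat n g * dag U) *\<^sub>v v = dmat n g *\<^sub>v w" unfolding w_def by (rule assoc_mult_mat_vec[OF dmat_carrier c(2) v])
    finally have e1: "dmat n g *\<^sub>v w = dag U *\<^sub>v (l \<cdot>\<^sub>v v)" using Av by simp
    have "dag U *\<^sub>v (l \<cdot>\<^sub>v v) = l \<cdot>\<^sub>v w" unfolding w_def by (rule mult_mat_vec[OF c(2) v])
    with e1 have e2: "g i * w $ i = l * w $ i" if "i < n" for i
      using that w dmat_mult_vec[OF w, of g] by (metis index_smult_vec(1) index_vec carrier_vecD)
    have e3: "dmat n (\<lambda>i. f (g i)) *\<^sub>v w = f l \<cdot>\<^sub>v w"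
    proof (rule eq_vecI)
      fix i assume "i < dim_vec (f l \<cdot>\<^sub>v w)"
      hence i: "i < n" using w by auto
      show "(dmat n (\<lambda>i. f (g i)) *\<^sub>v w) $ i = (f l \<cdot>\<^sub>v w) $ i"
      proof (cases "w $ i = 0")
        case True thus ?thesis using i w by (simp add: dmat_mult_vec)
      next
        case False
        hence "g i = l" using e2[OF i] by simp
        thus ?thesis using i w by (simp add: dmat_mult_vec)
      qed
    qed (use w in auto)
    have "B0 *\<^sub>v v = U *\<^sub>v (dmat n (\<lambda>i. f (g i)) *\<^sub>v w)" unfolding B0_def w_def by (rule UDU_mult_vec[OF U v])
    also have "\<dots> = f l \<cdot>\<^sub>v (U *\<^sub>v w)" unfolding e3 by (rule mult_mat_vec[OF c(1) w])
    also have "U *\<^sub>v w = v" unfolding w_def using c v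
      by (simp add: assoc_mult_mat_vec[of _ n n _ n, symmetric])
    finally show ?thesis .
  qed
  have uniq: "B = B0" if Bc: "B \<in> carrier_mat n n"
    and PB: "\<forall>v \<in> carrier_vec n. \<forall>l. A *\<^sub>v v = l \<cdot>\<^sub>v v \<longrightarrow> B *\<^sub>v v = f l \<cdot>\<^sub>v v" for B
  proof -
    have colk: "B *\<^sub>v col U k = f (g k) \<cdot>\<^sub>v col U k" if k: "k < n" for k
    proof -
      have cu: "col U k \<in> carrier_vec n" using c by auto
      have "dag U *\<^sub>v col U k = col (dag U * U) k" by (rule col_mult2[OF c(2) c(1) k, symmetric])
      also have "\<dots> = unit_vec n k" using c k by simp
      finally have duk: "dag U *\<^sub>v col U k = unit_vec n k" .
      have "A *\<^sub>v col U k = U *\<^sub>v (dmat n g *\<^sub>v (dag U *\<^sub>v col U k))"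
        unfolding A_def by (rule UDU_mult_vec[OF U cu])
      also have "dmat n g *\<^sub>v (dag U *\<^sub>v col U k) = g k \<cdot>\<^sub>v unit_vec n k"
        unfolding duk by (rule eq_vecI) (auto simp: dmat_mult_vec k)
      also have "U *\<^sub>v (g k \<cdot>\<^sub>v unit_vec n k) = g k \<cdot>\<^sub>v col U k"
        using c k by (subst mult_mat_vec[OF c(1)]) auto
      finally show ?thesis using PB cu by auto
    qed
    have BU: "B * U = U * dmat n (\<lambda>i. f (g i))"
    proof (rule eq_matI)
      fix i k assume "i < dim_row (U * dmat n (\<lambda>i. f (g i)))" "k < dim_col (U * dmat n (\<lambda>i. f (g i)))"
      hence i: "i < n" and k: "k < n" using c by auto
      have "(B * U) $$ (i,k) = col (B * U) k $ i" using Bc c i k by simp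
      also have "\<dots> = (f (g k) \<cdot>\<^sub>v col U k) $ i" using colk[OF k] col_mult2[OF Bc c(1) k] by simp
      also have "\<dots> = U $$ (i,k) * f (g k)" using c i k by simp
      also have "\<dots> = (\<Sum>l<n. U $$ (i,l) * dmat n (\<lambda>i. f (g i)) $$ (l,k))"
        using k by (simp add: sum.delta if_distrib[of "\<lambda>x. U $$ (i,_) * x"] cong: if_cong)
      also have "\<dots> = (U * dmat n (\<lambda>i. f (g i))) $$ (i,k)" using c i k by (subst index_mult') auto
      finally show "(B * U) $$ (i,k) = (U * dmat n (\<lambda>i. f (g i))) $$ (i,k)" .
    qed (use Bc c in auto)
    have "B = B * (U * dag U)" using Bc c by simp
    also have "\<dots> = (B * U) * dag U" using Bc c by (simp add: assoc_mult_mat[of _ n n _ n _ n])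
    finally show ?thesis unfolding BU B0_def .
  qed
  have "mat_fun n f A = B0"
    unfolding mat_fun_def
  proof (rule the_equality)
    show "B0 \<in> carrier_mat n n \<and> (\<forall>v\<in>carrier_vec n. \<forall>l. A *\<^sub>v v = l \<cdot>\<^sub>v v \<longrightarrow> B0 *\<^sub>v v = f l \<cdot>\<^sub>v v)"
      using B0c exist by auto
  qed (use uniq in auto)
  thus ?thesis unfolding A_def B0_def .
qed


lemma finsum_carrier[simp]: "finsum_mat r c f S \<in> carrier_mat r c"
  and finsum_dim[simp]: "dim_row (finsum_mat r c f S) = r" "dim_col (finsum_mat r c f S) = c"
  by (auto simp: finsum_mat_def)

lemma index_finsum[simp]: "i < r \<Longrightarrow> j < c \<Longrightarrow> finsum_mat r c f S $$ (i,j) = (\<Sum>u\<in>S. f u $$ (i,j))"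
  by (auto simp: finsum_mat_def)

lemma finsum_cong: "(\<And>u. u \<in> S \<Longrightarrow> f u = g u) \<Longrightarrow> finsum_mat r c f S = finsum_mat r c g S"
  unfolding finsum_mat_def by (intro cong_mat refl) (auto intro!: sum.cong)

lemma finsum_mult_left: assumes A: "A \<in> carrier_mat m r" and f: "\<And>u. u \<in> S \<Longrightarrow> f u \<in> carrier_mat r c"
  shows "A * finsum_mat r c f S = finsum_mat m c (\<lambda>u. A * f u) S"
proof (rule eq_matI)
  fix i j assume "i < dim_row (finsum_mat m c (\<lambda>u. A * f u) S)" "j < dim_col (finsum_mat m c (\<lambda>u. A * f u) S)"
  hence i: "i < m" and j: "j < c" by auto
  have "(A * finsum_mat r c f S) $$ (i,j) = (\<Sum>k<r. A $$ (i,k) * (\<Sum>u\<in>S. f u $$ (k,j)))"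
    using A i j by (subst index_mult') auto
  also have "\<dots> = (\<Sum>u\<in>S. \<Sum>k<r. A $$ (i,k) * f u $$ (k,j))"
    by (simp add: sum_distrib_left sum.swap[of _ S])
  also have "\<dots> = (\<Sum>u\<in>S. (A * f u) $$ (i,j))"
    using A f i j by (intro sum.cong refl, subst index_mult') auto
  finally show "(A * finsum_mat r c f S) $$ (i,j) = finsum_mat m c (\<lambda>u. A * f u) S $$ (i,j)"
    using i j by simp
qed (use A in auto)

lemma finsum_mult_right: assumes A: "A \<in> carrier_mat c m" and f: "\<And>u. u \<in> S \<Longrightarrow> f u \<in> carrier_mat r c"
  shows "finsum_mat r c f S * A = finsum_mat r m (\<lambda>u. f u * A) S"
proof (rule eq_matI)
  fix i j assume "i < dim_row (finsum_mat r m (\<lambda>u. f u * A) S)" "j < dim_col (finsum_mat r m (\<lambda>u. f u * A) S)"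
  hence i: "i < r" and j: "j < m" by auto
  have "(finsum_mat r c f S * A) $$ (i,j) = (\<Sum>k<c. (\<Sum>u\<in>S. f u $$ (i,k)) * A $$ (k,j))"
    using A i j by (subst index_mult') auto
  also have "\<dots> = (\<Sum>u\<in>S. \<Sum>k<c. f u $$ (i,k) * A $$ (k,j))"
    by (simp add: sum_distrib_right sum.swap[of _ S])
  also have "\<dots> = (\<Sum>u\<in>S. (f u * A) $$ (i,j))"
    using A f i j by (intro sum.cong refl, subst index_mult') auto
  finally show "(finsum_mat r c f S * A) $$ (i,j) = finsum_mat r m (\<lambda>u. f u * A) S $$ (i,j)"
    using i j by simp
qed (use A in auto)

lemma trace_finsum: assumes f: "\<And>u. u \<in> S \<Longrightarrow> f u \<in> carrier_mat n n"
  shows "trace (finsum_mat n n f S) = (\<Sum>u\<in>S. trace (f u))"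
proof -
  have "trace (finsum_mat n n f S) = (\<Sum>i<n. \<Sum>u\<in>S. f u $$ (i,i))" by (simp add: trace_def)
  also have "\<dots> = (\<Sum>u\<in>S. \<Sum>i<n. f u $$ (i,i))" by (rule sum.swap)
  also have "\<dots> = (\<Sum>u\<in>S. trace (f u))" using f by (intro sum.cong refl) (auto simp: trace_def)
  finally show ?thesis .
qed

lemma dag_finsum: assumes f: "\<And>u. u \<in> S \<Longrightarrow> f u \<in> carrier_mat n m"
  shows "dag (finsum_mat n m f S) = finsum_mat m n (\<lambda>u. dag (f u)) S"
proof (intro eq_matI)
  fix i j assume "i < dim_row (finsum_mat m n (\<lambda>u. dag (f u)) S)" "j < dim_col (finsum_mat m n (\<lambda>u. dag (f u)) S)"
  hence i: "i < m" and j: "j < n" by auto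
  show "dag (finsum_mat n m f S) $$ (i, j) = finsum_mat m n (\<lambda>u. dag (f u)) S $$ (i, j)"
    using i j by (auto simp: cnj_sum intro!: sum.cong dest!: f)
qed auto

lemma finsum_smult: assumes f: "\<And>u. u \<in> S \<Longrightarrow> f u \<in> carrier_mat n m"
  shows "c \<cdot>\<^sub>m finsum_mat n m f S = finsum_mat n m (\<lambda>u. c \<cdot>\<^sub>m f u) S"
  by (intro eq_matI) (auto simp: sum_distrib_left intro!: sum.cong dest!: f)

lemma finsum_add: assumes "\<And>u. u \<in> S \<Longrightarrow> f u \<in> carrier_mat n m" "\<And>u. u \<in> S \<Longrightarrow> g u \<in> carrier_mat n m"
  shows "finsum_mat n m (\<lambda>u. f u + g u) S = finsum_mat n m f S + finsum_mat n m g S"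
proof (intro eq_matI)
  fix i j assume "i < dim_row (finsum_mat n m f S + finsum_mat n m g S)" "j < dim_col (finsum_mat n m f S + finsum_mat n m g S)"
  hence i: "i < n" and j: "j < m" by auto
  have "(\<Sum>u\<in>S. (f u + g u) $$ (i, j)) = (\<Sum>u\<in>S. f u $$ (i, j) + g u $$ (i,j))"
    using i j by (intro sum.cong) (auto dest!: assms)
  thus "finsum_mat n m (\<lambda>u. f u + g u) S $$ (i, j) = (finsum_mat n m f S + finsum_mat n m g S) $$ (i, j)"
    using i j by (simp add: sum.distrib)
qed auto

lemma finsum_swap: "finsum_mat n m (\<lambda>u. finsum_mat n m (g u) T) S = finsum_mat n m (\<lambda>t. finsum_mat n m (\<lambda>u. g u t) S) T"
  by (intro eq_matI) (auto intro: sum.swap)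

lemma finsum_empty[simp]: "finsum_mat n m f {} = 0\<^sub>m n m"
  by (intro eq_matI) auto

lemma finsum_insert: assumes "finite S" "x \<notin> S" "f x \<in> carrier_mat n m"
  shows "finsum_mat n m f (insert x S) = f x + finsum_mat n m f S"
  using assms by (intro eq_matI) auto

lemma finsum_smult_left: "finsum_mat n m (\<lambda>u. c u \<cdot>\<^sub>m A) S = (\<Sum>u\<in>S. c u) \<cdot>\<^sub>m A" if "A \<in> carrier_mat n m"
  using that by (intro eq_matI) (auto simp: sum_distrib_right)

lemma finsum_zero: "finsum_mat n m (\<lambda>u. 0\<^sub>m n m) S = 0\<^sub>m n m"
  by (intro eq_matI) auto

lemma listsum_finsum: "listsum_mat d (map g Ks) = finsum_mat d d (\<lambda>k. g (Ks ! k)) {..<length Ks}"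
  unfolding listsum_mat_def finsum_mat_def
  by (intro cong_mat refl) (auto simp: sum_list_sum_nth atLeast0LessThan)


lemma VDV_index: assumes V: "V \<in> carrier_mat m n" and i: "i < m" and j: "j < m"
  shows "(V * dmat n f * dag V) $$ (i,j) = (\<Sum>k<n. V $$ (i,k) * f k * cnj (V $$ (j,k)))"
proof -
  have "(V * dmat n f * dag V) $$ (i,j) = (\<Sum>l<n. (V * dmat n f) $$ (i,l) * dag V $$ (l,j))"
    using V i j by (subst index_mult') auto
  also have "\<dots> = (\<Sum>l<n. (\<Sum>k<n. V $$ (i,k) * dmat n f $$ (k,l)) * cnj (V $$ (j,l)))"
    using V i j by (intro sum.cong refl, subst index_mult') auto
  also have "\<dots> = (\<Sum>l<n. V $$ (i,l) * f l * cnj (V $$ (j,l)))"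
  proof (intro sum.cong refl)
    fix l assume l: "l \<in> {..<n}"
    have "(\<Sum>k<n. V $$ (i,k) * dmat n f $$ (k,l)) = (\<Sum>k<n. if k = l then V $$ (i,l) * f l else 0)"
      using l by (intro sum.cong refl) auto
    also have "\<dots> = V $$ (i,l) * f l" using l by (simp add: sum.delta)
    finally show "(\<Sum>k<n. V $$ (i,k) * dmat n f $$ (k,l)) * cnj (V $$ (j,l)) = V $$ (i,l) * f l * cnj (V $$ (j,l))"
      by simp
  qed
  finally show ?thesis .
qed

lemma trace_VDV: assumes V: "V \<in> carrier_mat m n"
  shows "trace (V * dmat n (\<lambda>k. complex_of_real (q k)) * dag V) =
    complex_of_real (\<Sum>i<m. \<Sum>k<n. q k * (cmod (V $$ (i,k)))^2)"
proof -
  have "trace (V * dmat n (\<lambda>k. complex_of_real (q k)) * dag V) =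
     (\<Sum>i<m. \<Sum>k<n. V $$ (i,k) * complex_of_real (q k) * cnj (V $$ (i,k)))"
    unfolding trace_def using V carrier_matD[OF V] by (intro sum.cong refl) (auto simp: VDV_index simp del: index_mult_mat(1))
  also have "\<dots> = (\<Sum>i<m. \<Sum>k<n. complex_of_real (q k * (cmod (V $$ (i,k)))^2))"
    by (intro sum.cong refl) (simp add: complex_norm_square[symmetric] mult.commute mult.left_commute)
  also have "\<dots> = complex_of_real (\<Sum>i<m. \<Sum>k<n. q k * (cmod (V $$ (i,k)))^2)"
    by simp
  finally show ?thesis .
qed

locale rho_setting =
  fixes d :: nat and \<rho> :: "complex mat" and s :: real and Ur :: "complex mat" and p :: "nat \<Rightarrow> real"
  assumes d_pos: "d > 0" and Uu: "unitary d Ur" and p_pos: "\<forall>i<d. p i > 0" and p_sum: "(\<Sum>i<d. p i) = 1"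
    and rho_eq: "\<rho> = UDU d Ur (\<lambda>i. complex_of_real (p i))"
    and mpow_eq: "\<forall>a. mpow d \<rho> a = UDU d Ur (\<lambda>i. complex_of_real (p i powr a))"
begin

abbreviation P where "P a \<equiv> mpow d \<rho> a"

definition Gam :: "complex mat \<Rightarrow> complex mat" where
  "Gam X = P (1 - s) * X * P s"

lemma Ur: "Ur \<in> carrier_mat d d" "dag Ur \<in> carrier_mat d d" "dag Ur * Ur = 1\<^sub>m d" "Ur * dag Ur = 1\<^sub>m d"
  using unitaryD[OF Uu] by auto

lemma rho_c[simp]: "\<rho> \<in> carrier_mat d d"
  unfolding rho_eq using Ur by simp

lemma P_c[simp]: "P a \<in> carrier_mat d d"
  unfolding mpow_eq[rule_format] using Ur by simp

lemma rho_dim[simp]: "dim_row \<rho> = d" "dim_col \<rho> = d"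
  using carrier_matD[OF rho_c] by auto

lemma P_dim[simp]: "dim_row (P a) = d" "dim_col (P a) = d"
  using carrier_matD[OF P_c[of a]] by auto

lemma Gam_dim[simp]: "dim_row (Gam X) = d" "dim_col (Gam X) = d"
  unfolding Gam_def by auto

lemma P_mult: "P a * P b = P (a + b)"
proof -
  have "P a * P b = UDU d Ur (\<lambda>i. complex_of_real (p i powr a) * complex_of_real (p i powr b))"
    unfolding mpow_eq[rule_format] by (rule UDU_mult[OF Uu])
  also have "(\<lambda>i. complex_of_real (p i powr a) * complex_of_real (p i powr b)) = (\<lambda>i. complex_of_real (p i powr (a + b)))"
    by (auto simp: powr_add)
  finally show ?thesis unfolding mpow_eq[rule_format] .
qed

lemma P_one: "P 1 = \<rho>"
proof -
  have "P 1 = UDU d Ur (\<lambda>i. complex_of_real (p i powr 1))" unfolding mpow_eq[rule_format] ..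
  also have "\<dots> = UDU d Ur (\<lambda>i. complex_of_real (p i))"
  proof -
    have "dmat d (\<lambda>i. complex_of_real (p i powr 1)) = dmat d (\<lambda>i. complex_of_real (p i))"
      using p_pos by (intro eq_matI) auto
    thus ?thesis by simp
  qed
  finally show ?thesis unfolding rho_eq[symmetric] .
qed

lemma P_zero: "P 0 = 1\<^sub>m d"
proof -
  have "dmat d (\<lambda>i. complex_of_real (p i powr 0)) = dmat d (\<lambda>_. 1)"
    using p_pos by (intro eq_matI) auto
  thus ?thesis unfolding mpow_eq[rule_format] using UDU_one[OF Uu] by simp
qed

lemma dag_P: "dag (P a) = P a"
  unfolding mpow_eq[rule_format] by (subst UDU_dag[OF Uu]) simp

lemma dag_rho: "dag \<rho> = \<rho>"
  using dag_P[of 1] unfolding P_one .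

lemma P_s_1s: "P s * P (1 - s) = \<rho>" "P (1 - s) * P s = \<rho>"
  unfolding P_mult by (simp_all add: P_one)

lemma Gam_c[simp]: "X \<in> carrier_mat d d \<Longrightarrow> Gam X \<in> carrier_mat d d"
  unfolding Gam_def by simp

lemma sinner_Gam: assumes A: "A \<in> carrier_mat d d" and B: "B \<in> carrier_mat d d"
  shows "sinner d \<rho> s A B = trace (dag A * Gam B)"
  unfolding sinner_def Gam_def using A B by (simp add: assoc_mult_mat[of _ d d _ d _ d])

lemma sinner_I_left: assumes X: "X \<in> carrier_mat d d"
  shows "sinner d \<rho> s (1\<^sub>m d) X = trace (\<rho> * X)"
proof -
  have "sinner d \<rho> s (1\<^sub>m d) X = trace ((P (1 - s) * X) * P s)"
    unfolding sinner_def using X by simp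
  also have "\<dots> = trace (P s * (P (1 - s) * X))" using X by (intro trace_comm[of _ d d]) auto
  also have "P s * (P (1 - s) * X) = \<rho> * X"
    using X by (simp add: assoc_mult_mat[of _ d d _ d _ d, symmetric] P_s_1s)
  finally show ?thesis .
qed

lemma trace_Gam: "X \<in> carrier_mat d d \<Longrightarrow> trace (Gam X) = sinner d \<rho> s (1\<^sub>m d) X"
  by (subst sinner_Gam) (auto intro!: left_mult_one_mat[symmetric] carrier_matI)

lemma sinner_conj: assumes A: "A \<in> carrier_mat d d" and B: "B \<in> carrier_mat d d"
  shows "cnj (sinner d \<rho> s A B) = sinner d \<rho> s B A"
proof -
  have "cnj (sinner d \<rho> s A B) = trace (dag (dag A * P (1 - s) * B * P s))"
    unfolding sinner_def using A B by (subst trace_dag[of _ d]) auto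
  also have "dag (dag A * P (1 - s) * B * P s) = P s * dag B * P (1 - s) * A"
    using A B by (simp add: dag_mult[of _ d d _ d] dag_P assoc_mult_mat[of _ d d _ d _ d])
  also have "trace (P s * dag B * P (1 - s) * A) = trace (P s * (dag B * P (1 - s) * A))"
    using A B by (simp add: assoc_mult_mat[of _ d d _ d _ d])
  also have "\<dots> = trace ((dag B * P (1 - s) * A) * P s)"
    using A B by (intro trace_comm[of _ d d]) auto
  also have "\<dots> = sinner d \<rho> s B A" unfolding sinner_def using A B
    by (simp add: assoc_mult_mat[of _ d d _ d _ d])
  finally show ?thesis .
qed

lemma sinner_add_right: assumes A: "A \<in> carrier_mat d d" and B: "B \<in> carrier_mat d d" and C: "C \<in> carrier_mat d d"
  shows "sinner d \<rho> s A (B + C) = sinner d \<rho> s A B + sinner d \<rho> s A C"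
proof -
  have X: "dag A * P (1 - s) \<in> carrier_mat d d" using A by simp
  have "dag A * P (1 - s) * (B + C) * P s = dag A * P (1 - s) * B * P s + dag A * P (1 - s) * C * P s"
    unfolding mult_add_distrib_mat[OF X B C] using X B C by (intro add_mult_distrib_mat[of _ d d]) auto
  thus ?thesis unfolding sinner_def using X B C by (simp add: trace_add[of _ d])
qed

lemma sinner_minus_right: assumes A: "A \<in> carrier_mat d d" and B: "B \<in> carrier_mat d d" and C: "C \<in> carrier_mat d d"
  shows "sinner d \<rho> s A (B - C) = sinner d \<rho> s A B - sinner d \<rho> s A C"
proof -
  have X: "dag A * P (1 - s) \<in> carrier_mat d d" using A by simp
  have "dag A * P (1 - s) * (B - C) * P s = dag A * P (1 - s) * B * P s - dag A * P (1 - s) * C * P s"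
    unfolding mult_minus_distrib_mat[OF X B C] using X B C by (intro minus_mult_distrib_mat[of _ d d]) auto
  thus ?thesis unfolding sinner_def using X B C by (simp add: trace_minus[of _ d])
qed

lemma sinner_smult_right: assumes A: "A \<in> carrier_mat d d" and B: "B \<in> carrier_mat d d"
  shows "sinner d \<rho> s A (c \<cdot>\<^sub>m B) = c * sinner d \<rho> s A B"
proof -
  have X: "dag A * P (1 - s) \<in> carrier_mat d d" using A by simp
  have "dag A * P (1 - s) * (c \<cdot>\<^sub>m B) * P s = c \<cdot>\<^sub>m (dag A * P (1 - s) * B * P s)"
    unfolding mult_smult_distrib[OF X B] using X B by (intro mult_smult_assoc_mat[of _ d d]) auto
  thus ?thesis unfolding sinner_def using X B by (simp add: trace_smult[of _ d])
qed

lemma sinner_finsum_right: assumes A: "A \<in> carrier_mat d d" and f: "\<And>u. u \<in> S \<Longrightarrow> f u \<in> carrier_mat d d"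
  shows "sinner d \<rho> s A (finsum_mat d d f S) = (\<Sum>u\<in>S. sinner d \<rho> s A (f u))"
proof -
  have "sinner d \<rho> s A (finsum_mat d d f S) = trace (dag A * P (1 - s) * finsum_mat d d f S * P s)"
    unfolding sinner_def ..
  also have "dag A * P (1 - s) * finsum_mat d d f S * P s = finsum_mat d d (\<lambda>u. dag A * P (1 - s) * f u * P s) S"
    using A f by (simp add: finsum_mult_left[of _ d d] finsum_mult_right[of _ d d])
  also have "trace \<dots> = (\<Sum>u\<in>S. trace (dag A * P (1 - s) * f u * P s))"
    using A f by (intro trace_finsum) auto
  finally show ?thesis unfolding sinner_def .
qed

lemma sinner_smult_left: assumes "A \<in> carrier_mat d d" "B \<in> carrier_mat d d"
  shows "sinner d \<rho> s (c \<cdot>\<^sub>m A) B = cnj c * sinner d \<rho> s A B"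
proof -
  have "sinner d \<rho> s (c \<cdot>\<^sub>m A) B = cnj (sinner d \<rho> s B (c \<cdot>\<^sub>m A))"
    using assms by (subst sinner_conj) auto
  also have "\<dots> = cnj c * sinner d \<rho> s A B"
    using assms by (simp add: sinner_smult_right sinner_conj)
  finally show ?thesis .
qed

lemma sinner_finsum_left: assumes B: "B \<in> carrier_mat d d" and f: "\<And>u. u \<in> S \<Longrightarrow> f u \<in> carrier_mat d d"
  shows "sinner d \<rho> s (finsum_mat d d f S) B = (\<Sum>u\<in>S. sinner d \<rho> s (f u) B)"
proof -
  have "sinner d \<rho> s (finsum_mat d d f S) B = cnj (sinner d \<rho> s B (finsum_mat d d f S))"
    using assms by (subst sinner_conj) auto
  also have "\<dots> = (\<Sum>u\<in>S. sinner d \<rho> s (f u) B)"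
    using assms by (simp add: sinner_finsum_right cnj_sum sinner_conj)
  finally show ?thesis .
qed

lemma sinner_add_left: assumes "A \<in> carrier_mat d d" "B \<in> carrier_mat d d" "C \<in> carrier_mat d d"
  shows "sinner d \<rho> s (B + C) A = sinner d \<rho> s B A + sinner d \<rho> s C A"
proof -
  have "sinner d \<rho> s (B + C) A = cnj (sinner d \<rho> s A (B + C))"
    using assms by (subst sinner_conj) auto
  thus ?thesis using assms by (simp add: sinner_add_right sinner_conj)
qed

lemma sinner_minus_left: assumes "A \<in> carrier_mat d d" "B \<in> carrier_mat d d" "C \<in> carrier_mat d d"
  shows "sinner d \<rho> s (B - C) A = sinner d \<rho> s B A - sinner d \<rho> s C A"
proof -
  have "sinner d \<rho> s (B - C) A = cnj (sinner d \<rho> s A (B - C))"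
    using assms by (subst sinner_conj) auto
  thus ?thesis using assms by (simp add: sinner_minus_right sinner_conj)
qed

end


lemma trace_ext: assumes A: "A \<in> carrier_mat n n" and B: "B \<in> carrier_mat n n"
  and h: "\<And>X. X \<in> carrier_mat n n \<Longrightarrow> trace (A * X) = trace (B * X)"
  shows "A = B"
proof (rule eq_matI)
  fix i j assume "i < dim_row B" "j < dim_col B"
  hence i: "i < n" and j: "j < n" using B by auto
  define E where "E = mat n n (\<lambda>(k,l). if k = j \<and> l = i then (1::complex) else 0)"
  have Ec: "E \<in> carrier_mat n n" unfolding E_def by auto
  have tr: "trace (C * E) = C $$ (i,j)" if C: "C \<in> carrier_mat n n" for C
  proof -
    have "trace (C * E) = (\<Sum>k<n. \<Sum>l<n. C $$ (k,l) * E $$ (l,k))"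
      unfolding trace_def using C Ec by (intro sum.cong refl) (auto simp: row_col_sum)
    also have "\<dots> = (\<Sum>k<n. if k = i then C $$ (i,j) else 0)"
    proof (intro sum.cong refl)
      fix k assume k: "k \<in> {..<n}"
      have "(\<Sum>l<n. C $$ (k,l) * E $$ (l,k)) = (\<Sum>l<n. if l = j then (if k = i then C $$ (k,j) else 0) else 0)"
        using k by (intro sum.cong refl) (auto simp: E_def)
      also have "\<dots> = (if k = i then C $$ (i,j) else 0)" using j by (simp add: sum.delta)
      finally show "(\<Sum>l<n. C $$ (k,l) * E $$ (l,k)) = (if k = i then C $$ (i,j) else 0)" .
    qed
    also have "\<dots> = C $$ (i,j)" using i by (simp add: sum.delta)
    finally show ?thesis .
  qed
  show "A $$ (i,j) = B $$ (i,j)" using h[OF Ec] tr[OF A] tr[OF B] by simp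
qed (use A B in auto)

lemma vinner_sum: assumes A: "A \<in> carrier_mat n n" and v: "v \<in> carrier_vec n"
  shows "vinner v (A *\<^sub>v v) = (\<Sum>i<n. \<Sum>j<n. cnj (v $ i) * A $$ (i,j) * v $ j)"
  unfolding vinner_def using A v
  by (auto simp: scalar_prod_def atLeast0LessThan sum_distrib_left mult.assoc intro!: sum.cong)

lemma vinner_self: "v \<in> carrier_vec n \<Longrightarrow> vinner v v = complex_of_real (\<Sum>i<n. (cmod (v $ i))^2)"
  unfolding vinner_def by (auto simp: complex_norm_square[symmetric] mult.commute intro!: sum.cong)

lemma vinner_UDU: assumes U: "unitary n U" and v: "v \<in> carrier_vec n"
  shows "vinner v (UDU n U f *\<^sub>v v) = (\<Sum>k<n. f k * complex_of_real ((cmod (\<Sum>j<n. cnj (U $$ (j,k)) * v $ j))^2))"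
proof -
  note c = unitaryD[OF U]
  define w where "w k = (\<Sum>j<n. cnj (U $$ (j,k)) * v $ j)" for k
  have "vinner v (UDU n U f *\<^sub>v v) = (\<Sum>i<n. \<Sum>j<n. cnj (v $ i) * (\<Sum>k<n. U $$ (i,k) * f k * cnj (U $$ (j,k))) * v $ j)"
    using c v by (subst vinner_sum[of _ n]) (auto simp: UDU_index simp del: index_mult_mat(1))
  also have "\<dots> = (\<Sum>i<n. \<Sum>j<n. \<Sum>k<n. f k * ((cnj (v $ i) * U $$ (i,k)) * (cnj (U $$ (j,k)) * v $ j)))"
    by (intro sum.cong refl) (simp add: sum_distrib_left sum_distrib_right mult_ac)
  also have "\<dots> = (\<Sum>i<n. \<Sum>k<n. \<Sum>j<n. f k * ((cnj (v $ i) * U $$ (i,k)) * (cnj (U $$ (j,k)) * v $ j)))"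
    by (rule sum.cong[OF refl], rule sum.swap)
  also have "\<dots> = (\<Sum>k<n. \<Sum>i<n. \<Sum>j<n. f k * ((cnj (v $ i) * U $$ (i,k)) * (cnj (U $$ (j,k)) * v $ j)))"
    by (rule sum.swap)
  also have "\<dots> = (\<Sum>k<n. f k * ((\<Sum>i<n. cnj (v $ i) * U $$ (i,k)) * w k))"
    unfolding w_def by (rule sum.cong[OF refl], subst sum_product, simp add: sum_distrib_left)
  also have "\<dots> = (\<Sum>k<n. f k * complex_of_real ((cmod (w k))^2))"
  proof (intro sum.cong refl)
    fix k
    have "(\<Sum>i<n. cnj (v $ i) * U $$ (i,k)) = cnj (w k)" unfolding w_def by (simp add: cnj_sum mult.commute)
    thus "f k * ((\<Sum>i<n. cnj (v $ i) * U $$ (i,k)) * w k) = f k * complex_of_real ((cmod (w k))^2)"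
      by (simp add: complex_norm_square[symmetric] mult.commute)
  qed
  finally show ?thesis unfolding w_def .
qed

lemma sandwich_assoc: assumes A: "A \<in> carrier_mat m n" and U: "U \<in> carrier_mat n n" and D: "D \<in> carrier_mat n n"
  shows "A * (U * D * dag U) * dag A = (A * U) * D * dag (A * U)"
proof -
  have UD: "U * D \<in> carrier_mat n n" using U D by simp
  have dU: "dag U \<in> carrier_mat n n" and dA: "dag A \<in> carrier_mat n m" using U A by auto
  have dUA: "dag U * dag A \<in> carrier_mat n m" using dU dA by simp
  have UDU: "U * D * dag U \<in> carrier_mat n n" using UD dU by simp
  have e1: "dag (A * U) = dag U * dag A" by (simp add: dag_mult[OF A U])
  have e2: "(A * U) * D = A * (U * D)" by (rule assoc_mult_mat[OF A U D])
  have e3: "A * (U * D) * (dag U * dag A) = A * ((U * D) * (dag U * dag A))" by (rule assoc_mult_mat[OF A UD dUA])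
  have e4: "(U * D) * (dag U * dag A) = ((U * D) * dag U) * dag A" by (rule assoc_mult_mat[OF UD dU dA, symmetric])
  have e5: "A * (((U * D) * dag U) * dag A) = (A * ((U * D) * dag U)) * dag A" by (rule assoc_mult_mat[OF A UDU dA, symmetric])
  show ?thesis unfolding e1 e2 e3 e4 e5 by (rule refl)
qed

context rho_setting
begin

definition pmin where "pmin = Min (p ` {..<d})"

lemma pmin: "pmin > 0" "\<And>i. i < d \<Longrightarrow> pmin \<le> p i"
proof -
  have fin: "finite (p ` {..<d})" and ne: "p ` {..<d} \<noteq> {}" using d_pos by auto
  show "pmin > 0" unfolding pmin_def using fin ne p_pos by (subst Min_gr_iff) auto
  show "\<And>i. i < d \<Longrightarrow> pmin \<le> p i" unfolding pmin_def using fin by auto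
qed

lemma trace_rho: "trace \<rho> = 1"
  unfolding rho_eq by (subst trace_UDU[OF Uu]) (simp add: p_sum flip: of_real_sum)

lemma rho_vinner: assumes v: "v \<in> carrier_vec d"
  shows "vinner v (\<rho> *\<^sub>v v) \<in> \<real>" "Re (vinner v (\<rho> *\<^sub>v v)) \<ge> pmin * Re (vinner v v)"
proof -
  define w where "w k = (cmod (\<Sum>j<d. cnj (Ur $$ (j,k)) * v $ j))^2" for k
  have e1: "vinner v (\<rho> *\<^sub>v v) = complex_of_real (\<Sum>k<d. p k * w k)"
    unfolding rho_eq w_def by (subst vinner_UDU[OF Uu v]) simp
  have "vinner v v = vinner v (1\<^sub>m d *\<^sub>v v)" using v by simp
  also have "\<dots> = vinner v (UDU d Ur (\<lambda>_. 1) *\<^sub>v v)" using UDU_one[OF Uu] by simp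
  also have "\<dots> = complex_of_real (\<Sum>k<d. w k)"
    unfolding w_def by (subst vinner_UDU[OF Uu v]) simp
  finally have e2: "vinner v v = complex_of_real (\<Sum>k<d. w k)" .
  show "vinner v (\<rho> *\<^sub>v v) \<in> \<real>" unfolding e1 by simp
  have "pmin * (\<Sum>k<d. w k) \<le> (\<Sum>k<d. p k * w k)"
    unfolding sum_distrib_left using pmin(2) by (intro sum_mono mult_right_mono) (auto simp: w_def)
  thus "Re (vinner v (\<rho> *\<^sub>v v)) \<ge> pmin * Re (vinner v v)" unfolding e1 e2 by simp
qed

lemma sandwich_pos: assumes A: "A \<in> carrier_mat m d"
  shows "\<exists>q. trace (A * \<rho> * dag A) = complex_of_real q \<and> q \<ge> 0 \<and> (A \<noteq> 0\<^sub>m m d \<longrightarrow> q > 0)"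
proof -
  define V where "V = A * Ur"
  have V: "V \<in> carrier_mat m d" unfolding V_def using A Ur by auto
  have "A * \<rho> * dag A = V * dmat d (\<lambda>i. complex_of_real (p i)) * dag V"
    unfolding rho_eq V_def by (rule sandwich_assoc[OF A Ur(1) dmat_carrier])
  hence tr: "trace (A * \<rho> * dag A) = complex_of_real (\<Sum>i<m. \<Sum>k<d. p k * (cmod (V $$ (i,k)))^2)"
    using trace_VDV[OF V] by simp
  define q where "q = (\<Sum>i<m. \<Sum>k<d. p k * (cmod (V $$ (i,k)))^2)"
  have q0: "q \<ge> 0" unfolding q_def using p_pos by (intro sum_nonneg mult_nonneg_nonneg) auto
  have qpos: "q > 0" if nz: "A \<noteq> 0\<^sub>m m d"
  proof (rule ccontr)
    assume "\<not> q > 0"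
    hence "q = 0" using q0 by simp
    hence "\<forall>i\<in>{..<m}. (\<Sum>k<d. p k * (cmod (V $$ (i,k)))^2) = 0"
      unfolding q_def using p_pos by (subst sum_nonneg_eq_0_iff[symmetric]) (auto intro!: sum_nonneg)
    hence "\<forall>i<m. \<forall>k<d. p k * (cmod (V $$ (i,k)))^2 = 0"
      using p_pos by (subst (asm) sum_nonneg_eq_0_iff) auto
    hence "\<forall>i<m. \<forall>k<d. V $$ (i,k) = 0" using p_pos by fastforce
    hence V0: "V = 0\<^sub>m m d" using V by (intro eq_matI) auto
    have "A = V * dag Ur" unfolding V_def using A Ur by (simp add: assoc_mult_mat[of _ m d _ d _ d])
    also have "\<dots> = 0\<^sub>m m d" unfolding V0 using Ur by simp
    finally show False using nz by simp
  qed
  show ?thesis using tr q0 qpos unfolding q_def by blast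
qed

lemma Gam_inj: assumes X: "X \<in> carrier_mat d d" and G: "Gam X = 0\<^sub>m d d"
  shows "X = 0\<^sub>m d d"
proof -
  have "P (- (1 - s)) * Gam X * P (- s) = (P (- (1 - s)) * P (1 - s)) * X * (P s * P (- s))"
    unfolding Gam_def using X by (simp add: assoc_mult_mat[of _ d d _ d _ d])
  also have "\<dots> = X" using X by (simp add: P_mult P_zero)
  finally show ?thesis using G X by simp
qed

end


definition lin_map :: "nat \<Rightarrow> (complex mat \<Rightarrow> complex mat) \<Rightarrow> bool" where
  "lin_map n T \<longleftrightarrow> (\<forall>X \<in> carrier_mat n n. T X \<in> carrier_mat n n) \<and>
     (\<forall>X \<in> carrier_mat n n. \<forall>Y \<in> carrier_mat n n. T (X + Y) = T X + T Y) \<and>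
     (\<forall>X \<in> carrier_mat n n. \<forall>c. T (c \<cdot>\<^sub>m X) = c \<cdot>\<^sub>m T X)"

lemma lin_mapD: assumes "lin_map n T"
  shows "X \<in> carrier_mat n n \<Longrightarrow> T X \<in> carrier_mat n n"
    "X \<in> carrier_mat n n \<Longrightarrow> Y \<in> carrier_mat n n \<Longrightarrow> T (X + Y) = T X + T Y"
    "X \<in> carrier_mat n n \<Longrightarrow> T (c \<cdot>\<^sub>m X) = c \<cdot>\<^sub>m T X"
  using assms unfolding lin_map_def by auto

lemma lin_map_comp: "lin_map n S \<Longrightarrow> lin_map n T \<Longrightarrow> lin_map n (\<lambda>X. S (T X))"
  unfolding lin_map_def by auto

lemma lin_map_zero: assumes "lin_map n T" shows "T (0\<^sub>m n n) = 0\<^sub>m n n"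
proof -
  have "T (0\<^sub>m n n) = T (0 \<cdot>\<^sub>m 0\<^sub>m n n)" by simp
  also have "\<dots> = 0 \<cdot>\<^sub>m T (0\<^sub>m n n)" using lin_mapD(3)[OF assms, of "0\<^sub>m n n"] by simp
  also have "\<dots> = 0\<^sub>m n n" using lin_mapD(1)[OF assms, of "0\<^sub>m n n"] by (intro eq_matI) auto
  finally show ?thesis .
qed

lemma lin_map_finsum: assumes T: "lin_map n T" and fin: "finite I" and X: "\<And>i. i \<in> I \<Longrightarrow> X i \<in> carrier_mat n n"
  shows "T (finsum_mat n n X I) = finsum_mat n n (\<lambda>i. T (X i)) I"
  using fin X
proof (induction I rule: finite_induct)
  case empty thus ?case using lin_map_zero[OF T] by simp
next
  case (insert x F)
  have "T (finsum_mat n n X (insert x F)) = T (X x + finsum_mat n n X F)"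
    using insert by (subst finsum_insert) auto
  also have "\<dots> = T (X x) + T (finsum_mat n n X F)" using insert by (intro lin_mapD(2)[OF T]) auto
  also have "\<dots> = finsum_mat n n (\<lambda>i. T (X i)) (insert x F)"
    using insert lin_mapD(1)[OF T] by (subst finsum_insert) auto
  finally show ?case .
qed

lemma lin_map_lincomb: assumes T: "lin_map n T" and fin: "finite I" and X: "\<And>i. i \<in> I \<Longrightarrow> X i \<in> carrier_mat n n"
  shows "T (finsum_mat n n (\<lambda>i. c i \<cdot>\<^sub>m X i) I) = finsum_mat n n (\<lambda>i. c i \<cdot>\<^sub>m T (X i)) I"
  using lin_map_finsum[OF T fin, of "\<lambda>i. c i \<cdot>\<^sub>m X i"] X lin_mapD(3)[OF T]
  by (auto intro: finsum_cong)

lemma lin_map_minus: assumes T: "lin_map n T" and X: "X \<in> carrier_mat n n" and Y: "Y \<in> carrier_mat n n"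
  shows "T (X - Y) = T X - T Y"
proof -
  have "X - Y = X + (-1) \<cdot>\<^sub>m Y" using X Y by (intro eq_matI) auto
  hence "T (X - Y) = T X + (-1) \<cdot>\<^sub>m T Y" using T X Y by (simp add: lin_mapD)
  also have "\<dots> = T X - T Y" using lin_mapD(1)[OF T X] lin_mapD(1)[OF T Y] by (intro eq_matI) auto
  finally show ?thesis .
qed

definition sand :: "nat \<Rightarrow> 'a set \<Rightarrow> ('a \<Rightarrow> complex mat) \<Rightarrow> ('a \<Rightarrow> complex mat) \<Rightarrow> complex mat \<Rightarrow> complex mat" where
  "sand n I A B X = finsum_mat n n (\<lambda>k. A k * X * B k) I"

lemma sand_c[simp]: "sand n I A B X \<in> carrier_mat n n"
  unfolding sand_def by simp

lemma sand_lin: assumes A: "\<And>k. k \<in> I \<Longrightarrow> A k \<in> carrier_mat n n" and B: "\<And>k. k \<in> I \<Longrightarrow> B k \<in> carrier_mat n n"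
  shows "lin_map n (sand n I A B)"
  unfolding lin_map_def
proof (intro conjI ballI allI)
  fix X Y :: "complex mat" assume X: "X \<in> carrier_mat n n" and Y: "Y \<in> carrier_mat n n"
  show "sand n I A B (X + Y) = sand n I A B X + sand n I A B Y"
    unfolding sand_def
  proof (subst finsum_add[symmetric])
    show "finsum_mat n n (\<lambda>k. A k * (X + Y) * B k) I = finsum_mat n n (\<lambda>u. A u * X * B u + A u * Y * B u) I"
    proof (rule finsum_cong)
      fix k assume k: "k \<in> I"
      have "A k * (X + Y) = A k * X + A k * Y" using A[OF k] X Y by (rule mult_add_distrib_mat)
      thus "A k * (X + Y) * B k = A k * X * B k + A k * Y * B k"
        using A[OF k] B[OF k] X Y by (simp add: add_mult_distrib_mat[of _ n n])
    qed
  qed (use A B X Y in auto)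
next
  fix X :: "complex mat" and c :: complex assume X: "X \<in> carrier_mat n n"
  show "sand n I A B (c \<cdot>\<^sub>m X) = c \<cdot>\<^sub>m sand n I A B X"
    unfolding sand_def
  proof (subst finsum_smult)
    show "finsum_mat n n (\<lambda>k. A k * (c \<cdot>\<^sub>m X) * B k) I = finsum_mat n n (\<lambda>u. c \<cdot>\<^sub>m (A u * X * B u)) I"
    proof (rule finsum_cong)
      fix k assume k: "k \<in> I"
      show "A k * (c \<cdot>\<^sub>m X) * B k = c \<cdot>\<^sub>m (A k * X * B k)"
        using A[OF k] B[OF k] X by (simp add: mult_smult_distrib[of _ n n] mult_smult_assoc_mat[of _ n n])
    qed
  qed (use A B X in auto)
qed simp

lemma sand_dual: assumes A: "\<And>k. k \<in> I \<Longrightarrow> A k \<in> carrier_mat n n" and B: "\<And>k. k \<in> I \<Longrightarrow> B k \<in> carrier_mat n n"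
  and X: "X \<in> carrier_mat n n" and Y: "Y \<in> carrier_mat n n"
  shows "trace (sand n I A B X * Y) = trace (X * sand n I B A Y)"
proof -
  have "trace (sand n I A B X * Y) = trace (finsum_mat n n (\<lambda>k. A k * X * B k * Y) I)"
    unfolding sand_def using A B X Y by (subst finsum_mult_right[of _ n n]) auto
  also have "\<dots> = (\<Sum>k\<in>I. trace (A k * X * B k * Y))" using A B X Y by (intro trace_finsum) auto
  also have "\<dots> = (\<Sum>k\<in>I. trace (X * (B k * Y * A k)))"
  proof (intro sum.cong refl)
    fix k assume k: "k \<in> I"
    have "trace (A k * X * B k * Y) = trace (A k * (X * B k * Y))"
      using A[OF k] B[OF k] X Y by (simp add: assoc_mult_mat[of _ n n _ n _ n])
    also have "\<dots> = trace ((X * B k * Y) * A k)" using A[OF k] B[OF k] X Y by (intro trace_comm[of _ n n]) auto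
    also have "\<dots> = trace (X * (B k * Y * A k))" using A[OF k] B[OF k] X Y by (simp add: assoc_mult_mat[of _ n n _ n _ n])
    finally show "trace (A k * X * B k * Y) = trace (X * (B k * Y * A k))" .
  qed
  also have "\<dots> = trace (finsum_mat n n (\<lambda>k. X * (B k * Y * A k)) I)"
    using A B X Y by (intro trace_finsum[symmetric]) auto
  also have "finsum_mat n n (\<lambda>k. X * (B k * Y * A k)) I = X * sand n I B A Y"
    unfolding sand_def using A B X Y by (subst finsum_mult_left[of _ n n]) auto
  finally show ?thesis .
qed

lemma sand_dag: assumes A: "\<And>k. k \<in> I \<Longrightarrow> A k \<in> carrier_mat n n" and B: "\<And>k. k \<in> I \<Longrightarrow> B k \<in> carrier_mat n n"
  and X: "X \<in> carrier_mat n n"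
  shows "dag (sand n I A B X) = sand n I (\<lambda>k. dag (B k)) (\<lambda>k. dag (A k)) (dag X)"
  unfolding sand_def
proof (subst dag_finsum)
  show "finsum_mat n n (\<lambda>u. dag (A u * X * B u)) I = finsum_mat n n (\<lambda>k. dag (B k) * dag X * dag (A k)) I"
  proof (rule finsum_cong)
    fix k assume k: "k \<in> I"
    show "dag (A k * X * B k) = dag (B k) * dag X * dag (A k)"
      using A[OF k] B[OF k] X by (simp add: dag_mult[of _ n n _ n] assoc_mult_mat[of _ n n _ n _ n])
  qed
qed (use A B X in auto)

lemma kraus_map_sand: "kraus_map d Ns X = sand d {..<length Ns} (\<lambda>k. Ns ! k) (\<lambda>k. dag (Ns ! k)) X"
  unfolding kraus_map_def sand_def by (simp add: listsum_finsum)

lemma kraus_adj_sand: "kraus_adj d Ns X = sand d {..<length Ns} (\<lambda>k. dag (Ns ! k)) (\<lambda>k. Ns ! k) X"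
  unfolding kraus_adj_def sand_def by (simp add: listsum_finsum)

lemma meas_map_sand: "meas_map d U Ok X = sand d U Ok (\<lambda>u. dag (Ok u)) X"
  unfolding meas_map_def sand_def ..

lemma meas_adj_sand: "meas_adj d U Ok X = sand d U (\<lambda>u. dag (Ok u)) Ok X"
  unfolding meas_adj_def sand_def ..

lemma meas_hat_adj_sand: assumes O: "\<And>u. u \<in> U \<Longrightarrow> Ok u \<in> carrier_mat d d" and X: "X \<in> carrier_mat d d"
  shows "meas_hat_adj d U Ok \<rho> X = sand d U (\<lambda>u. complex_of_real (u - meas_exp U Ok \<rho>) \<cdot>\<^sub>m dag (Ok u)) Ok X"
  unfolding meas_hat_adj_def sand_def
proof (rule finsum_cong)
  fix u assume u: "u \<in> U"
  have c: "dag (Ok u) * X \<in> carrier_mat d d" using O[OF u] X by simp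
  show "complex_of_real (u - meas_exp U Ok \<rho>) \<cdot>\<^sub>m (dag (Ok u) * X * Ok u) =
    complex_of_real (u - meas_exp U Ok \<rho>) \<cdot>\<^sub>m dag (Ok u) * X * Ok u"
    using O[OF u] X by (simp add: mult_smult_assoc_mat[OF c O[OF u]] mult_smult_assoc_mat[of _ d d _ d])
qed


lemma sum_1N: "(\<Sum>i\<in>{1..N}. f i) = (\<Sum>i<N. f (Suc i))"
  using sum.atLeast1_atMost_eq[of f N] by (simp add: One_nat_def)

lemma smult_smult_m: "a \<cdot>\<^sub>m (b \<cdot>\<^sub>m A) = (a * b :: complex) \<cdot>\<^sub>m A"
  by (intro eq_matI) auto

context rho_setting
begin

abbreviation ip where "ip A B \<equiv> sinner d \<rho> s A B"

definition ONB :: "('i \<Rightarrow> complex mat) \<Rightarrow> 'i set \<Rightarrow> bool" where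
  "ONB Y I \<longleftrightarrow> finite I \<and> (\<forall>i\<in>I. Y i \<in> carrier_mat d d) \<and>
     (\<forall>i\<in>I. \<forall>j\<in>I. ip (Y i) (Y j) = (if i = j then 1 else 0)) \<and>
     (\<forall>X\<in>carrier_mat d d. \<exists>c. X = finsum_mat d d (\<lambda>i. c i \<cdot>\<^sub>m Y i) I)"

lemma ONB_D: assumes "ONB Y I"
  shows "finite I" "\<And>i. i \<in> I \<Longrightarrow> Y i \<in> carrier_mat d d"
    "\<And>i j. i \<in> I \<Longrightarrow> j \<in> I \<Longrightarrow> ip (Y i) (Y j) = (if i = j then 1 else 0)"
    "\<And>X. X \<in> carrier_mat d d \<Longrightarrow> \<exists>c. X = finsum_mat d d (\<lambda>i. c i \<cdot>\<^sub>m Y i) I"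
  using assms unfolding ONB_def by auto

lemma ip_lincomb_right: assumes A: "A \<in> carrier_mat d d" and Y: "\<And>i. i \<in> I \<Longrightarrow> Y i \<in> carrier_mat d d"
  shows "ip A (finsum_mat d d (\<lambda>i. c i \<cdot>\<^sub>m Y i) I) = (\<Sum>i\<in>I. c i * ip A (Y i))"
  using A Y by (simp add: sinner_finsum_right sinner_smult_right)

lemma ip_lincomb_left: assumes A: "A \<in> carrier_mat d d" and Y: "\<And>i. i \<in> I \<Longrightarrow> Y i \<in> carrier_mat d d"
  shows "ip (finsum_mat d d (\<lambda>i. c i \<cdot>\<^sub>m Y i) I) A = (\<Sum>i\<in>I. cnj (c i) * ip (Y i) A)"
  using A Y by (simp add: sinner_finsum_left sinner_smult_left)

lemma ONB_coeff: assumes B: "ONB Y I" and j: "j \<in> I"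
  shows "ip (Y j) (finsum_mat d d (\<lambda>i. c i \<cdot>\<^sub>m Y i) I) = c j"
proof -
  note b = ONB_D[OF B]
  have "ip (Y j) (finsum_mat d d (\<lambda>i. c i \<cdot>\<^sub>m Y i) I) = (\<Sum>i\<in>I. c i * ip (Y j) (Y i))"
    using b j by (intro ip_lincomb_right) auto
  also have "\<dots> = (\<Sum>i\<in>I. if i = j then c j else 0)" using b j by (intro sum.cong) auto
  also have "\<dots> = c j" using b j by (simp add: sum.delta')
  finally show ?thesis .
qed

lemma ONB_expand: assumes B: "ONB Y I" and X: "X \<in> carrier_mat d d"
  shows "X = finsum_mat d d (\<lambda>i. ip (Y i) X \<cdot>\<^sub>m Y i) I"
proof -
  obtain c where c: "X = finsum_mat d d (\<lambda>i. c i \<cdot>\<^sub>m Y i) I" using ONB_D(4)[OF B X] by auto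
  have "\<And>i. i \<in> I \<Longrightarrow> ip (Y i) X = c i" unfolding c by (rule ONB_coeff[OF B])
  hence "finsum_mat d d (\<lambda>i. ip (Y i) X \<cdot>\<^sub>m Y i) I = finsum_mat d d (\<lambda>i. c i \<cdot>\<^sub>m Y i) I"
    by (intro finsum_cong) auto
  thus ?thesis using c by simp
qed

lemma ONB_ext: assumes B: "ONB Y I" and W: "W \<in> carrier_mat d d" and X: "X \<in> carrier_mat d d"
  and h: "\<And>i. i \<in> I \<Longrightarrow> ip (Y i) W = ip (Y i) X"
  shows "W = X"
proof -
  have "W = finsum_mat d d (\<lambda>i. ip (Y i) W \<cdot>\<^sub>m Y i) I" by (rule ONB_expand[OF B W])
  also have "\<dots> = finsum_mat d d (\<lambda>i. ip (Y i) X \<cdot>\<^sub>m Y i) I" using h by (intro finsum_cong) auto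
  also have "\<dots> = X" by (rule ONB_expand[OF B X, symmetric])
  finally show ?thesis .
qed

lemma ONB_parseval: assumes B: "ONB Y I" and X: "X \<in> carrier_mat d d" and X': "X' \<in> carrier_mat d d"
  shows "ip X X' = (\<Sum>i\<in>I. cnj (ip (Y i) X) * ip (Y i) X')"
proof -
  have "ip X X' = ip (finsum_mat d d (\<lambda>i. ip (Y i) X \<cdot>\<^sub>m Y i) I) X'"
    using ONB_expand[OF B X] by simp
  also have "\<dots> = (\<Sum>i\<in>I. cnj (ip (Y i) X) * ip (Y i) X')"
    using ONB_D(2)[OF B] X' by (intro ip_lincomb_left) auto
  finally show ?thesis .
qed

lemma ONB_norm: assumes B: "ONB Y I" and X: "X \<in> carrier_mat d d"
  shows "ip X X = complex_of_real (\<Sum>i\<in>I. (cmod (ip (Y i) X))^2)"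
  unfolding ONB_parseval[OF B X X] of_real_sum
  by (intro sum.cong refl) (simp add: complex_norm_square[symmetric] mult.commute)

lemma ONB_pos: assumes B: "ONB Y I" and X: "X \<in> carrier_mat d d" and nz: "X \<noteq> 0\<^sub>m d d"
  shows "Re (ip X X) > 0"
proof (rule ccontr)
  assume "\<not> Re (ip X X) > 0"
  hence "(\<Sum>i\<in>I. (cmod (ip (Y i) X))^2) \<le> 0" unfolding ONB_norm[OF B X] by simp
  hence "\<forall>i\<in>I. (cmod (ip (Y i) X))^2 = 0"
  proof -
    have "(\<Sum>i\<in>I. (cmod (ip (Y i) X))^2) = 0" using sum_nonneg[of I "\<lambda>i. (cmod (ip (Y i) X))^2"]
      \<open>(\<Sum>i\<in>I. (cmod (ip (Y i) X))^2) \<le> 0\<close> by simp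
    thus ?thesis using ONB_D(1)[OF B] by (subst (asm) sum_nonneg_eq_0_iff) auto
  qed
  hence z: "\<And>i. i \<in> I \<Longrightarrow> ip (Y i) X = 0" by auto
  have "X = finsum_mat d d (\<lambda>i. ip (Y i) X \<cdot>\<^sub>m Y i) I" by (rule ONB_expand[OF B X])
  also have "\<dots> = finsum_mat d d (\<lambda>i. 0\<^sub>m d d) I"
  proof (intro finsum_cong)
    fix i assume i: "i \<in> I"
    have "Y i \<in> carrier_mat d d" using ONB_D(2)[OF B i] .
    thus "ip (Y i) X \<cdot>\<^sub>m Y i = 0\<^sub>m d d" using z[OF i] by (intro eq_matI) auto
  qed
  also have "\<dots> = 0\<^sub>m d d" by (rule finsum_zero)
  finally show False using nz by simp
qed

lemma ONB_eigen_quad: assumes B: "ONB Y I" and T: "lin_map d T"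
  and ev: "\<And>i. i \<in> I \<Longrightarrow> T (Y i) = \<mu> i \<cdot>\<^sub>m Y i" and X: "X \<in> carrier_mat d d"
  shows "ip X (T X) = (\<Sum>i\<in>I. \<mu> i * complex_of_real ((cmod (ip (Y i) X))^2))"
    "ip (T X) (T X) = (\<Sum>i\<in>I. complex_of_real ((cmod (\<mu> i))^2 * (cmod (ip (Y i) X))^2))"
proof -
  note b = ONB_D[OF B]
  have TX: "T X = finsum_mat d d (\<lambda>i. (ip (Y i) X * \<mu> i) \<cdot>\<^sub>m Y i) I"
  proof -
    have "T X = T (finsum_mat d d (\<lambda>i. ip (Y i) X \<cdot>\<^sub>m Y i) I)" using ONB_expand[OF B X] by simp
    also have "\<dots> = finsum_mat d d (\<lambda>i. ip (Y i) X \<cdot>\<^sub>m T (Y i)) I"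
      using b by (intro lin_map_lincomb[OF T]) auto
    also have "\<dots> = finsum_mat d d (\<lambda>i. (ip (Y i) X * \<mu> i) \<cdot>\<^sub>m Y i) I"
      using b ev by (intro finsum_cong) (auto simp: smult_smult_m mult.commute)
    finally show ?thesis .
  qed
  have TXc: "T X \<in> carrier_mat d d" using lin_mapD(1)[OF T X] .
  have co: "\<And>i. i \<in> I \<Longrightarrow> ip (Y i) (T X) = ip (Y i) X * \<mu> i"
    unfolding TX by (rule ONB_coeff[OF B])
  show "ip X (T X) = (\<Sum>i\<in>I. \<mu> i * complex_of_real ((cmod (ip (Y i) X))^2))"
    unfolding ONB_parseval[OF B X TXc]
    by (intro sum.cong refl) (simp add: co complex_norm_square[symmetric] mult_ac)
  show "ip (T X) (T X) = (\<Sum>i\<in>I. complex_of_real ((cmod (\<mu> i))^2 * (cmod (ip (Y i) X))^2))"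
    unfolding ONB_norm[OF B TXc] of_real_sum
    by (intro sum.cong refl) (simp add: co norm_mult power_mult_distrib)
qed

end


context rho_setting
begin

lemma selfadj_eigenbasis:
  fixes Y :: "nat \<Rightarrow> complex mat" and N :: nat
  assumes B: "ONB Y {1..N}" and T: "lin_map d T"
    and SA: "\<And>A B. A \<in> carrier_mat d d \<Longrightarrow> B \<in> carrier_mat d d \<Longrightarrow> ip A (T B) = ip (T A) B"
  shows "\<exists>Z \<mu>. ONB Z {..<N} \<and> (\<forall>k<N. T (Z k) = complex_of_real (\<mu> k) \<cdot>\<^sub>m Z k)"
proof -
  note b = ONB_D[OF B]
  have Yc: "\<And>i. i < N \<Longrightarrow> Y (Suc i) \<in> carrier_mat d d" using b(2) by auto
  define BT where "BT = mat N N (\<lambda>(i,j). ip (Y (Suc i)) (T (Y (Suc j))))"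
  have BTc: "BT \<in> carrier_mat N N" unfolding BT_def by auto
  have hBT: "dag BT = BT"
  proof (rule eq_matI)
    fix i j assume "i < dim_row BT" "j < dim_col BT"
    hence i: "i < N" and j: "j < N" unfolding BT_def by auto
    have "dag BT $$ (i,j) = cnj (ip (Y (Suc j)) (T (Y (Suc i))))" using i j unfolding BT_def by simp
    also have "\<dots> = ip (T (Y (Suc i))) (Y (Suc j))"
      using Yc[OF i] Yc[OF j] lin_mapD(1)[OF T] by (intro sinner_conj) auto
    also have "\<dots> = ip (Y (Suc i)) (T (Y (Suc j)))" using SA[OF Yc[OF i] Yc[OF j]] by simp
    finally show "dag BT $$ (i,j) = BT $$ (i,j)" using i j unfolding BT_def by simp
  qed (auto simp: BT_def)
  from hermitian_decomp[OF BTc hBT] obtain V h where V: "unitary N V"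
    and BTe: "BT = V * dmat N (\<lambda>i. complex_of_real (h i)) * dag V" by auto
  note v = unitaryD[OF V]
  define Z where "Z k = finsum_mat d d (\<lambda>i. V $$ (i - 1, k) \<cdot>\<^sub>m Y i) {1..N}" for k
  have Zc: "Z k \<in> carrier_mat d d" for k unfolding Z_def by simp
  have coeff: "ip (Y i) (Z k) = V $$ (i - 1, k)" if "i \<in> {1..N}" for i k
    unfolding Z_def by (rule ONB_coeff[OF B that])
  have orth: "ip (Z k) (Z l) = (if k = l then 1 else 0)" if k: "k < N" and l: "l < N" for k l
  proof -
    have "ip (Z k) (Z l) = (\<Sum>i\<in>{1..N}. cnj (ip (Y i) (Z k)) * ip (Y i) (Z l))"
      by (rule ONB_parseval[OF B Zc Zc])
    also have "\<dots> = (\<Sum>i<N. cnj (V $$ (i, k)) * V $$ (i, l))"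
      unfolding sum_1N by (intro sum.cong refl) (simp add: coeff)
    also have "\<dots> = (dag V * V) $$ (k,l)" using v k l by (subst index_mult') auto
    also have "\<dots> = (if k = l then 1 else 0)" using v k l by simp
    finally show ?thesis .
  qed
  have span: "\<exists>c. X = finsum_mat d d (\<lambda>k. c k \<cdot>\<^sub>m Z k) {..<N}" if X: "X \<in> carrier_mat d d" for X
  proof -
    define a where "a i = ip (Y (Suc i)) X" for i
    define c where "c k = (\<Sum>i<N. cnj (V $$ (i,k)) * a i)" for k
    have "finsum_mat d d (\<lambda>k. c k \<cdot>\<^sub>m Z k) {..<N} = X"
    proof (rule ONB_ext[OF B _ X])
      fix j assume j: "j \<in> {1..N}"
      then obtain j' where j': "j = Suc j'" "j' < N" by (cases j) auto
      have "ip (Y j) (finsum_mat d d (\<lambda>k. c k \<cdot>\<^sub>m Z k) {..<N}) = (\<Sum>k<N. c k * ip (Y j) (Z k))"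
        using b(2)[OF j] Zc by (intro ip_lincomb_right) auto
      also have "\<dots> = (\<Sum>k<N. \<Sum>i<N. V $$ (j',k) * cnj (V $$ (i,k)) * a i)"
        using j j' by (simp add: coeff c_def sum_distrib_left sum_distrib_right mult_ac)
      also have "\<dots> = (\<Sum>i<N. (\<Sum>k<N. V $$ (j',k) * dag V $$ (k,i)) * a i)"
        using v j' by (subst sum.swap) (auto simp: sum_distrib_right intro!: sum.cong)
      also have "\<dots> = (\<Sum>i<N. (V * dag V) $$ (j',i) * a i)"
        using v j' by (intro sum.cong refl) (subst index_mult', auto)
      also have "\<dots> = (\<Sum>i<N. if i = j' then a j' else 0)"
        using v j' by (intro sum.cong refl) auto
      also have "\<dots> = ip (Y j) X" using j' by (simp add: a_def)
      finally show "ip (Y j) (finsum_mat d d (\<lambda>k. c k \<cdot>\<^sub>m Z k) {..<N}) = ip (Y j) X" .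
    qed simp
    thus ?thesis by metis
  qed
  have eig: "T (Z k) = complex_of_real (h k) \<cdot>\<^sub>m Z k" if k: "k < N" for k
  proof (rule ONB_ext[OF B])
    show "T (Z k) \<in> carrier_mat d d" using lin_mapD(1)[OF T Zc] .
    show "complex_of_real (h k) \<cdot>\<^sub>m Z k \<in> carrier_mat d d" using Zc by simp
    fix j assume j: "j \<in> {1..N}"
    then obtain j' where j': "j = Suc j'" "j' < N" by (cases j) auto
    have TZ: "T (Z k) = finsum_mat d d (\<lambda>i. V $$ (i - 1, k) \<cdot>\<^sub>m T (Y i)) {1..N}"
      unfolding Z_def using b by (intro lin_map_lincomb[OF T]) auto
    have "ip (Y j) (T (Z k)) = (\<Sum>i\<in>{1..N}. V $$ (i - 1, k) * ip (Y j) (T (Y i)))"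
      unfolding TZ using b(2)[OF j] lin_mapD(1)[OF T] b(2) by (intro ip_lincomb_right) auto
    also have "\<dots> = (\<Sum>i<N. BT $$ (j', i) * V $$ (i, k))"
      unfolding sum_1N using j' by (intro sum.cong refl) (simp add: BT_def)
    also have "\<dots> = (BT * V) $$ (j', k)" using BTc v j' k by (subst index_mult') auto
    also have "BT * V = V * dmat N (\<lambda>i. complex_of_real (h i))"
      unfolding BTe using v by (simp add: assoc_mult_mat[of _ N N _ N _ N] unitary_cancel[OF V])
    also have "(V * dmat N (\<lambda>i. complex_of_real (h i))) $$ (j', k) = V $$ (j', k) * complex_of_real (h k)"
    proof -
      have "(V * dmat N (\<lambda>i. complex_of_real (h i))) $$ (j', k) =
        (\<Sum>i<N. V $$ (j', i) * dmat N (\<lambda>i. complex_of_real (h i)) $$ (i, k))"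
        using v j' k by (subst index_mult') auto
      also have "\<dots> = (\<Sum>i<N. if i = k then V $$ (j', k) * complex_of_real (h k) else 0)"
        using k by (intro sum.cong refl) auto
      finally show ?thesis using k by simp
    qed
    also have "\<dots> = ip (Y j) (complex_of_real (h k) \<cdot>\<^sub>m Z k)"
      using b(2)[OF j] Zc j j' by (simp add: sinner_smult_right coeff mult.commute)
    finally show "ip (Y j) (T (Z k)) = ip (Y j) (complex_of_real (h k) \<cdot>\<^sub>m Z k)" .
  qed
  have "ONB Z {..<N}" unfolding ONB_def using Zc orth span by auto
  thus ?thesis using eig by blast
qed

end


locale full_setting = rho_setting d \<rho> s Ur p for d \<rho> s Ur p +
  fixes Ns :: "complex mat list" and U :: "real set" and Ok :: "real \<Rightarrow> complex mat"
    and Y :: "nat \<Rightarrow> complex mat" and lam :: "nat \<Rightarrow> real"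
  assumes N_ch: "is_channel d Ns" and M_ch: "is_meas_channel d U Ok"
    and N_db: "detailed_balance d \<rho> s (kraus_adj d Ns)"
    and M_db: "detailed_balance d \<rho> s (meas_adj d U Ok)"
    and N_fix: "\<forall>\<sigma>. density_mat d \<sigma> \<longrightarrow> (kraus_map d Ns \<sigma> = \<sigma> \<longleftrightarrow> \<sigma> = \<rho>)"
    and N_spec: "\<forall>X \<in> carrier_mat d d. \<forall>c. X \<noteq> 0\<^sub>m d d \<and> kraus_map d Ns X = c \<cdot>\<^sub>m X
                   \<longrightarrow> c \<in> \<real> \<and> 0 \<le> Re c \<and> Re c \<le> 1"
    and Y_car: "\<forall>i \<in> {1..d^2}. Y i \<in> carrier_mat d d"
    and Y_on: "\<forall>i \<in> {1..d^2}. \<forall>j \<in> {1..d^2}. sinner d \<rho> s (Y i) (Y j) = (if i = j then 1 else 0)"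
    and Y_span: "\<forall>X \<in> carrier_mat d d. \<exists>c. X = finsum_mat d d (\<lambda>i. c i \<cdot>\<^sub>m Y i) {1..d^2}"
    and Y_eig: "\<forall>i \<in> {1..d^2}. meas_adj d U Ok (kraus_adj d Ns (meas_adj d U Ok (Y i))) = of_real (lam i) \<cdot>\<^sub>m Y i"
    and Y1: "Y 1 = 1\<^sub>m d" and lam1: "lam 1 = 1"
    and lam_nonneg: "\<forall>i \<in> {1..d^2}. 0 \<le> lam i"
begin

abbreviation "Nf \<equiv> kraus_map d Ns"
abbreviation "Na \<equiv> kraus_adj d Ns"
abbreviation "Mf \<equiv> meas_map d U Ok"
abbreviation "Ma \<equiv> meas_adj d U Ok"
abbreviation "vv \<equiv> meas_exp U Ok \<rho>"
abbreviation "Mh \<equiv> meas_hat_adj d U Ok \<rho>"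
abbreviation "Ea \<equiv> (\<lambda>X. Ma (Na (Ma X)))"
abbreviation "Eh \<equiv> (\<lambda>X. Mh (Na (Ma X)))"

lemma Ns_c: "k < length Ns \<Longrightarrow> Ns ! k \<in> carrier_mat d d"
  using N_ch unfolding is_channel_def by auto

lemma U_fin: "finite U" and Ok_c: "u \<in> U \<Longrightarrow> Ok u \<in> carrier_mat d d"
  using M_ch unfolding is_meas_channel_def by auto

lemma Nf_lin: "lin_map d Nf"
  unfolding kraus_map_sand[abs_def] using Ns_c by (intro sand_lin) auto
lemma Na_lin: "lin_map d Na"
  unfolding kraus_adj_sand[abs_def] using Ns_c by (intro sand_lin) auto
lemma Mf_lin: "lin_map d Mf"
  unfolding meas_map_sand[abs_def] using Ok_c by (intro sand_lin) auto
lemma Ma_lin: "lin_map d Ma"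
  unfolding meas_adj_sand[abs_def] using Ok_c by (intro sand_lin) auto

lemma Mh_sand: "X \<in> carrier_mat d d \<Longrightarrow> Mh X = sand d U (\<lambda>u. complex_of_real (u - vv) \<cdot>\<^sub>m dag (Ok u)) Ok X"
  by (rule meas_hat_adj_sand[OF Ok_c])

lemma Mh_c[simp]: "Mh X \<in> carrier_mat d d"
  unfolding meas_hat_adj_def by simp

lemma Mh_lin: "lin_map d Mh"
proof -
  have l: "lin_map d (sand d U (\<lambda>u. complex_of_real (u - vv) \<cdot>\<^sub>m dag (Ok u)) Ok)"
    using Ok_c by (intro sand_lin) auto
  show ?thesis unfolding lin_map_def
  proof (intro conjI ballI allI)
    fix X Y :: "complex mat" assume X: "X \<in> carrier_mat d d" and Y: "Y \<in> carrier_mat d d"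
    show "Mh (X + Y) = Mh X + Mh Y"
      unfolding Mh_sand[OF X] Mh_sand[OF Y] Mh_sand[OF add_carrier_mat[OF Y]]
      by (rule lin_mapD(2)[OF l X Y])
  next
    fix X :: "complex mat" and c :: complex assume X: "X \<in> carrier_mat d d"
    show "Mh (c \<cdot>\<^sub>m X) = c \<cdot>\<^sub>m Mh X"
      unfolding Mh_sand[OF X] Mh_sand[OF smult_carrier_mat[OF X]]
      by (rule lin_mapD(3)[OF l X])
  qed simp
qed

lemma Ea_lin: "lin_map d Ea"
  by (rule lin_map_comp[OF Ma_lin lin_map_comp[OF Na_lin Ma_lin]])
lemma Eh_lin: "lin_map d Eh"
  by (rule lin_map_comp[OF Mh_lin lin_map_comp[OF Na_lin Ma_lin]])

lemma Nf_c[simp]: "Nf X \<in> carrier_mat d d" unfolding kraus_map_sand by simp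
lemma Na_c[simp]: "Na X \<in> carrier_mat d d" unfolding kraus_adj_sand by simp
lemma Mf_c[simp]: "Mf X \<in> carrier_mat d d" unfolding meas_map_sand by simp
lemma Ma_c[simp]: "Ma X \<in> carrier_mat d d" unfolding meas_adj_sand by simp

lemma Na_one: "Na (1\<^sub>m d) = 1\<^sub>m d"
proof -
  have "Na (1\<^sub>m d) = listsum_mat d (map (\<lambda>K. dag K * K) Ns)"
    unfolding kraus_adj_def listsum_finsum
  proof (intro finsum_cong)
    fix k assume "k \<in> {..<length Ns}"
    hence c: "Ns ! k \<in> carrier_mat d d" using Ns_c by auto
    show "dag (Ns ! k) * 1\<^sub>m d * Ns ! k = dag (Ns ! k) * Ns ! k"
      using right_mult_one_mat[OF dag_carrier[OF c]] by simp
  qed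
  thus ?thesis using N_ch unfolding is_channel_def by simp
qed

lemma Ma_one: "Ma (1\<^sub>m d) = 1\<^sub>m d"
proof -
  have "Ma (1\<^sub>m d) = finsum_mat d d (\<lambda>u. dag (Ok u) * Ok u) U"
    unfolding meas_adj_def
  proof (intro finsum_cong)
    fix u assume "u \<in> U"
    hence c: "Ok u \<in> carrier_mat d d" using Ok_c by auto
    show "dag (Ok u) * 1\<^sub>m d * Ok u = dag (Ok u) * Ok u"
      using right_mult_one_mat[OF dag_carrier[OF c]] by simp
  qed
  thus ?thesis using M_ch unfolding is_meas_channel_def by simp
qed

lemma Nf_dual: "X \<in> carrier_mat d d \<Longrightarrow> Z \<in> carrier_mat d d \<Longrightarrow> trace (Nf X * Z) = trace (X * Na Z)"
  unfolding kraus_map_sand kraus_adj_sand using Ns_c by (intro sand_dual) auto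

lemma Mf_dual: "X \<in> carrier_mat d d \<Longrightarrow> Z \<in> carrier_mat d d \<Longrightarrow> trace (Mf X * Z) = trace (X * Ma Z)"
  unfolding meas_map_sand meas_adj_sand using Ok_c by (intro sand_dual) auto

lemma Nf_dag: "X \<in> carrier_mat d d \<Longrightarrow> dag (Nf X) = Nf (dag X)"
  unfolding kraus_map_sand using Ns_c by (subst sand_dag) auto

lemma Na_dag: "X \<in> carrier_mat d d \<Longrightarrow> dag (Na X) = Na (dag X)"
  unfolding kraus_adj_sand using Ns_c by (subst sand_dag) auto

lemma Ma_dag: "X \<in> carrier_mat d d \<Longrightarrow> dag (Ma X) = Ma (dag X)"
  unfolding meas_adj_sand using Ok_c by (subst sand_dag) auto

lemma Na_sa: "A \<in> carrier_mat d d \<Longrightarrow> B \<in> carrier_mat d d \<Longrightarrow> ip A (Na B) = ip (Na A) B"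
  using N_db unfolding detailed_balance_def by auto

lemma Ma_sa: "A \<in> carrier_mat d d \<Longrightarrow> B \<in> carrier_mat d d \<Longrightarrow> ip A (Ma B) = ip (Ma A) B"
  using M_db unfolding detailed_balance_def by auto

lemma Ea_sa: assumes A: "A \<in> carrier_mat d d" and B: "B \<in> carrier_mat d d"
  shows "ip A (Ea B) = ip (Ea A) B"
proof -
  have "ip A (Ea B) = ip (Ma A) (Na (Ma B))" by (rule Ma_sa[OF A Na_c])
  also have "\<dots> = ip (Na (Ma A)) (Ma B)" by (rule Na_sa[OF Ma_c Ma_c])
  also have "\<dots> = ip (Ea A) B" by (rule Ma_sa[OF Na_c B])
  finally show ?thesis .
qed

lemma ipI_Na: "X \<in> carrier_mat d d \<Longrightarrow> ip (1\<^sub>m d) (Na X) = ip (1\<^sub>m d) X"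
  using Na_sa[of "1\<^sub>m d" X] by (simp add: Na_one)
lemma ipI_Ma: "X \<in> carrier_mat d d \<Longrightarrow> ip (1\<^sub>m d) (Ma X) = ip (1\<^sub>m d) X"
  using Ma_sa[of "1\<^sub>m d" X] by (simp add: Ma_one)
lemma ipI_Ea: "X \<in> carrier_mat d d \<Longrightarrow> ip (1\<^sub>m d) (Ea X) = ip (1\<^sub>m d) X"
  using ipI_Ma[of "Na (Ma X)"] ipI_Na[of "Ma X"] ipI_Ma[of X] by simp

lemma Nf_Gam: assumes X: "X \<in> carrier_mat d d"
  shows "Nf (Gam X) = Gam (Na X)"
proof (rule trace_ext[of _ d])
  fix Z :: "complex mat" assume Z: "Z \<in> carrier_mat d d"
  define W where "W = dag Z"
  have W: "W \<in> carrier_mat d d" and ZW: "Z = dag W" using Z unfolding W_def by auto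
  have GX: "Gam X \<in> carrier_mat d d" using X by simp
  have "trace (Nf (Gam X) * Z) = trace (Gam X * Na Z)" by (rule Nf_dual[OF GX Z])
  also have "\<dots> = trace (Na Z * Gam X)" by (rule trace_comm[OF GX Na_c])
  also have "Na Z = dag (Na W)" unfolding ZW by (rule Na_dag[OF W, symmetric])
  also have "trace (dag (Na W) * Gam X) = ip (Na W) X" by (rule sinner_Gam[OF Na_c X, symmetric])
  also have "\<dots> = ip W (Na X)" by (rule Na_sa[OF W X, symmetric])
  also have "\<dots> = trace (Z * Gam (Na X))" unfolding ZW by (rule sinner_Gam[OF W Na_c])
  also have "\<dots> = trace (Gam (Na X) * Z)" by (rule trace_comm[OF Z Gam_c[OF Na_c]])
  finally show "trace (Nf (Gam X) * Z) = trace (Gam (Na X) * Z)" .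
qed (use X in auto)

lemma Nf_rho: "Nf \<rho> = \<rho>"
proof (rule trace_ext[of _ d])
  fix Z :: "complex mat" assume Z: "Z \<in> carrier_mat d d"
  have "trace (Nf \<rho> * Z) = trace (\<rho> * Na Z)" using Z by (intro Nf_dual) auto
  also have "\<dots> = ip (1\<^sub>m d) (Na Z)" using Z by (simp add: sinner_I_left)
  also have "\<dots> = ip (1\<^sub>m d) Z" using Z by (rule ipI_Na)
  also have "\<dots> = trace (\<rho> * Z)" using Z by (simp add: sinner_I_left)
  finally show "trace (Nf \<rho> * Z) = trace (\<rho> * Z)" .
qed auto

lemma Y_ONB: "ONB Y {1..d^2}"
  unfolding ONB_def using Y_car Y_on Y_span by auto

end


primrec Gobs :: "nat \<Rightarrow> complex mat list \<Rightarrow> real set \<Rightarrow> (real \<Rightarrow> complex mat) \<Rightarrow> real list \<Rightarrow> complex mat" where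
  "Gobs d Ns U Ok [] = 1\<^sub>m d"
| "Gobs d Ns U Ok (u # es) = dag (Ok u) * kraus_adj d Ns (meas_adj d U Ok (Gobs d Ns U Ok es)) * Ok u"

definition Lset :: "real set \<Rightarrow> nat \<Rightarrow> real list set" where
  "Lset U K = {es. set es \<subseteq> U \<and> length es = K}"

lemma Lset_Suc: "Lset U (Suc K) = (\<lambda>(u,es). u # es) ` (U \<times> Lset U K)"
  by (auto simp: Lset_def length_Suc_conv image_iff)

lemma sum_Lset_Suc: "(\<Sum>es\<in>Lset U (Suc K). h es) = (\<Sum>u\<in>U. \<Sum>es\<in>Lset U K. h (u # es))"
proof -
  have inj: "inj_on (\<lambda>(u,es). u # es) (U \<times> Lset U K)" by (auto simp: inj_on_def)
  have "(\<Sum>es\<in>Lset U (Suc K). h es) = (\<Sum>x\<in>U \<times> Lset U K. h ((\<lambda>(u,es). u # es) x))"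
    unfolding Lset_Suc by (subst sum.reindex[OF inj]) (simp add: comp_def)
  also have "\<dots> = (\<Sum>u\<in>U. \<Sum>es\<in>Lset U K. h (u # es))"
    by (simp add: sum.cartesian_product case_prod_beta)
  finally show ?thesis .
qed

lemma Lset_0: "Lset U 0 = {[]}"
  unfolding Lset_def by auto

context full_setting
begin

abbreviation "G \<equiv> Gobs d Ns U Ok"
abbreviation "L \<equiv> Lset U"

lemma L_fin: "finite (L K)"
  unfolding Lset_def using U_fin by (rule finite_lists_length_eq)

lemma G_c: "set es \<subseteq> U \<Longrightarrow> G es \<in> carrier_mat d d"
proof (induction es)
  case (Cons u es) thus ?case using Ok_c[of u] by simp
qed simp

lemma G_c': "es \<in> L K \<Longrightarrow> G es \<in> carrier_mat d d"
  unfolding Lset_def by (auto intro: G_c)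

lemma traj_trace: "set es \<subseteq> U \<Longrightarrow> \<sigma> \<in> carrier_mat d d \<Longrightarrow> trace (traj_state d Ns U Ok \<sigma> es) = trace (\<sigma> * G es)"
proof (induction es arbitrary: \<sigma>)
  case Nil thus ?case by simp
next
  case (Cons u es \<sigma>)
  have u: "u \<in> U" and es: "set es \<subseteq> U" using Cons.prems by auto
  have O: "Ok u \<in> carrier_mat d d" using Ok_c[OF u] .
  have Gc: "G es \<in> carrier_mat d d" using G_c[OF es] .
  define \<tau> where "\<tau> = Ok u * \<sigma> * dag (Ok u)"
  have \<tau>: "\<tau> \<in> carrier_mat d d" unfolding \<tau>_def using O Cons.prems by simp
  have "trace (traj_state d Ns U Ok \<sigma> (u # es)) = trace (Mf (Nf \<tau>) * G es)"
    unfolding \<tau>_def using Cons.IH[OF es] by simp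
  also have "\<dots> = trace (Nf \<tau> * Ma (G es))" by (rule Mf_dual[OF Nf_c Gc])
  also have "\<dots> = trace (\<tau> * Na (Ma (G es)))" by (rule Nf_dual[OF \<tau> Ma_c])
  also have "\<dots> = trace (Ok u * (\<sigma> * (dag (Ok u) * Na (Ma (G es)))))"
    unfolding \<tau>_def using O Cons.prems by (simp add: assoc_mult_mat[of _ d d _ d _ d])
  also have "\<dots> = trace ((\<sigma> * (dag (Ok u) * Na (Ma (G es)))) * Ok u)"
    using O Cons.prems by (intro trace_comm[of _ d d]) auto
  also have "\<dots> = trace (\<sigma> * G (u # es))"
    using O Cons.prems by (simp add: assoc_mult_mat[of _ d d _ d _ d])
  finally show ?case .
qed

definition Obs :: "nat \<Rightarrow> (real list \<Rightarrow> real) \<Rightarrow> complex mat" where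
  "Obs K f = finsum_mat d d (\<lambda>es. complex_of_real (f es) \<cdot>\<^sub>m G es) (L K)"

lemma Obs_c[simp]: "Obs K f \<in> carrier_mat d d"
  unfolding Obs_def by simp

lemma Obs_dim[simp]: "dim_row (Obs K f) = d" "dim_col (Obs K f) = d"
  unfolding Obs_def by simp_all

lemma traj_expect_Obs: "traj_expect d Ns U Ok \<rho> K f = Re (ip (1\<^sub>m d) (Obs K f))"
proof -
  have "traj_expect d Ns U Ok \<rho> K f = (\<Sum>es\<in>L K. f es * Re (trace (\<rho> * G es)))"
    unfolding traj_expect_def Lset_def
    by (intro sum.cong refl) (auto simp: traj_trace)
  also have "\<dots> = Re (\<Sum>es\<in>L K. trace (\<rho> * (complex_of_real (f es) \<cdot>\<^sub>m G es)))"
    unfolding Re_sum using G_c'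
    by (intro sum.cong refl) (auto simp: mult_smult_distrib[of _ d d _ d] trace_smult[of _ d])
  also have "(\<Sum>es\<in>L K. trace (\<rho> * (complex_of_real (f es) \<cdot>\<^sub>m G es))) = trace (\<rho> * Obs K f)"
    unfolding Obs_def using G_c'
    by (subst finsum_mult_left[of _ d d]) (auto simp: trace_finsum[of _ _ d])
  also have "\<dots> = ip (1\<^sub>m d) (Obs K f)" by (simp add: sinner_I_left)
  finally show ?thesis .
qed

definition Rop :: "real \<Rightarrow> complex mat \<Rightarrow> complex mat" where
  "Rop u X = dag (Ok u) * Na (Ma X) * Ok u"

lemma Rop_lin: assumes u: "u \<in> U" shows "lin_map d (Rop u)"
proof -
  have "lin_map d (sand d {u} (\<lambda>_. dag (Ok u)) (\<lambda>_. Ok u))" using Ok_c[OF u] by (intro sand_lin) auto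
  moreover have "sand d {u} (\<lambda>_. dag (Ok u)) (\<lambda>_. Ok u) X = dag (Ok u) * X * Ok u" if "X \<in> carrier_mat d d" for X
    unfolding sand_def using that Ok_c[OF u] by (intro eq_matI) auto
  ultimately have l: "lin_map d (\<lambda>X. dag (Ok u) * X * Ok u)"
    unfolding lin_map_def using Ok_c[OF u] by (auto simp del: sand_c)
  show ?thesis unfolding Rop_def[abs_def]
    by (rule lin_map_comp[OF l lin_map_comp[OF Na_lin Ma_lin]])
qed

lemma Obs_Suc: "Obs (Suc K) f = finsum_mat d d (\<lambda>u. Rop u (Obs K (\<lambda>es. f (u # es)))) U"
proof -
  have "Obs (Suc K) f = finsum_mat d d (\<lambda>u. finsum_mat d d (\<lambda>es. complex_of_real (f (u # es)) \<cdot>\<^sub>m G (u # es)) (L K)) U"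
    unfolding Obs_def by (intro eq_matI) (auto simp: sum_Lset_Suc)
  also have "\<dots> = finsum_mat d d (\<lambda>u. Rop u (Obs K (\<lambda>es. f (u # es)))) U"
  proof (rule finsum_cong)
    fix u assume u: "u \<in> U"
    have "Rop u (Obs K (\<lambda>es. f (u # es))) = finsum_mat d d (\<lambda>es. complex_of_real (f (u # es)) \<cdot>\<^sub>m Rop u (G es)) (L K)"
      unfolding Obs_def using G_c' by (intro lin_map_lincomb[OF Rop_lin[OF u] L_fin]) auto
    also have "\<dots> = finsum_mat d d (\<lambda>es. complex_of_real (f (u # es)) \<cdot>\<^sub>m G (u # es)) (L K)"
      by (intro finsum_cong) (simp add: Rop_def)
    finally show "finsum_mat d d (\<lambda>es. complex_of_real (f (u # es)) \<cdot>\<^sub>m G (u # es)) (L K) = Rop u (Obs K (\<lambda>es. f (u # es)))" ..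
  qed
  finally show ?thesis .
qed

lemma G_smult_index: "es \<in> L K \<Longrightarrow> i < d \<Longrightarrow> j < d \<Longrightarrow> (c \<cdot>\<^sub>m G es) $$ (i,j) = c * G es $$ (i,j)"
  using G_c'[of es K] by auto

lemma Obs_lincomb: "Obs K (\<lambda>es. a * g es + b * h es) = complex_of_real a \<cdot>\<^sub>m Obs K g + complex_of_real b \<cdot>\<^sub>m Obs K h"
proof (intro eq_matI)
  fix i j assume "i < dim_row (complex_of_real a \<cdot>\<^sub>m Obs K g + complex_of_real b \<cdot>\<^sub>m Obs K h)"
    "j < dim_col (complex_of_real a \<cdot>\<^sub>m Obs K g + complex_of_real b \<cdot>\<^sub>m Obs K h)"
  hence i: "i < d" and j: "j < d" by auto
  have "Obs K (\<lambda>es. a * g es + b * h es) $$ (i,j) =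
    (\<Sum>es\<in>L K. complex_of_real a * (complex_of_real (g es) * G es $$ (i,j)) + complex_of_real b * (complex_of_real (h es) * G es $$ (i,j)))"
    unfolding Obs_def index_finsum[OF i j]
  proof (intro sum.cong refl)
    fix es assume es: "es \<in> L K"
    have "G es \<in> carrier_mat d d" using G_c'[OF es] .
    thus "(complex_of_real (a * g es + b * h es) \<cdot>\<^sub>m G es) $$ (i, j) =
      complex_of_real a * (complex_of_real (g es) * G es $$ (i, j)) + complex_of_real b * (complex_of_real (h es) * G es $$ (i, j))"
      using i j by (simp add: algebra_simps)
  qed
  also have "\<dots> = (complex_of_real a \<cdot>\<^sub>m Obs K g + complex_of_real b \<cdot>\<^sub>m Obs K h) $$ (i,j)"
    unfolding Obs_def using i j by (simp add: sum.distrib sum_distrib_left G_smult_index cong: sum.cong)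
  finally show "Obs K (\<lambda>es. a * g es + b * h es) $$ (i,j) = (complex_of_real a \<cdot>\<^sub>m Obs K g + complex_of_real b \<cdot>\<^sub>m Obs K h) $$ (i,j)" .
qed (auto simp: Obs_def)

end


lemma finsum_lessThan_Suc_shift: assumes "\<And>k. k < Suc K \<Longrightarrow> f k \<in> carrier_mat n n"
  shows "finsum_mat n n f {..<Suc K} = f 0 + finsum_mat n n (\<lambda>k. f (Suc k)) {..<K}"
  using assms by (intro eq_matI) (auto simp del: sum.lessThan_Suc simp: sum.lessThan_Suc_shift)

lemma one_smult_m[simp]: "(1::complex) \<cdot>\<^sub>m A = A"
  by (intro eq_matI) auto

lemma sum3: "(\<Sum>u\<in>U. x u + (complex_of_real (2 * w u) * y u + z u)) =
  (\<Sum>u\<in>U. x u) + 2 * (\<Sum>u\<in>U. complex_of_real (w u) * y u) + (\<Sum>u\<in>U. z u)"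
  by (simp add: sum.distrib sum_distrib_left mult.assoc)

context full_setting
begin

lemma Obs_cong: "(\<And>es. f es = g es) \<Longrightarrow> Obs K f = Obs K g"
  by (metis ext)

lemma Rop_c[simp]: "Rop u X \<in> carrier_mat d d" if "u \<in> U"
  unfolding Rop_def using Ok_c[OF that] by simp

lemma Rop_one: assumes u: "u \<in> U" shows "Rop u (1\<^sub>m d) = dag (Ok u) * Ok u"
  unfolding Rop_def Ma_one Na_one using right_mult_one_mat[OF dag_carrier[OF Ok_c[OF u]]] by simp

lemma Rop_sum: "finsum_mat d d (\<lambda>u. Rop u X) U = Ea X"
  unfolding Rop_def meas_adj_def ..

lemma Rop_hat_sum: "finsum_mat d d (\<lambda>u. complex_of_real (u - vv) \<cdot>\<^sub>m Rop u X) U = Eh X"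
  unfolding Rop_def meas_hat_adj_def ..

lemma Obs_f0: "Obs K (\<lambda>_. 1) = 1\<^sub>m d"
proof (induction K)
  case 0
  show ?case unfolding Obs_def Lset_0 by (intro eq_matI) auto
next
  case (Suc K)
  have "Obs (Suc K) (\<lambda>_. 1) = finsum_mat d d (\<lambda>u. Rop u (1\<^sub>m d)) U"
    unfolding Obs_Suc using Suc.IH by simp
  also have "\<dots> = finsum_mat d d (\<lambda>u. dag (Ok u) * Ok u) U" by (intro finsum_cong) (simp add: Rop_one)
  also have "\<dots> = 1\<^sub>m d" using M_ch unfolding is_meas_channel_def by simp
  finally show ?case .
qed

lemma Obs_lin3: "Obs K (\<lambda>es. a + b * g es + c * h es) =
   complex_of_real a \<cdot>\<^sub>m 1\<^sub>m d + (complex_of_real b \<cdot>\<^sub>m Obs K g + complex_of_real c \<cdot>\<^sub>m Obs K h)"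
proof -
  have "Obs K (\<lambda>es. a + b * g es + c * h es) = Obs K (\<lambda>es. a * 1 + 1 * (b * g es + c * h es))"
    by (intro Obs_cong) simp
  also have "\<dots> = complex_of_real a \<cdot>\<^sub>m Obs K (\<lambda>_. 1) + complex_of_real 1 \<cdot>\<^sub>m Obs K (\<lambda>es. b * g es + c * h es)"
    by (rule Obs_lincomb)
  also have "Obs K (\<lambda>es. b * g es + c * h es) = complex_of_real b \<cdot>\<^sub>m Obs K g + complex_of_real c \<cdot>\<^sub>m Obs K h"
    by (rule Obs_lincomb)
  finally show ?thesis unfolding Obs_f0 by simp
qed

definition Dm where "Dm = Eh (1\<^sub>m d)"

lemma Dm_c[simp]: "Dm \<in> carrier_mat d d" unfolding Dm_def by simp

lemma Ea_pow_c[simp]: "X \<in> carrier_mat d d \<Longrightarrow> (Ea ^^ k) X \<in> carrier_mat d d"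
  by (cases k) auto

abbreviation "BK K \<equiv> Obs K (\<lambda>es. sum_list es - real K * vv)"
abbreviation "SK K \<equiv> Obs K (\<lambda>es. (sum_list es - real K * vv)^2)"

lemma BK_formula: "BK K = finsum_mat d d (\<lambda>k. (Ea ^^ k) Dm) {..<K}"
proof (induction K)
  case 0
  show ?case unfolding Obs_def Lset_0 by (intro eq_matI) auto
next
  case (Suc K)
  have "BK (Suc K) = finsum_mat d d (\<lambda>u. Rop u (Obs K (\<lambda>es. (u - vv) + 1 * (sum_list es - real K * vv) + 0 * 0))) U"
    unfolding Obs_Suc by (intro finsum_cong arg_cong[where f = "Rop _"] Obs_cong) (simp add: algebra_simps)
  also have "\<dots> = finsum_mat d d (\<lambda>u. complex_of_real (u - vv) \<cdot>\<^sub>m Rop u (1\<^sub>m d) + Rop u (BK K)) U"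
  proof (intro finsum_cong)
    fix u assume u: "u \<in> U"
    have "Obs K (\<lambda>es. (u - vv) + 1 * (sum_list es - real K * vv) + 0 * 0) =
      complex_of_real (u - vv) \<cdot>\<^sub>m 1\<^sub>m d + BK K"
      unfolding Obs_lin3[where h = "\<lambda>_. 0"] by (intro eq_matI) auto
    thus "Rop u (Obs K (\<lambda>es. (u - vv) + 1 * (sum_list es - real K * vv) + 0 * 0)) =
      complex_of_real (u - vv) \<cdot>\<^sub>m Rop u (1\<^sub>m d) + Rop u (BK K)"
      using Rop_lin[OF u] by (simp add: lin_mapD)
  qed
  also have "\<dots> = Dm + Ea (BK K)"
    unfolding Dm_def Rop_sum[symmetric] Rop_hat_sum[symmetric] using Rop_c
    by (intro finsum_add) auto
  also have "Ea (BK K) = finsum_mat d d (\<lambda>k. Ea ((Ea ^^ k) Dm)) {..<K}"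
    unfolding Suc.IH by (intro lin_map_finsum[OF Ea_lin]) auto
  also have "Dm + \<dots> = finsum_mat d d (\<lambda>k. (Ea ^^ k) Dm) {..<Suc K}"
    by (subst finsum_lessThan_Suc_shift) auto
  finally show ?case .
qed

definition cc where "cc k = ip (1\<^sub>m d) (Eh ((Ea ^^ k) Dm))"
definition Qm where "Qm = finsum_mat d d (\<lambda>u. complex_of_real ((u - vv)^2) \<cdot>\<^sub>m (dag (Ok u) * Ok u)) U"

lemma Qm_c[simp]: "Qm \<in> carrier_mat d d" unfolding Qm_def by simp

lemma ip_Eh_BK: "ip (1\<^sub>m d) (Eh (BK K)) = (\<Sum>k<K. cc k)"
proof -
  have "Eh (BK K) = finsum_mat d d (\<lambda>k. Eh ((Ea ^^ k) Dm)) {..<K}"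
    unfolding BK_formula by (intro lin_map_finsum[OF Eh_lin]) auto
  thus ?thesis unfolding cc_def by (simp add: sinner_finsum_right)
qed

lemma SK_Suc: "ip (1\<^sub>m d) (SK (Suc K)) = ip (1\<^sub>m d) Qm + 2 * (\<Sum>k<K. cc k) + ip (1\<^sub>m d) (SK K)"
proof -
  define a where "a u = (u - vv)^2" for u
  define b where "b u = 2 * (u - vv)" for u
  have "SK (Suc K) = finsum_mat d d (\<lambda>u. Rop u (Obs K (\<lambda>es. a u + b u * (sum_list es - real K * vv) + 1 * (sum_list es - real K * vv)^2))) U"
    unfolding Obs_Suc a_def b_def
    by (intro finsum_cong arg_cong[where f = "Rop _"] Obs_cong) (simp add: algebra_simps power2_eq_square)
  also have "\<dots> = finsum_mat d d (\<lambda>u. complex_of_real (a u) \<cdot>\<^sub>m Rop u (1\<^sub>m d) +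
     (complex_of_real (b u) \<cdot>\<^sub>m Rop u (BK K) + Rop u (SK K))) U"
  proof (intro finsum_cong)
    fix u assume u: "u \<in> U"
    note l = lin_mapD[OF Rop_lin[OF u]]
    show "Rop u (Obs K (\<lambda>es. a u + b u * (sum_list es - real K * vv) + 1 * (sum_list es - real K * vv)^2)) =
      complex_of_real (a u) \<cdot>\<^sub>m Rop u (1\<^sub>m d) + (complex_of_real (b u) \<cdot>\<^sub>m Rop u (BK K) + Rop u (SK K))"
      unfolding Obs_lin3 by (simp add: l)
  qed
  finally have e: "SK (Suc K) = \<dots>" .
  have "ip (1\<^sub>m d) (SK (Suc K)) = (\<Sum>u\<in>U. complex_of_real (a u) * ip (1\<^sub>m d) (Rop u (1\<^sub>m d)) +
     (complex_of_real (b u) * ip (1\<^sub>m d) (Rop u (BK K)) + ip (1\<^sub>m d) (Rop u (SK K))))"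
    unfolding e using Rop_c by (simp add: sinner_finsum_right sinner_add_right sinner_smult_right)
  also have "\<dots> = (\<Sum>u\<in>U. complex_of_real (a u) * ip (1\<^sub>m d) (Rop u (1\<^sub>m d))) +
     2 * (\<Sum>u\<in>U. complex_of_real (u - vv) * ip (1\<^sub>m d) (Rop u (BK K))) + (\<Sum>u\<in>U. ip (1\<^sub>m d) (Rop u (SK K)))"
    unfolding b_def by (rule sum3)
  also have "(\<Sum>u\<in>U. complex_of_real (a u) * ip (1\<^sub>m d) (Rop u (1\<^sub>m d))) = ip (1\<^sub>m d) Qm"
    unfolding Qm_def a_def using Ok_c
    by (simp add: sinner_finsum_right sinner_smult_right Rop_one)
  also have "(\<Sum>u\<in>U. complex_of_real (u - vv) * ip (1\<^sub>m d) (Rop u (BK K))) = ip (1\<^sub>m d) (Eh (BK K))"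
    unfolding Rop_hat_sum[symmetric] using Rop_c by (simp add: sinner_finsum_right sinner_smult_right)
  also have "(\<Sum>u\<in>U. ip (1\<^sub>m d) (Rop u (SK K))) = ip (1\<^sub>m d) (Ea (SK K))"
    unfolding Rop_sum[symmetric] using Rop_c by (simp add: sinner_finsum_right)
  also have "\<dots> = ip (1\<^sub>m d) (SK K)" by (rule ipI_Ea) simp
  finally show ?thesis unfolding ip_Eh_BK .
qed

lemma SK_formula: "ip (1\<^sub>m d) (SK K) = of_nat K * ip (1\<^sub>m d) Qm + 2 * (\<Sum>m<K. \<Sum>k<m. cc k)"
proof (induction K)
  case 0
  have "SK 0 = 0\<^sub>m d d" unfolding Obs_def Lset_0 by (intro eq_matI) auto
  thus ?case by (simp add: sinner_def)
next
  case (Suc K)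
  show ?case unfolding SK_Suc Suc.IH by (simp add: algebra_simps)
qed

lemma Re_ip_Qm: "Re (ip (1\<^sub>m d) Qm) = meas_var U Ok \<rho>"
proof -
  have "ip (1\<^sub>m d) Qm = (\<Sum>u\<in>U. complex_of_real ((u - vv)^2) * trace (\<rho> * (dag (Ok u) * Ok u)))"
    unfolding Qm_def using Ok_c by (simp add: sinner_finsum_right sinner_smult_right sinner_I_left)
  also have "\<dots> = (\<Sum>u\<in>U. complex_of_real ((u - vv)^2) * trace (Ok u * \<rho> * dag (Ok u)))"
  proof (intro sum.cong refl)
    fix u assume u: "u \<in> U"
    have O: "Ok u \<in> carrier_mat d d" using Ok_c[OF u] .
    have "trace (\<rho> * (dag (Ok u) * Ok u)) = trace ((\<rho> * dag (Ok u)) * Ok u)"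
      using O by (simp add: assoc_mult_mat[of _ d d _ d _ d])
    also have "\<dots> = trace (Ok u * (\<rho> * dag (Ok u)))" using O by (intro trace_comm[of _ d d]) auto
    also have "\<dots> = trace (Ok u * \<rho> * dag (Ok u))" using O by (simp add: assoc_mult_mat[of _ d d _ d _ d])
    finally show "complex_of_real ((u - vv)^2) * trace (\<rho> * (dag (Ok u) * Ok u)) =
       complex_of_real ((u - vv)^2) * trace (Ok u * \<rho> * dag (Ok u))" by simp
  qed
  finally show ?thesis unfolding meas_var_def by (simp add: Re_sum)
qed

lemma traj_formula:
  "traj_expect d Ns U Ok \<rho> K (\<lambda>es. (sum_list es - real K * vv)^2) =
     real K * meas_var U Ok \<rho> + 2 * (\<Sum>m<K. \<Sum>k<m. Re (cc k))"
  unfolding traj_expect_Obs SK_formula using Re_ip_Qm by (simp add: Re_sum)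

end


lemma geom_bound: fixes l g :: real assumes l0: "0 \<le> l" and lg: "l \<le> 1 - g" and g: "g > 0"
  shows "(\<Sum>m<K. \<Sum>k<m. l ^ k) \<le> real K / g"
proof -
  have l1: "l < 1" using lg g by simp
  have inner: "(\<Sum>k<m. l ^ k) \<le> 1 / g" for m
  proof -
    have "(\<Sum>k<m. l ^ k) = (1 - l ^ m) / (1 - l)" using l1 by (simp add: sum_gp_strict)
    also have "\<dots> \<le> 1 / (1 - l)" using l0 l1 by (intro divide_right_mono) auto
    also have "\<dots> \<le> 1 / g" using lg g by (intro divide_left_mono) auto
    finally show ?thesis .
  qed
  have "(\<Sum>m<K. \<Sum>k<m. l ^ k) \<le> (\<Sum>m<K. 1 / g)" by (intro sum_mono inner)
  thus ?thesis by simp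
qed

context full_setting
begin

definition alpha where "alpha i j = ip (Y j) (Eh (Y i))"

lemma Yc: "j \<in> {1..d^2} \<Longrightarrow> Y j \<in> carrier_mat d d"
  using Y_car by auto

lemma Y1_mem: "1 \<in> {1..d^2}" using d_pos by simp

lemma Ea_pow_expand: "(Ea ^^ k) Dm = finsum_mat d d (\<lambda>j. (alpha 1 j * complex_of_real (lam j ^ k)) \<cdot>\<^sub>m Y j) {1..d^2}"
proof (induction k)
  case 0
  have "Dm = finsum_mat d d (\<lambda>j. ip (Y j) Dm \<cdot>\<^sub>m Y j) {1..d^2}" by (rule ONB_expand[OF Y_ONB Dm_c])
  also have "\<dots> = finsum_mat d d (\<lambda>j. (alpha 1 j * complex_of_real (lam j ^ 0)) \<cdot>\<^sub>m Y j) {1..d^2}"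
    unfolding alpha_def Dm_def Y1 by (intro finsum_cong) simp
  finally show ?case by simp
next
  case (Suc k)
  have "(Ea ^^ Suc k) Dm = Ea (finsum_mat d d (\<lambda>j. (alpha 1 j * complex_of_real (lam j ^ k)) \<cdot>\<^sub>m Y j) {1..d^2})"
    using Suc.IH by simp
  also have "\<dots> = finsum_mat d d (\<lambda>j. (alpha 1 j * complex_of_real (lam j ^ k)) \<cdot>\<^sub>m Ea (Y j)) {1..d^2}"
    using Yc by (intro lin_map_lincomb[OF Ea_lin]) auto
  also have "\<dots> = finsum_mat d d (\<lambda>j. (alpha 1 j * complex_of_real (lam j ^ Suc k)) \<cdot>\<^sub>m Y j) {1..d^2}"
  proof (intro finsum_cong)
    fix j assume j: "j \<in> {1..d^2}"
    have "Ea (Y j) = complex_of_real (lam j) \<cdot>\<^sub>m Y j" using Y_eig j by auto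
    thus "(alpha 1 j * complex_of_real (lam j ^ k)) \<cdot>\<^sub>m Ea (Y j) = (alpha 1 j * complex_of_real (lam j ^ Suc k)) \<cdot>\<^sub>m Y j"
      by (simp add: smult_smult_m mult_ac)
  qed
  finally show ?case .
qed

lemma cc_expand: "cc k = (\<Sum>j\<in>{1..d^2}. alpha 1 j * alpha j 1 * complex_of_real (lam j ^ k))"
proof -
  have "Eh ((Ea ^^ k) Dm) = finsum_mat d d (\<lambda>j. (alpha 1 j * complex_of_real (lam j ^ k)) \<cdot>\<^sub>m Eh (Y j)) {1..d^2}"
    unfolding Ea_pow_expand using Yc by (intro lin_map_lincomb[OF Eh_lin]) auto
  hence "cc k = (\<Sum>j\<in>{1..d^2}. (alpha 1 j * complex_of_real (lam j ^ k)) * ip (Y 1) (Eh (Y j)))"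
    unfolding cc_def Y1 by (simp add: sinner_finsum_right sinner_smult_right)
  thus ?thesis unfolding alpha_def by (simp add: mult_ac)
qed

lemma alpha11: "alpha 1 1 = 0"
proof -
  have pu: "\<exists>q. trace (Ok u * \<rho> * dag (Ok u)) = complex_of_real q" if u: "u \<in> U" for u
    using sandwich_pos[OF Ok_c[OF u]] by auto
  define q where "q u = Re (trace (Ok u * \<rho> * dag (Ok u)))" for u
  have tq: "trace (Ok u * \<rho> * dag (Ok u)) = complex_of_real (q u)" if "u \<in> U" for u
    using pu[OF that] unfolding q_def by auto
  have tr: "ip (1\<^sub>m d) (dag (Ok u) * Ok u) = trace (Ok u * \<rho> * dag (Ok u))" if u: "u \<in> U" for u
  proof -
    have O: "Ok u \<in> carrier_mat d d" using Ok_c[OF u] .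
    have "ip (1\<^sub>m d) (dag (Ok u) * Ok u) = trace (\<rho> * (dag (Ok u) * Ok u))" using O by (simp add: sinner_I_left)
    also have "\<dots> = trace ((\<rho> * dag (Ok u)) * Ok u)"
      using O by (simp add: assoc_mult_mat[of _ d d _ d _ d])
    also have "\<dots> = trace (Ok u * (\<rho> * dag (Ok u)))" using O by (intro trace_comm[of _ d d]) auto
    also have "\<dots> = trace (Ok u * \<rho> * dag (Ok u))" using O by (simp add: assoc_mult_mat[of _ d d _ d _ d])
    finally show ?thesis .
  qed
  have sumq: "(\<Sum>u\<in>U. q u) = 1"
  proof -
    have "(\<Sum>u\<in>U. complex_of_real (q u)) = (\<Sum>u\<in>U. ip (1\<^sub>m d) (dag (Ok u) * Ok u))"
      using tq tr by simp
    also have "\<dots> = ip (1\<^sub>m d) (finsum_mat d d (\<lambda>u. dag (Ok u) * Ok u) U)"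
      using Ok_c by (simp add: sinner_finsum_right)
    also have "\<dots> = ip (1\<^sub>m d) (1\<^sub>m d)" using M_ch unfolding is_meas_channel_def by simp
    also have "\<dots> = 1" by (simp add: sinner_I_left trace_rho)
    finally show ?thesis by (metis of_real_eq_1_iff of_real_sum)
  qed
  have vq: "vv = (\<Sum>u\<in>U. u * q u)" unfolding meas_exp_def q_def ..
  have "alpha 1 1 = ip (1\<^sub>m d) (Mh (1\<^sub>m d))" unfolding alpha_def Y1 by (simp add: Ma_one Na_one)
  also have "Mh (1\<^sub>m d) = finsum_mat d d (\<lambda>u. complex_of_real (u - vv) \<cdot>\<^sub>m (dag (Ok u) * Ok u)) U"
    unfolding meas_hat_adj_def
  proof (intro finsum_cong)
    fix u assume u: "u \<in> U"
    show "complex_of_real (u - vv) \<cdot>\<^sub>m (dag (Ok u) * 1\<^sub>m d * Ok u) = complex_of_real (u - vv) \<cdot>\<^sub>m (dag (Ok u) * Ok u)"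
      using right_mult_one_mat[OF dag_carrier[OF Ok_c[OF u]]] by simp
  qed
  also have "ip (1\<^sub>m d) \<dots> = (\<Sum>u\<in>U. complex_of_real (u - vv) * complex_of_real (q u))"
    using Ok_c tq tr by (simp add: sinner_finsum_right sinner_smult_right)
  also have "\<dots> = complex_of_real (\<Sum>u\<in>U. (u - vv) * q u)"
    unfolding of_real_sum by (intro sum.cong refl) simp
  also have "(\<Sum>u\<in>U. (u - vv) * q u) = (\<Sum>u\<in>U. u * q u) - vv * (\<Sum>u\<in>U. q u)"
    by (simp add: algebra_simps sum_subtractf sum_distrib_left sum_distrib_right)
  also have "\<dots> = 0" using sumq vq by simp
  finally show ?thesis by simp
qed

lemma final_bound:
  assumes gap: "\<And>j. j \<in> {2..d^2} \<Longrightarrow> lam j \<le> 1 - g \<and> g > 0"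
  shows "traj_expect d Ns U Ok \<rho> K (\<lambda>es. (sum_list es - real K * vv)^2)
     \<le> real K * (meas_var U Ok \<rho> + 2 / g * (\<Sum>j = 1..d^2. cmod (alpha 1 j * alpha j 1)))"
proof -
  define z where "z j = alpha 1 j * alpha j 1" for j
  have z1: "z 1 = 0" unfolding z_def alpha11 by simp
  have lnn: "\<And>j. j \<in> {1..d^2} \<Longrightarrow> 0 \<le> lam j" using lam_nonneg by auto
  have recc: "Re (cc k) \<le> (\<Sum>j\<in>{1..d^2}. cmod (z j) * lam j ^ k)" for k
  proof -
    have "Re (cc k) = (\<Sum>j\<in>{1..d^2}. Re (z j * complex_of_real (lam j ^ k)))"
      unfolding cc_expand z_def by (simp add: Re_sum)
    also have "\<dots> \<le> (\<Sum>j\<in>{1..d^2}. cmod (z j) * lam j ^ k)"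
    proof (intro sum_mono)
      fix j assume j: "j \<in> {1..d^2}"
      have "Re (z j * complex_of_real (lam j ^ k)) = Re (z j) * lam j ^ k" by simp
      also have "\<dots> \<le> cmod (z j) * lam j ^ k" using lnn[OF j] by (intro mult_right_mono complex_Re_le_cmod) auto
      finally show "Re (z j * complex_of_real (lam j ^ k)) \<le> cmod (z j) * lam j ^ k" .
    qed
    finally show ?thesis .
  qed
  have "(\<Sum>m<K. \<Sum>k<m. Re (cc k)) \<le> (\<Sum>m<K. \<Sum>k<m. \<Sum>j\<in>{1..d^2}. cmod (z j) * lam j ^ k)"
    by (intro sum_mono recc)
  also have "\<dots> = (\<Sum>m<K. \<Sum>j\<in>{1..d^2}. \<Sum>k<m. cmod (z j) * lam j ^ k)"
    by (rule sum.cong[OF refl], rule sum.swap)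
  also have "\<dots> = (\<Sum>j\<in>{1..d^2}. \<Sum>m<K. \<Sum>k<m. cmod (z j) * lam j ^ k)"
    by (rule sum.swap)
  also have "\<dots> = (\<Sum>j\<in>{1..d^2}. cmod (z j) * (\<Sum>m<K. \<Sum>k<m. lam j ^ k))"
    by (simp add: sum_distrib_left)
  also have "\<dots> \<le> (\<Sum>j\<in>{1..d^2}. cmod (z j) * (real K / g))"
  proof (intro sum_mono)
    fix j assume j: "j \<in> {1..d^2}"
    show "cmod (z j) * (\<Sum>m<K. \<Sum>k<m. lam j ^ k) \<le> cmod (z j) * (real K / g)"
    proof (cases "j = 1")
      case True thus ?thesis using z1 by simp
    next
      case False
      hence j2: "j \<in> {2..d^2}" using j by auto
      show ?thesis using gap[OF j2] lnn[OF j] by (intro mult_left_mono geom_bound) auto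
    qed
  qed
  also have "\<dots> = real K / g * (\<Sum>j = 1..d^2. cmod (z j))" by (simp add: sum_distrib_left mult.commute)
  finally have "(\<Sum>m<K. \<Sum>k<m. Re (cc k)) \<le> real K / g * (\<Sum>j = 1..d^2. cmod (z j))" .
  hence "2 * (\<Sum>m<K. \<Sum>k<m. Re (cc k)) \<le> 2 * (real K / g * (\<Sum>j = 1..d^2. cmod (z j)))"
    by simp
  hence "real K * meas_var U Ok \<rho> + 2 * (\<Sum>m<K. \<Sum>k<m. Re (cc k)) \<le>
    real K * meas_var U Ok \<rho> + 2 * (real K / g * (\<Sum>j = 1..d^2. cmod (z j)))"
    by simp
  also have "\<dots> = real K * (meas_var U Ok \<rho> + 2 / g * (\<Sum>j = 1..d^2. cmod (z j)))"
    by (simp add: algebra_simps)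
  finally have "real K * meas_var U Ok \<rho> + 2 * (\<Sum>m<K. \<Sum>k<m. Re (cc k)) \<le>
    real K * (meas_var U Ok \<rho> + 2 / g * (\<Sum>j = 1..d^2. cmod (z j)))" .
  thus ?thesis unfolding traj_formula z_def .
qed

end


lemma vinner_add_mat: assumes A: "A \<in> carrier_mat n n" and B: "B \<in> carrier_mat n n" and v: "v \<in> carrier_vec n"
  shows "vinner v ((A + c \<cdot>\<^sub>m B) *\<^sub>v v) = vinner v (A *\<^sub>v v) + c * vinner v (B *\<^sub>v v)"
proof -
  have AB: "A + c \<cdot>\<^sub>m B \<in> carrier_mat n n" using A B by simp
  have "vinner v ((A + c \<cdot>\<^sub>m B) *\<^sub>v v) = (\<Sum>i<n. \<Sum>j<n. cnj (v $ i) * (A + c \<cdot>\<^sub>m B) $$ (i,j) * v $ j)"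
    by (rule vinner_sum[OF AB v])
  also have "\<dots> = (\<Sum>i<n. \<Sum>j<n. cnj (v $ i) * A $$ (i,j) * v $ j) + c * (\<Sum>i<n. \<Sum>j<n. cnj (v $ i) * B $$ (i,j) * v $ j)"
    using A B by (simp add: sum.distrib sum_distrib_left algebra_simps)
  also have "\<dots> = vinner v (A *\<^sub>v v) + c * vinner v (B *\<^sub>v v)"
    by (simp only: vinner_sum[OF A v] vinner_sum[OF B v])
  finally show ?thesis .
qed

lemma vinner_herm_real: assumes A: "A \<in> carrier_mat n n" and h: "dag A = A" and v: "v \<in> carrier_vec n"
  shows "cnj (vinner v (A *\<^sub>v v)) = vinner v (A *\<^sub>v v)"
proof -
  have Aij: "cnj (A $$ (i,j)) = A $$ (j,i)" if "i < n" "j < n" for i j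
  proof -
    have "A $$ (j,i) = dag A $$ (j,i)" using h by simp
    also have "\<dots> = cnj (A $$ (i,j))" using A that by simp
    finally show ?thesis by simp
  qed
  have "cnj (vinner v (A *\<^sub>v v)) = (\<Sum>i<n. \<Sum>j<n. v $ i * A $$ (j,i) * cnj (v $ j))"
    using A v by (simp add: vinner_sum[of _ n] cnj_sum Aij)
  also have "\<dots> = (\<Sum>j<n. \<Sum>i<n. v $ i * A $$ (j,i) * cnj (v $ j))" by (rule sum.swap)
  also have "\<dots> = vinner v (A *\<^sub>v v)" using A v by (simp add: vinner_sum[of _ n] mult_ac)
  finally show ?thesis .
qed

lemma vinner_bound: assumes A: "A \<in> carrier_mat n n" and v: "v \<in> carrier_vec n"
  shows "cmod (vinner v (A *\<^sub>v v)) \<le> (\<Sum>i<n. \<Sum>j<n. cmod (A $$ (i,j))) * (\<Sum>l<n. (cmod (v $ l))^2)"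
proof -
  define nv where "nv = (\<Sum>l<n. (cmod (v $ l))^2)"
  have vi: "(cmod (v $ i))^2 \<le> nv" if "i < n" for i
    unfolding nv_def using that by (intro member_le_sum) auto
  have vij: "cmod (v $ i) * cmod (v $ j) \<le> nv" if "i < n" "j < n" for i j
  proof -
    have "cmod (v $ i) * cmod (v $ j) \<le> ((cmod (v $ i))^2 + (cmod (v $ j))^2) / 2"
      using sum_squares_bound[of "cmod (v $ i)" "cmod (v $ j)"] by (simp add: power2_eq_square field_simps)
    also have "\<dots> \<le> nv" using vi[OF that(1)] vi[OF that(2)] by simp
    finally show ?thesis .
  qed
  have "cmod (vinner v (A *\<^sub>v v)) \<le> (\<Sum>i<n. \<Sum>j<n. cmod (cnj (v $ i) * A $$ (i,j) * v $ j))"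
    using A v by (simp add: vinner_sum[of _ n]) (intro order.trans[OF norm_sum] sum_mono norm_sum)
  also have "\<dots> \<le> (\<Sum>i<n. \<Sum>j<n. cmod (A $$ (i,j)) * nv)"
  proof (intro sum_mono)
    fix i j assume "i \<in> {..<n}" "j \<in> {..<n}"
    hence ij: "i < n" "j < n" by auto
    have "cmod (cnj (v $ i) * A $$ (i,j) * v $ j) = cmod (A $$ (i,j)) * (cmod (v $ i) * cmod (v $ j))"
      by (simp add: norm_mult)
    also have "\<dots> \<le> cmod (A $$ (i,j)) * nv" by (intro mult_left_mono vij ij) auto
    finally show "cmod (cnj (v $ i) * A $$ (i,j) * v $ j) \<le> cmod (A $$ (i,j)) * nv" .
  qed
  also have "\<dots> = (\<Sum>i<n. \<Sum>j<n. cmod (A $$ (i,j))) * nv" by (simp add: sum_distrib_right)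
  finally show ?thesis unfolding nv_def .
qed

context full_setting
begin

lemma no_fixed_herm: assumes Z: "Zh \<in> carrier_mat d d" and hZ: "dag Zh = Zh" and tZ: "trace Zh = 0"
  and fZ: "Nf Zh = Zh" and nz: "Zh \<noteq> 0\<^sub>m d d"
  shows False
proof -
  define C where "C = (\<Sum>i<d. \<Sum>j<d. cmod (Zh $$ (i,j)))"
  have C0: "C \<ge> 0" unfolding C_def by (intro sum_nonneg) auto
  define \<epsilon> where "\<epsilon> = pmin / (C + 1)"
  have e0: "\<epsilon> > 0" unfolding \<epsilon>_def using pmin(1) C0 by simp
  have eC: "\<epsilon> * C \<le> pmin"
  proof -
    have "\<epsilon> * C = pmin * (C / (C + 1))" unfolding \<epsilon>_def by simp
    also have "\<dots> \<le> pmin * 1" using pmin(1) C0 by (intro mult_left_mono) auto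
    finally show ?thesis by simp
  qed
  define \<sigma> where "\<sigma> = \<rho> + complex_of_real \<epsilon> \<cdot>\<^sub>m Zh"
  have sc: "\<sigma> \<in> carrier_mat d d" unfolding \<sigma>_def using Z by simp
  have herm: "hermitian_mat d \<sigma>"
    unfolding hermitian_mat_def \<sigma>_def using Z by (simp add: dag_add[of _ d d] dag_smult dag_rho hZ)
  have psd: "vinner v (\<sigma> *\<^sub>v v) \<in> \<real> \<and> 0 \<le> Re (vinner v (\<sigma> *\<^sub>v v))" if v: "v \<in> carrier_vec d" for v
  proof -
    have e: "vinner v (\<sigma> *\<^sub>v v) = vinner v (\<rho> *\<^sub>v v) + complex_of_real \<epsilon> * vinner v (Zh *\<^sub>v v)"
      unfolding \<sigma>_def by (rule vinner_add_mat[OF rho_c Z v])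
    have r1: "vinner v (\<rho> *\<^sub>v v) \<in> \<real>" using rho_vinner(1)[OF v] .
    have r2: "vinner v (Zh *\<^sub>v v) \<in> \<real>" using vinner_herm_real[OF Z hZ v] by (metis Reals_cnj_iff)
    define nv where "nv = (\<Sum>l<d. (cmod (v $ l))^2)"
    have nv0: "nv \<ge> 0" unfolding nv_def by (intro sum_nonneg) auto
    have vv: "Re (vinner v v) = nv" unfolding nv_def using vinner_self[OF v] by simp
    have b1: "Re (vinner v (\<rho> *\<^sub>v v)) \<ge> pmin * nv" using rho_vinner(2)[OF v] vv by simp
    have b2: "\<bar>Re (vinner v (Zh *\<^sub>v v))\<bar> \<le> C * nv"
      using vinner_bound[OF Z v] abs_Re_le_cmod[of "vinner v (Zh *\<^sub>v v)"] unfolding C_def nv_def by linarith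
    have "Re (vinner v (\<sigma> *\<^sub>v v)) = Re (vinner v (\<rho> *\<^sub>v v)) + \<epsilon> * Re (vinner v (Zh *\<^sub>v v))"
      unfolding e by simp
    also have "\<dots> \<ge> pmin * nv - \<epsilon> * (C * nv)"
    proof -
      have "- (C * nv) \<le> Re (vinner v (Zh *\<^sub>v v))" using b2 by (simp add: abs_le_iff)
      hence "\<epsilon> * (- (C * nv)) \<le> \<epsilon> * Re (vinner v (Zh *\<^sub>v v))" using e0 by (intro mult_left_mono) auto
      hence "\<epsilon> * Re (vinner v (Zh *\<^sub>v v)) \<ge> - (\<epsilon> * (C * nv))" by simp
      thus ?thesis using b1 by linarith
    qed
    finally have "Re (vinner v (\<sigma> *\<^sub>v v)) \<ge> pmin * nv - \<epsilon> * C * nv" by simp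
    moreover have "\<epsilon> * C * nv \<le> pmin * nv" using eC nv0 by (intro mult_right_mono) auto
    ultimately have "Re (vinner v (\<sigma> *\<^sub>v v)) \<ge> 0" by linarith
    moreover have "vinner v (\<sigma> *\<^sub>v v) \<in> \<real>" unfolding e using r1 r2 by (simp add: Reals_mult Reals_add)
    ultimately show ?thesis by simp
  qed
  have tr: "trace \<sigma> = 1" unfolding \<sigma>_def using Z by (simp add: trace_add[of _ d] trace_smult[of _ d] tZ trace_rho)
  have dens: "density_mat d \<sigma>" unfolding density_mat_def using herm psd tr by auto
  have fx: "Nf \<sigma> = \<sigma>" unfolding \<sigma>_def using Z by (simp add: lin_mapD[OF Nf_lin] Nf_rho fZ)
  from N_fix dens fx have "\<sigma> = \<rho>" by auto
  have "Zh = 0\<^sub>m d d"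
  proof (rule eq_matI)
    fix i j assume "i < dim_row (0\<^sub>m d d :: complex mat)" "j < dim_col (0\<^sub>m d d :: complex mat)"
    hence i: "i < d" and j: "j < d" by auto
    have "\<sigma> $$ (i,j) = \<rho> $$ (i,j)" using \<open>\<sigma> = \<rho>\<close> by simp
    hence "complex_of_real \<epsilon> * Zh $$ (i,j) = 0" unfolding \<sigma>_def using i j Z by simp
    thus "Zh $$ (i,j) = 0\<^sub>m d d $$ (i,j)" using e0 i j by simp
  qed (use Z in auto)
  thus False using nz by simp
qed

end


declare minus_carrier_mat[simp]

lemma finsum_minus: assumes "\<And>u. u \<in> S \<Longrightarrow> f u \<in> carrier_mat n m" "\<And>u. u \<in> S \<Longrightarrow> g u \<in> carrier_mat n m"
  shows "finsum_mat n m (\<lambda>u. f u - g u) S = finsum_mat n m f S - finsum_mat n m g S"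
proof (intro eq_matI)
  fix i j assume "i < dim_row (finsum_mat n m f S - finsum_mat n m g S)" "j < dim_col (finsum_mat n m f S - finsum_mat n m g S)"
  hence i: "i < n" and j: "j < m" by auto
  have "(\<Sum>u\<in>S. (f u - g u) $$ (i, j)) = (\<Sum>u\<in>S. f u $$ (i, j) - g u $$ (i,j))"
    using i j by (intro sum.cong) (auto dest!: assms)
  thus "finsum_mat n m (\<lambda>u. f u - g u) S $$ (i, j) = (finsum_mat n m f S - finsum_mat n m g S) $$ (i, j)"
    using i j by (simp add: sum_subtractf)
qed auto

context full_setting
begin

lemma Gam_smult: "X \<in> carrier_mat d d \<Longrightarrow> Gam (c \<cdot>\<^sub>m X) = c \<cdot>\<^sub>m Gam X"
  unfolding Gam_def by (simp add: mult_smult_distrib[of _ d d _ d] mult_smult_assoc_mat[of _ d d _ d])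

lemma no_fixed: assumes X: "X \<in> carrier_mat d d" and nz: "X \<noteq> 0\<^sub>m d d" and o: "ip (1\<^sub>m d) X = 0"
  and f: "Na X = X"
  shows False
proof -
  define Y0 where "Y0 = Gam X"
  have Y0c: "Y0 \<in> carrier_mat d d" unfolding Y0_def using X by simp
  have fY: "Nf Y0 = Y0" unfolding Y0_def using Nf_Gam[OF X] f by simp
  have nY: "Y0 \<noteq> 0\<^sub>m d d" unfolding Y0_def using Gam_inj[OF X] nz by auto
  have tY: "trace Y0 = 0" unfolding Y0_def using trace_Gam[OF X] o by simp
  define H1 where "H1 = Y0 + dag Y0"
  define H2 where "H2 = \<i> \<cdot>\<^sub>m (Y0 - dag Y0)"
  have H1c: "H1 \<in> carrier_mat d d" and H2c: "H2 \<in> carrier_mat d d" unfolding H1_def H2_def using Y0c by auto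
  have dH1: "dag H1 = H1" unfolding H1_def using Y0c by (intro eq_matI) auto
  have dH2: "dag H2 = H2" unfolding H2_def using Y0c by (intro eq_matI) (auto simp: algebra_simps)
  have tH1: "trace H1 = 0" unfolding H1_def using Y0c tY by (simp add: trace_add[of _ d] trace_dag[of _ d])
  have tH2: "trace H2 = 0"
  proof -
    have dc: "dag Y0 \<in> carrier_mat d d" using Y0c by simp
    have mc: "Y0 - dag Y0 \<in> carrier_mat d d" using Y0c by simp
    show ?thesis unfolding H2_def trace_smult[OF mc] trace_minus[OF Y0c dc] trace_dag[OF Y0c] tY by simp
  qed
  have fdY: "Nf (dag Y0) = dag Y0" using Nf_dag[OF Y0c] fY by simp
  have fH1: "Nf H1 = H1" unfolding H1_def using Y0c by (simp add: lin_mapD[OF Nf_lin] fY fdY)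
  have fH2: "Nf H2 = H2" unfolding H2_def using Y0c
    by (simp add: lin_mapD[OF Nf_lin] lin_map_minus[OF Nf_lin] fY fdY)
  have "H1 \<noteq> 0\<^sub>m d d \<or> H2 \<noteq> 0\<^sub>m d d"
  proof (rule ccontr)
    assume "\<not> (H1 \<noteq> 0\<^sub>m d d \<or> H2 \<noteq> 0\<^sub>m d d)"
    hence h1: "H1 = 0\<^sub>m d d" and h2: "H2 = 0\<^sub>m d d" by auto
    have "Y0 = 0\<^sub>m d d"
    proof (rule eq_matI)
      fix i j assume "i < dim_row (0\<^sub>m d d :: complex mat)" "j < dim_col (0\<^sub>m d d :: complex mat)"
      hence i: "i < d" and j: "j < d" by auto
      have a: "Y0 $$ (i,j) + cnj (Y0 $$ (j,i)) = 0" using arg_cong[OF h1, of "\<lambda>M. M $$ (i,j)"] i j Y0c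
        unfolding H1_def by simp
      have b: "\<i> * (Y0 $$ (i,j) - cnj (Y0 $$ (j,i))) = 0" using arg_cong[OF h2, of "\<lambda>M. M $$ (i,j)"] i j Y0c
        unfolding H2_def by simp
      from a b show "Y0 $$ (i,j) = 0\<^sub>m d d $$ (i,j)" using i j by (auto simp: algebra_simps)
    qed (use Y0c in auto)
    thus False using nY by simp
  qed
  thus False using no_fixed_herm[OF H1c dH1 tH1 fH1] no_fixed_herm[OF H2c dH2 tH2 fH2] by auto
qed

end


lemma quad_exp: assumes P: "P \<in> carrier_mat n n" and Q: "Q \<in> carrier_mat n n"
  shows "dag (P - Q) * (P - Q) = dag P * P - dag P * Q - dag Q * P + dag Q * Q"
proof -
  have dP: "dag P \<in> carrier_mat n n" and dQ: "dag Q \<in> carrier_mat n n" using P Q by auto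
  have "dag (P - Q) = dag P - dag Q" using P Q by (rule dag_minus)
  hence "dag (P - Q) * (P - Q) = (dag P - dag Q) * (P - Q)" by simp
  also have "\<dots> = dag P * (P - Q) - dag Q * (P - Q)" using dP dQ P Q by (intro minus_mult_distrib_mat) auto
  also have "dag P * (P - Q) = dag P * P - dag P * Q" using dP P Q by (rule mult_minus_distrib_mat)
  also have "dag Q * (P - Q) = dag Q * P - dag Q * Q" using dQ P Q by (rule mult_minus_distrib_mat)
  also have "dag P * P - dag P * Q - (dag Q * P - dag Q * Q) = dag P * P - dag P * Q - dag Q * P + dag Q * Q"
    using P Q dP dQ by (intro eq_matI) auto
  finally show ?thesis .
qed

lemma trace_rho_dag: assumes R: "R \<in> carrier_mat n n" and X: "X \<in> carrier_mat n n"
  shows "trace (R * (dag X * X)) = trace (X * R * dag X)"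
proof -
  have "trace (R * (dag X * X)) = trace ((R * dag X) * X)" using R X by (simp add: assoc_mult_mat[of _ n n _ n _ n])
  also have "\<dots> = trace (X * (R * dag X))" using R X by (intro trace_comm[of _ n n]) auto
  also have "\<dots> = trace (X * R * dag X)" using R X by (simp add: assoc_mult_mat[of _ n n _ n _ n])
  finally show ?thesis .
qed

context full_setting
begin

lemma Ma_eig_bound: assumes W: "W \<in> carrier_mat d d" and nz: "W \<noteq> 0\<^sub>m d d" and e: "Ma W = c \<cdot>\<^sub>m W"
  shows "cmod c \<le> 1"
proof -
  define Y where "Y = Ma W"
  have Yc: "Y \<in> carrier_mat d d" unfolding Y_def by simp
  have dW: "dag W \<in> carrier_mat d d" and dY: "dag Y \<in> carrier_mat d d" using W Yc by auto
  define A where "A u = W * Ok u - Ok u * Y" for u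
  have Ac: "A u \<in> carrier_mat d d" if "u \<in> U" for u unfolding A_def using Ok_c[OF that] W Yc by simp
  have per: "dag (A u) * A u = dag (Ok u) * (dag W * W) * Ok u - (dag (Ok u) * dag W * Ok u) * Y
      - dag Y * (dag (Ok u) * W * Ok u) + dag Y * (dag (Ok u) * Ok u) * Y" if u: "u \<in> U" for u
  proof -
    have O: "Ok u \<in> carrier_mat d d" using Ok_c[OF u] .
    have dO: "dag (Ok u) \<in> carrier_mat d d" using O by simp
    have "dag (A u) * A u = dag (W * Ok u) * (W * Ok u) - dag (W * Ok u) * (Ok u * Y)
       - dag (Ok u * Y) * (W * Ok u) + dag (Ok u * Y) * (Ok u * Y)"
      unfolding A_def using W O Yc by (intro quad_exp) auto
    also have "dag (W * Ok u) = dag (Ok u) * dag W" using W O by (rule dag_mult)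
    also have "dag (Ok u * Y) = dag Y * dag (Ok u)" using O Yc by (rule dag_mult)
    finally show ?thesis using W O Yc dW dY dO by (simp add: assoc_mult_mat[of _ d d _ d _ d])
  qed
  have s1: "finsum_mat d d (\<lambda>u. dag (Ok u) * (dag W * W) * Ok u) U = Ma (dag W * W)"
    unfolding meas_adj_def ..
  have s2: "finsum_mat d d (\<lambda>u. (dag (Ok u) * dag W * Ok u) * Y) U = Ma (dag W) * Y"
    unfolding meas_adj_def using Ok_c dW Yc by (subst finsum_mult_right[of _ d d]) auto
  have s3: "finsum_mat d d (\<lambda>u. dag Y * (dag (Ok u) * W * Ok u)) U = dag Y * Ma W"
    unfolding meas_adj_def using Ok_c W dY by (subst finsum_mult_left[of _ d d]) auto
  have s4: "finsum_mat d d (\<lambda>u. dag Y * (dag (Ok u) * Ok u) * Y) U = dag Y * Y"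
  proof -
    have "finsum_mat d d (\<lambda>u. dag Y * (dag (Ok u) * Ok u) * Y) U =
      finsum_mat d d (\<lambda>u. dag Y * (dag (Ok u) * Ok u)) U * Y"
      using Ok_c dY Yc by (subst finsum_mult_right[of _ d d]) auto
    also have "finsum_mat d d (\<lambda>u. dag Y * (dag (Ok u) * Ok u)) U = dag Y * finsum_mat d d (\<lambda>u. dag (Ok u) * Ok u) U"
      using Ok_c dY by (subst finsum_mult_left[of _ d d]) auto
    also have "finsum_mat d d (\<lambda>u. dag (Ok u) * Ok u) U = 1\<^sub>m d" using M_ch unfolding is_meas_channel_def by simp
    finally show ?thesis using right_mult_one_mat[OF dY] by simp
  qed
  have dMW: "Ma (dag W) = dag Y" unfolding Y_def using Ma_dag[OF W] by simp
  have sumA: "finsum_mat d d (\<lambda>u. dag (A u) * A u) U = Ma (dag W * W) - dag Y * Y"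
  proof -
    have "finsum_mat d d (\<lambda>u. dag (A u) * A u) U = finsum_mat d d (\<lambda>u. dag (Ok u) * (dag W * W) * Ok u - (dag (Ok u) * dag W * Ok u) * Y
      - dag Y * (dag (Ok u) * W * Ok u) + dag Y * (dag (Ok u) * Ok u) * Y) U"
      by (intro finsum_cong per)
    also have "\<dots> = Ma (dag W * W) - Ma (dag W) * Y - dag Y * Ma W + dag Y * Y"
      using Ok_c W dW Yc dY
      by (simp add: finsum_add[of _ _ d d] finsum_minus[of _ _ d d] s1[symmetric] s2[symmetric] s3[symmetric] s4[symmetric])
    also have "\<dots> = Ma (dag W * W) - dag Y * Y"
      unfolding dMW Y_def[symmetric] using Yc dY by (intro eq_matI) auto
    finally show ?thesis .
  qed
  have nonneg: "Re (trace (\<rho> * finsum_mat d d (\<lambda>u. dag (A u) * A u) U)) \<ge> 0"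
  proof -
    have "trace (\<rho> * finsum_mat d d (\<lambda>u. dag (A u) * A u) U) = (\<Sum>u\<in>U. trace (A u * \<rho> * dag (A u)))"
      using Ac by (simp add: finsum_mult_left[of _ d d] trace_finsum[of _ _ d] trace_rho_dag[of _ d])
    moreover have "Re (trace (A u * \<rho> * dag (A u))) \<ge> 0" if "u \<in> U" for u
      using sandwich_pos[OF Ac[OF that]] by auto
    ultimately show ?thesis by (simp add: Re_sum sum_nonneg)
  qed
  obtain t where t: "trace (W * \<rho> * dag W) = complex_of_real t" "t > 0"
    using sandwich_pos[OF W] nz by auto
  have tr1: "trace (\<rho> * Ma (dag W * W)) = complex_of_real t"
  proof -
    have "trace (\<rho> * Ma (dag W * W)) = ip (1\<^sub>m d) (Ma (dag W * W))" by (simp add: sinner_I_left)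
    also have "\<dots> = ip (1\<^sub>m d) (dag W * W)" using W by (intro ipI_Ma) simp
    also have "\<dots> = trace (\<rho> * (dag W * W))" using W by (simp add: sinner_I_left)
    also have "\<dots> = trace (W * \<rho> * dag W)" using W by (intro trace_rho_dag) auto
    finally show ?thesis using t by simp
  qed
  have tr2: "trace (\<rho> * (dag Y * Y)) = complex_of_real ((cmod c)^2 * t)"
  proof -
    have "trace (\<rho> * (dag Y * Y)) = trace (Y * \<rho> * dag Y)" using Yc by (intro trace_rho_dag) auto
    also have "Y * \<rho> * dag Y = (cnj c * c) \<cdot>\<^sub>m (W * \<rho> * dag W)"
      unfolding Y_def e dag_smult using W
      by (simp add: mult_smult_assoc_mat[of _ d d _ d] mult_smult_distrib[of _ d d _ d] smult_smult_m)
    also have "trace \<dots> = (cnj c * c) * trace (W * \<rho> * dag W)" using W by (intro trace_smult[of _ d]) simp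
    also have "cnj c * c = complex_of_real ((cmod c)^2)" using complex_norm_square[of c] by (simp add: mult.commute)
    finally show ?thesis using t by simp
  qed
  have YY: "dag Y * Y \<in> carrier_mat d d" using Yc by simp
  have "\<rho> * (Ma (dag W * W) - dag Y * Y) = \<rho> * Ma (dag W * W) - \<rho> * (dag Y * Y)"
    by (rule mult_minus_distrib_mat[OF rho_c Ma_c YY])
  hence "trace (\<rho> * (Ma (dag W * W) - dag Y * Y)) = trace (\<rho> * Ma (dag W * W)) - trace (\<rho> * (dag Y * Y))"
    using YY by (simp add: trace_minus[of _ d])
  hence "Re (trace (\<rho> * (Ma (dag W * W) - dag Y * Y))) = t - (cmod c)^2 * t"
    unfolding tr1 tr2 by simp
  hence "t - (cmod c)^2 * t \<ge> 0" using nonneg sumA by simp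
  hence "(cmod c)^2 \<le> 1" using t(2) by (simp add: algebra_simps)
  thus ?thesis by (metis abs_norm_cancel abs_square_le_1)
qed

end


context full_setting
begin

lemma ipII: "ip (1\<^sub>m d) (1\<^sub>m d) = 1"
  by (simp add: sinner_I_left trace_rho)

lemma ip_zero_left: "X \<in> carrier_mat d d \<Longrightarrow> ip (0\<^sub>m d d) X = 0"
  unfolding sinner_def by (simp add: trace_def)

lemma ipI_sym0: "X \<in> carrier_mat d d \<Longrightarrow> ip X (1\<^sub>m d) = 0 \<longleftrightarrow> ip (1\<^sub>m d) X = 0"
  using sinner_conj[of X "1\<^sub>m d"] by (metis complex_cnj_zero_iff one_carrier_mat)

lemma ONB_real_norm: assumes B: "ONB Z I" and X: "X \<in> carrier_mat d d"
  shows "ip X X = complex_of_real (Re (ip X X))"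
  using ONB_norm[OF B X] by simp

lemma Ma_contr: assumes X: "X \<in> carrier_mat d d"
  shows "Re (ip (Ma X) (Ma X)) \<le> Re (ip X X)"
proof -
  obtain W \<nu> where W: "ONB W {..<d^2}" and ev: "\<forall>k<d^2. Ma (W k) = complex_of_real (\<nu> k) \<cdot>\<^sub>m W k"
    using selfadj_eigenbasis[OF Y_ONB Ma_lin Ma_sa] by blast
  note w = ONB_D[OF W]
  have nb: "cmod (complex_of_real (\<nu> k)) \<le> 1" if k: "k < d^2" for k
  proof (rule Ma_eig_bound)
    show "W k \<in> carrier_mat d d" using w(2) k by auto
    show "Ma (W k) = complex_of_real (\<nu> k) \<cdot>\<^sub>m W k" using ev k by auto
    show "W k \<noteq> 0\<^sub>m d d"
    proof
      assume "W k = 0\<^sub>m d d"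
      hence "ip (W k) (W k) = 0" by (simp add: ip_zero_left)
      thus False using w(3)[of k k] k by simp
    qed
  qed
  have "ip (Ma X) (Ma X) = (\<Sum>k<d^2. complex_of_real ((cmod (complex_of_real (\<nu> k)))^2 * (cmod (ip (W k) X))^2))"
    using ev by (intro ONB_eigen_quad(2)[OF W Ma_lin _ X]) auto
  hence "Re (ip (Ma X) (Ma X)) = (\<Sum>k<d^2. (cmod (complex_of_real (\<nu> k)))^2 * (cmod (ip (W k) X))^2)"
    by (simp add: Re_sum)
  also have "\<dots> \<le> (\<Sum>k<d^2. (cmod (ip (W k) X))^2)"
  proof (intro sum_mono)
    fix k assume "k \<in> {..<d^2}"
    hence "(cmod (complex_of_real (\<nu> k)))^2 \<le> 1" using nb by (simp add: abs_square_le_1)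
    thus "(cmod (complex_of_real (\<nu> k)))^2 * (cmod (ip (W k) X))^2 \<le> (cmod (ip (W k) X))^2"
      by (simp add: mult_left_le_one_le)
  qed
  also have "\<dots> = Re (ip X X)" using ONB_norm[OF W X] by simp
  finally show ?thesis .
qed

end


context full_setting
begin

definition Sset where "Sset = {Re (sinner d \<rho> s X (Na X) / sinner d \<rho> s X X) | X.
       X \<in> carrier_mat d d \<and> X \<noteq> 0\<^sub>m d d \<and> sinner d \<rho> s X (1\<^sub>m d) = 0}"

lemma spec_gap_Sset: "spec_gap d \<rho> s Na = 1 - Sup Sset"
  unfolding spec_gap_def Sset_def ..

lemma gap_main: assumes j: "j \<in> {2..d^2}"
  shows "lam j \<le> 1 - spec_gap d \<rho> s Na \<and> spec_gap d \<rho> s Na > 0"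
proof -
  define N where "N = d^2"
  have N2: "2 \<le> N" using j unfolding N_def by auto
  obtain Z \<mu> where Zb: "ONB Z {..<N}" and evZ: "\<forall>k<N. Na (Z k) = complex_of_real (\<mu> k) \<cdot>\<^sub>m Z k"
    using selfadj_eigenbasis[OF Y_ONB Na_lin Na_sa] unfolding N_def by blast
  note zb = ONB_D[OF Zb]
  have Zc: "k < N \<Longrightarrow> Z k \<in> carrier_mat d d" for k using zb(2) by auto
  define a where "a k = ip (1\<^sub>m d) (Z k)" for k
  define Zp where "Zp k = Z k - a k \<cdot>\<^sub>m 1\<^sub>m d" for k
  have Zpc: "k < N \<Longrightarrow> Zp k \<in> carrier_mat d d" for k unfolding Zp_def using Zc by simp
  have ipZp: "ip (1\<^sub>m d) (Zp k) = 0" if k: "k < N" for k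
  proof -
    have "ip (1\<^sub>m d) (Zp k) = a k - a k * ip (1\<^sub>m d) (1\<^sub>m d)"
      unfolding Zp_def a_def using Zc[OF k] by (simp add: sinner_minus_right sinner_smult_right)
    thus ?thesis by (simp add: ipII)
  qed
  have NaZp: "Na (Zp k) = complex_of_real (\<mu> k) \<cdot>\<^sub>m Zp k" if k: "k < N" for k
  proof -
    have e: "Na (Z k) = complex_of_real (\<mu> k) \<cdot>\<^sub>m Z k" using evZ k by auto
    have "a k = ip (1\<^sub>m d) (Na (Z k))" unfolding a_def using Zc[OF k] by (simp add: ipI_Na)
    also have "\<dots> = complex_of_real (\<mu> k) * a k" unfolding e a_def using Zc[OF k] by (simp add: sinner_smult_right)
    finally have ma: "a k = complex_of_real (\<mu> k) * a k" .
    have "Na (Zp k) = Na (Z k) - a k \<cdot>\<^sub>m Na (1\<^sub>m d)"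
      unfolding Zp_def using Zc[OF k] by (simp add: lin_map_minus[OF Na_lin] lin_mapD(3)[OF Na_lin])
    also have "\<dots> = complex_of_real (\<mu> k) \<cdot>\<^sub>m Zp k"
      unfolding e Na_one Zp_def using Zc[OF k] ma by (intro eq_matI) (auto simp: algebra_simps)
    finally show ?thesis .
  qed
  define Kg where "Kg = {k. k < N \<and> Zp k \<noteq> 0\<^sub>m d d}"
  have Kg_fin: "finite Kg" unfolding Kg_def by auto
  have mu_range: "0 \<le> \<mu> k \<and> \<mu> k < 1" if k: "k \<in> Kg" for k
  proof -
    have kN: "k < N" and nz: "Zp k \<noteq> 0\<^sub>m d d" using k unfolding Kg_def by auto
    have G: "Gam (Zp k) \<in> carrier_mat d d" using Zpc[OF kN] by simp
    have Gnz: "Gam (Zp k) \<noteq> 0\<^sub>m d d" using Gam_inj[OF Zpc[OF kN]] nz by auto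
    have "Nf (Gam (Zp k)) = complex_of_real (\<mu> k) \<cdot>\<^sub>m Gam (Zp k)"
      using Nf_Gam[OF Zpc[OF kN]] NaZp[OF kN] Gam_smult[OF Zpc[OF kN]] by simp
    hence "complex_of_real (\<mu> k) \<in> \<real> \<and> 0 \<le> Re (complex_of_real (\<mu> k)) \<and> Re (complex_of_real (\<mu> k)) \<le> 1"
      using N_spec G Gnz by blast
    hence r: "0 \<le> \<mu> k" "\<mu> k \<le> 1" by auto
    have "\<mu> k \<noteq> 1"
    proof
      assume "\<mu> k = 1"
      hence "Na (Zp k) = Zp k" using NaZp[OF kN] by simp
      thus False using no_fixed[OF Zpc[OF kN] nz ipZp[OF kN]] by simp
    qed
    thus ?thesis using r by simp
  qed
  have bad0: "ip (Z k) X = 0" if k: "k < N" "k \<notin> Kg" and X: "X \<in> carrier_mat d d" and o: "ip (1\<^sub>m d) X = 0" for k X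
  proof -
    have "Zp k = 0\<^sub>m d d" using k unfolding Kg_def by auto
    hence z: "Z k - a k \<cdot>\<^sub>m 1\<^sub>m d = 0\<^sub>m d d" unfolding Zp_def .
    have "Z k = a k \<cdot>\<^sub>m 1\<^sub>m d"
    proof (rule eq_matI)
      fix i j assume "i < dim_row (a k \<cdot>\<^sub>m 1\<^sub>m d)" "j < dim_col (a k \<cdot>\<^sub>m 1\<^sub>m d)"
      hence i: "i < d" and j: "j < d" by auto
      have "(Z k - a k \<cdot>\<^sub>m 1\<^sub>m d) $$ (i,j) = 0" using z i j by simp
      thus "Z k $$ (i,j) = (a k \<cdot>\<^sub>m 1\<^sub>m d) $$ (i,j)" using i j Zc[OF k(1)] by simp
    qed (use Zc[OF k(1)] in auto)
    thus ?thesis using X o by (simp add: sinner_smult_left)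
  qed
  have quad: "Re (ip X (Na X)) = (\<Sum>k<N. \<mu> k * (cmod (ip (Z k) X))^2)" if X: "X \<in> carrier_mat d d" for X
    using ONB_eigen_quad(1)[OF Zb Na_lin _ X] evZ by (simp add: Re_sum)
  have norm: "Re (ip X X) = (\<Sum>k<N. (cmod (ip (Z k) X))^2)" if X: "X \<in> carrier_mat d d" for X
    using ONB_norm[OF Zb X] by simp
  have Kg_ne: "Kg \<noteq> {}"
  proof
    assume e: "Kg = {}"
    have Y2: "Y 2 \<in> carrier_mat d d" using Yc N2 unfolding N_def by auto
    have o: "ip (1\<^sub>m d) (Y 2) = 0" using Y_on N2 unfolding N_def Y1[symmetric] by auto
    have "Re (ip (Y 2) (Y 2)) = 0" unfolding norm[OF Y2] using bad0[OF _ _ Y2 o] e by simp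
    moreover have "ip (Y 2) (Y 2) = 1" using Y_on N2 unfolding N_def by auto
    ultimately show False by simp
  qed
  define ms where "ms = Max (\<mu> ` Kg)"
  have ms_ge: "k \<in> Kg \<Longrightarrow> \<mu> k \<le> ms" for k unfolding ms_def using Kg_fin by auto
  have ms_lt: "ms < 1" unfolding ms_def using Kg_fin Kg_ne mu_range by (subst Max_less_iff) auto
  obtain k0 where k0: "k0 \<in> Kg" using Kg_ne by auto
  have k0N: "k0 < N" using k0 unfolding Kg_def by auto
  have ray: "Re (ip X (Na X)) \<le> ms * Re (ip X X)" if X: "X \<in> carrier_mat d d" and o: "ip (1\<^sub>m d) X = 0" for X
  proof -
    have "Re (ip X (Na X)) = (\<Sum>k<N. \<mu> k * (cmod (ip (Z k) X))^2)" by (rule quad[OF X])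
    also have "\<dots> \<le> (\<Sum>k<N. ms * (cmod (ip (Z k) X))^2)"
    proof (intro sum_mono)
      fix k assume "k \<in> {..<N}"
      hence kN: "k < N" by simp
      show "\<mu> k * (cmod (ip (Z k) X))^2 \<le> ms * (cmod (ip (Z k) X))^2"
      proof (cases "k \<in> Kg")
        case True thus ?thesis using ms_ge by (intro mult_right_mono) auto
      next
        case False thus ?thesis using bad0[OF kN False X o] by simp
      qed
    qed
    also have "\<dots> = ms * Re (ip X X)" unfolding norm[OF X] by (simp add: sum_distrib_left)
    finally show ?thesis .
  qed
  have Sset_bound: "r \<le> ms" if "r \<in> Sset" for r
  proof -
    obtain X where X: "X \<in> carrier_mat d d" "X \<noteq> 0\<^sub>m d d" "ip X (1\<^sub>m d) = 0"
      and r: "r = Re (ip X (Na X) / ip X X)" using \<open>r \<in> Sset\<close> unfolding Sset_def by auto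
    have o: "ip (1\<^sub>m d) X = 0" using X ipI_sym0 by auto
    have pos: "Re (ip X X) > 0" by (rule ONB_pos[OF Zb X(1,2)])
    have "r = Re (ip X (Na X)) / Re (ip X X)"
      unfolding r using ONB_real_norm[OF Zb X(1)] by (metis Re_divide_of_real)
    also have "\<dots> \<le> ms" using ray[OF X(1) o] pos by (simp add: divide_le_eq)
    finally show ?thesis .
  qed
  have bdd: "bdd_above Sset" using Sset_bound by (intro bdd_aboveI) auto
  have rayZ: "\<mu> k0 \<in> Sset"
  proof -
    have X: "Zp k0 \<in> carrier_mat d d" "Zp k0 \<noteq> 0\<^sub>m d d" using Zpc k0N k0 unfolding Kg_def by auto
    have o: "ip (Zp k0) (1\<^sub>m d) = 0" using ipZp[OF k0N] ipI_sym0[OF X(1)] by simp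
    have pos: "Re (ip (Zp k0) (Zp k0)) > 0" by (rule ONB_pos[OF Zb X])
    have "ip (Zp k0) (Na (Zp k0)) / ip (Zp k0) (Zp k0) = complex_of_real (\<mu> k0)"
    proof -
      have nz: "ip (Zp k0) (Zp k0) \<noteq> 0" using pos by auto
      show ?thesis unfolding NaZp[OF k0N] using X nz by (simp add: sinner_smult_right)
    qed
    hence "\<mu> k0 = Re (ip (Zp k0) (Na (Zp k0)) / ip (Zp k0) (Zp k0))" by simp
    thus ?thesis unfolding Sset_def using X o by blast
  qed
  have Sne: "Sset \<noteq> {}" using rayZ by auto
  have sup_le: "Sup Sset \<le> ms" using Sne Sset_bound by (intro cSup_least) auto
  have sup_ge: "\<mu> k0 \<le> Sup Sset" using rayZ bdd by (intro cSup_upper)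
  have gap_pos: "spec_gap d \<rho> s Na > 0" unfolding spec_gap_Sset using sup_le ms_lt by simp
  have lam_le: "lam j \<le> Sup Sset"
  proof -
    have jN: "j \<in> {1..d^2}" and j1: "j \<noteq> 1" using j by auto
    have Yj: "Y j \<in> carrier_mat d d" using Yc[OF jN] .
    define Wj where "Wj = Ma (Y j)"
    have Wc: "Wj \<in> carrier_mat d d" unfolding Wj_def by simp
    have oW: "ip (1\<^sub>m d) Wj = 0" unfolding Wj_def using Yj ipI_Ma Y_on jN j1 Y1 Y1_mem by force
    have lamj: "complex_of_real (lam j) = ip Wj (Na Wj)"
    proof -
      have "ip (Y j) (Ea (Y j)) = ip (Y j) (complex_of_real (lam j) \<cdot>\<^sub>m Y j)" using Y_eig jN by auto
      also have "\<dots> = complex_of_real (lam j)" using Yj Y_on jN by (simp add: sinner_smult_right)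
      finally have "complex_of_real (lam j) = ip (Y j) (Ea (Y j))" ..
      also have "\<dots> = ip Wj (Na Wj)" unfolding Wj_def by (rule Ma_sa[OF Yj Na_c])
      finally show ?thesis .
    qed
    have l0: "0 \<le> lam j" using lam_nonneg jN by auto
    show ?thesis
    proof (cases "Wj = 0\<^sub>m d d")
      case True
      hence "lam j = 0" using lamj by (simp add: ip_zero_left)
      thus ?thesis using sup_ge mu_range[OF k0] by simp
    next
      case False
      have pos: "Re (ip Wj Wj) > 0" by (rule ONB_pos[OF Zb Wc False])
      have le1: "Re (ip Wj Wj) \<le> 1"
        using Ma_contr[OF Yj] Y_on jN unfolding Wj_def by auto
      have o2: "ip Wj (1\<^sub>m d) = 0" using oW ipI_sym0[OF Wc] by simp
      have mem: "Re (ip Wj (Na Wj) / ip Wj Wj) \<in> Sset" unfolding Sset_def using Wc False o2 by blast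
      have "Re (ip Wj (Na Wj) / ip Wj Wj) = lam j / Re (ip Wj Wj)"
        unfolding lamj[symmetric] using ONB_real_norm[OF Zb Wc] by (metis Re_divide_of_real Re_complex_of_real)
      also have "\<dots> \<ge> lam j" using pos le1 l0 by (simp add: le_divide_eq mult_left_le)
      finally show ?thesis using cSup_upper[OF mem bdd] by simp
    qed
  qed
  show ?thesis using lam_le gap_pos unfolding spec_gap_Sset by simp
qed

end


lemma gibbs_struct: assumes H: "hermitian_mat d H" and d: "d > 0"
  shows "\<exists>Ur p. unitary d Ur \<and> (\<forall>i<d. p i > 0) \<and> (\<Sum>i<d. p i) = 1 \<and>
     gibbs d \<beta> H = UDU d Ur (\<lambda>i. complex_of_real (p i)) \<and>
     (\<forall>a. mpow d (gibbs d \<beta> H) a = UDU d Ur (\<lambda>i. complex_of_real (p i powr a)))"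
proof -
  have Hc: "H \<in> carrier_mat d d" and hH: "dag H = H" using H unfolding hermitian_mat_def by auto
  obtain U h where U: "unitary d U" and He: "H = UDU d U (\<lambda>i. complex_of_real (h i))"
    using hermitian_decomp[OF Hc hH] by auto
  define e where "e i = exp (- \<beta> * h i)" for i
  have e0: "e i > 0" for i unfolding e_def by simp
  define Zs where "Zs = (\<Sum>i<d. e i)"
  have Z0: "Zs > 0" unfolding Zs_def using d e0 by (intro sum_pos) auto
  define p where "p i = e i / Zs" for i
  have p0: "p i > 0" for i unfolding p_def using e0 Z0 by simp
  have ps: "(\<Sum>i<d. p i) = 1" unfolding p_def Zs_def using Z0 unfolding Zs_def
    by (simp add: sum_divide_distrib[symmetric])
  have E: "mat_fun d (\<lambda>z. exp (- of_real \<beta> * z)) H = UDU d U (\<lambda>i. complex_of_real (e i))"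
  proof -
    have "mat_fun d (\<lambda>z. exp (- of_real \<beta> * z)) H = UDU d U (\<lambda>i. exp (- of_real \<beta> * complex_of_real (h i)))"
      unfolding He by (rule mat_fun_UDU[OF U])
    also have "(\<lambda>i. exp (- of_real \<beta> * complex_of_real (h i))) = (\<lambda>i. complex_of_real (e i))"
      unfolding e_def by (auto simp flip: exp_of_real)
    finally show ?thesis .
  qed
  have tE: "trace (UDU d U (\<lambda>i. complex_of_real (e i))) = complex_of_real Zs"
    unfolding trace_UDU[OF U] Zs_def by simp
  have G: "gibbs d \<beta> H = UDU d U (\<lambda>i. complex_of_real (p i))"
  proof -
    have "gibbs d \<beta> H = (1 / complex_of_real Zs) \<cdot>\<^sub>m UDU d U (\<lambda>i. complex_of_real (e i))"
      unfolding gibbs_def Let_def E tE ..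
    also have "\<dots> = UDU d U (\<lambda>i. (1 / complex_of_real Zs) * complex_of_real (e i))" by (rule UDU_smult[OF U])
    also have "(\<lambda>i. (1 / complex_of_real Zs) * complex_of_real (e i)) = (\<lambda>i. complex_of_real (p i))"
      unfolding p_def by auto
    finally show ?thesis .
  qed
  have M: "mpow d (gibbs d \<beta> H) a = UDU d U (\<lambda>i. complex_of_real (p i powr a))" for a
  proof -
    have "mpow d (gibbs d \<beta> H) a = UDU d U (\<lambda>i. complex_of_real (Re (complex_of_real (p i)) powr a))"
      unfolding mpow_def G by (rule mat_fun_UDU[OF U])
    thus ?thesis by simp
  qed
  show ?thesis using U p0 ps G M by blast
qed

theorem lemma5p10:
  fixes n :: nat and H :: "complex mat" and \<beta> s :: real
    and Ns :: "complex mat list" and U :: "real set" and Ok :: "real \<Rightarrow> complex mat"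
    and Y :: "nat \<Rightarrow> complex mat" and lam :: "nat \<Rightarrow> real" and K :: nat
  defines "d \<equiv> 2 ^ n"
  defines "\<rho> \<equiv> gibbs d \<beta> H"
  defines "Nadj \<equiv> kraus_adj d Ns"
  defines "Madj \<equiv> meas_adj d U Ok"
  defines "Eadj \<equiv> (\<lambda>X. Madj (Nadj (Madj X)))"
  defines "Ehatadj \<equiv> (\<lambda>X. meas_hat_adj d U Ok \<rho> (Nadj (Madj X)))"
  defines "v \<equiv> meas_exp U Ok \<rho>"
  defines "\<alpha> \<equiv> (\<lambda>i j. sinner d \<rho> s (Y j) (Ehatadj (Y i)))"
  defines "SC \<equiv> (\<Sum>j = 1..d^2. cmod (\<alpha> 1 j * \<alpha> j 1))"
  assumes H: "hermitian_mat d H" and beta: "\<beta> > 0"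
    and N_ch: "is_channel d Ns" and M_ch: "is_meas_channel d U Ok"
    and N_db: "detailed_balance d \<rho> s Nadj"
    and M_db: "detailed_balance d \<rho> s Madj"
    and N_fix: "\<forall>\<sigma>. density_mat d \<sigma> \<longrightarrow> (kraus_map d Ns \<sigma> = \<sigma> \<longleftrightarrow> \<sigma> = \<rho>)"
    and N_spec: "\<forall>X \<in> carrier_mat d d. \<forall>c. X \<noteq> 0\<^sub>m d d \<and> kraus_map d Ns X = c \<cdot>\<^sub>m X
                   \<longrightarrow> c \<in> \<real> \<and> 0 \<le> Re c \<and> Re c \<le> 1"
    and Y_car: "\<forall>i \<in> {1..d^2}. Y i \<in> carrier_mat d d"
    and Y_on: "\<forall>i \<in> {1..d^2}. \<forall>j \<in> {1..d^2}. sinner d \<rho> s (Y i) (Y j) = (if i = j then 1 else 0)"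
    and Y_span: "\<forall>X \<in> carrier_mat d d. \<exists>c. X = finsum_mat d d (\<lambda>i. c i \<cdot>\<^sub>m Y i) {1..d^2}"
    and Y_eig: "\<forall>i \<in> {1..d^2}. Eadj (Y i) = of_real (lam i) \<cdot>\<^sub>m Y i"
    and Y1: "Y 1 = 1\<^sub>m d" and lam1: "lam 1 = 1"
    and lam2: "d^2 \<ge> 2 \<longrightarrow> lam 1 > lam 2"
    and lam_mono: "\<forall>i j. 2 \<le> i \<and> i \<le> j \<and> j \<le> d^2 \<longrightarrow> lam j \<le> lam i"
    and lam_nonneg: "\<forall>i \<in> {1..d^2}. 0 \<le> lam i"
  shows "traj_expect d Ns U Ok \<rho> K (\<lambda>es. (sum_list es - real K * v)^2)
           \<le> real K * (meas_var U Ok \<rho> + 2 / spec_gap d \<rho> s Nadj * SC)"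
proof -
  have dpos: "d > 0" unfolding d_def by simp
  obtain Ur p where Ur: "unitary d Ur" and p0: "\<forall>i<d. p i > 0" and ps: "(\<Sum>i<d. p i) = 1"
    and re: "\<rho> = UDU d Ur (\<lambda>i. complex_of_real (p i))"
    and me: "\<forall>a. mpow d \<rho> a = UDU d Ur (\<lambda>i. complex_of_real (p i powr a))"
    using gibbs_struct[OF H dpos, of \<beta>] unfolding \<rho>_def by blast
  interpret F: full_setting d \<rho> s Ur p Ns U Ok Y lam
  proof (unfold_locales)
    show "d > 0" by (rule dpos)
    show "unitary d Ur" by (rule Ur)
    show "\<forall>i<d. p i > 0" by (rule p0)
    show "(\<Sum>i<d. p i) = 1" by (rule ps)
    show "\<rho> = UDU d Ur (\<lambda>i. complex_of_real (p i))" by (rule re)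
    show "\<forall>a. mpow d \<rho> a = UDU d Ur (\<lambda>i. complex_of_real (p i powr a))" by (rule me)
    show "is_channel d Ns" by (rule N_ch)
    show "is_meas_channel d U Ok" by (rule M_ch)
    show "detailed_balance d \<rho> s (kraus_adj d Ns)" using N_db unfolding Nadj_def .
    show "detailed_balance d \<rho> s (meas_adj d U Ok)" using M_db unfolding Madj_def .
    show "\<forall>\<sigma>. density_mat d \<sigma> \<longrightarrow> (kraus_map d Ns \<sigma> = \<sigma> \<longleftrightarrow> \<sigma> = \<rho>)" by (rule N_fix)
    show "\<forall>X \<in> carrier_mat d d. \<forall>c. X \<noteq> 0\<^sub>m d d \<and> kraus_map d Ns X = c \<cdot>\<^sub>m X
                   \<longrightarrow> c \<in> \<real> \<and> 0 \<le> Re c \<and> Re c \<le> 1" by (rule N_spec)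
    show "\<forall>i \<in> {1..d^2}. Y i \<in> carrier_mat d d" by (rule Y_car)
    show "\<forall>i \<in> {1..d^2}. \<forall>j \<in> {1..d^2}. sinner d \<rho> s (Y i) (Y j) = (if i = j then 1 else 0)" by (rule Y_on)
    show "\<forall>X \<in> carrier_mat d d. \<exists>c. X = finsum_mat d d (\<lambda>i. c i \<cdot>\<^sub>m Y i) {1..d^2}" by (rule Y_span)
    show "\<forall>i \<in> {1..d^2}. meas_adj d U Ok (kraus_adj d Ns (meas_adj d U Ok (Y i))) = of_real (lam i) \<cdot>\<^sub>m Y i"
      using Y_eig unfolding Eadj_def Madj_def Nadj_def by simp
    show "Y 1 = 1\<^sub>m d" by (rule Y1)
    show "lam 1 = 1" by (rule lam1)
    show "\<forall>i \<in> {1..d^2}. 0 \<le> lam i" by (rule lam_nonneg)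
  qed
  have gap: "\<And>j. j \<in> {2..d^2} \<Longrightarrow> lam j \<le> 1 - spec_gap d \<rho> s (kraus_adj d Ns) \<and> spec_gap d \<rho> s (kraus_adj d Ns) > 0"
    by (rule F.gap_main)
  have SCe: "SC = (\<Sum>j = 1..d^2. cmod (F.alpha 1 j * F.alpha j 1))"
    unfolding SC_def \<alpha>_def F.alpha_def Ehatadj_def Nadj_def Madj_def ..
  show ?thesis using F.final_bound[OF gap, of K] unfolding SCe v_def Nadj_def .
qed


end
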